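(* Consider the MTGC algorithm described in the context. Suppose (A1) and (A2) hold and $\gamma\le\frac1{10EHL}$. Then for every global round $t$, $$D_t\le24\gamma^2E^2H^2L^2Q_t+12\gamma^2E^2H^2\sum_{e=0}^{E-1}\frac1N\sum_{j=1}^NY_j^{t,e}+3\gamma^2E^3H\frac{N-1}{N^2}\sum_{j=1}^N\frac1{n_j}\sigma^2.$$
   Context: Setting: $N$ groups; group $j$ has a set $\mathcal C_j$ of $n_j\ge1$ clients, sets pairwise disjoint. Client $i$ has distribution $\mathcal D_i$, stochastic loss $F_i(\boldsymbol x,\xi)$, $F_i(\boldsymbol x)=\mathbb E_{\xi\sim\mathcal D_i}F_i(\boldsymbol x,\xi)$; $f_j=\frac1{n_j}\sum_{i\in\mathcal C_j}F_i$, $f=\frac1N\sum_jf_j$. For client $i$, $j$ denotes its group. (A1): $\|\nabla F_i(\boldsymbol x)-\nabla F_i(\boldsymbol y)\|\le L\|\boldsymbol x-\boldsymbol y\|$ for all $\boldsymbol x,\boldsymbol y,i$. (A2): $\mathbb E_{\xi\sim\mathcal D_i}\nabla F_i(\boldsymbol x,\xi)=\nabla F_i(\boldsymbol x)$ and $\mathbb E_{\xi\sim\mathcal D_i}\|\nabla F_i(\boldsymbol x,\xi)-\nabla F_i(\boldsymbol x)\|^2\le\sigma^2$ for all $\boldsymbol x,i$. MTGC: initial $\bar{\boldsymbol x}^0$, integers $E,H\ge1$, $\gamma>0$; samples $\xi_{i,h}^{t,e}\sim\mathcal D_i$ fresh and independent of the past. $\boldsymbol y_j^0=-\frac1{n_j}\sum_{i\in\mathcal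 C_j}\nabla F_i(\bar{\boldsymbol x}^0,\xi_{i,0}^{0,0})+\frac1N\sum_{j'}\frac1{n_{j'}}\sum_{i\in\mathcal C_{j'}}\nabla F_i(\bar{\boldsymbol x}^0,\xi_{i,0}^{0,0})$. For each $t\ge0$: $\bar{\boldsymbol x}_j^{t,0}=\bar{\boldsymbol x}^t$; $\boldsymbol z_i^{t,0}=-\nabla F_i(\bar{\boldsymbol x}^t,\xi_{i,0}^{t,0})+\frac1{n_j}\sum_{i'\in\mathcal C_j}\nabla F_{i'}(\bar{\boldsymbol x}^t,\xi_{i',0}^{t,0})$; for $e=0,\dots,E-1$: $\boldsymbol x_{i,0}^{t,e}=\bar{\boldsymbol x}_j^{t,e}$, $\boldsymbol x_{i,h+1}^{t,e}=\boldsymbol x_{i,h}^{t,e}-\gamma(\nabla F_i(\boldsymbol x_{i,h}^{t,e},\xi_{i,h}^{t,e})+\boldsymbol z_i^{t,e}+\boldsymbol y_j^t)$ for $h=0,\dots,H-1$, $\bar{\boldsymbol x}_j^{t,e+1}=\frac1{n_j}\sum_{i\in\mathcal C_j}\boldsymbol x_{i,H}^{t,e}$, $\boldsymbol z_i^{t,e+1}=\boldsymbol z_i^{t,e}+\frac1{H\gamma}(\boldsymbol x_{i,H}^{t,e}-\bar{\boldsymbol x}_j^{t,e+1})$; then $\bar{\boldsymbol x}^{t+1}=\frac1N\sum_j\bar{\boldsymbol x}_j^{t,E}$, $\boldsymbol y_j^{t+1}=\boldsymbol y_j^t+\frac1{HE\gamma}(\bar{\boldsymbol x}_j^{t,E}-\bar{\boldsymbol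 x}^{t+1})$. $\mathbb E$ is over all randomness. Notation: $\hat{\boldsymbol x}^{t,e}=\frac1N\sum_j\bar{\boldsymbol x}_j^{t,e}$; $Y_j^{t,e}=\mathbb E\|\boldsymbol y_j^t+\nabla f_j(\hat{\boldsymbol x}^{t,e})-\nabla f(\hat{\boldsymbol x}^{t,e})\|^2$; $D_t=\sum_{e=0}^{E-1}\frac1N\sum_j\mathbb E\|\hat{\boldsymbol x}^{t,e}-\bar{\boldsymbol x}_j^{t,e}\|^2$; $Q_t=\sum_{e=0}^{E-1}\frac1{NH}\sum_j\frac1{n_j}\sum_{i\in\mathcal C_j}\sum_{h=0}^{H-1}\mathbb E\|\bar{\boldsymbol x}_j^{t,e}-\boldsymbol x_{i,h}^{t,e}\|^2$. *)

theory Defs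
  imports "HOL-Probability.Probability"
begin

text \<open>Deterministic description of MTGC, given a sample path
  w t e i h (the sample xi_{i,h}^{t,e}) and the stochastic gradient oracle
  g i x s (= nabla F_i(x,s)).
  Client-level quantities are indexed by the pair (j, i) with i in C j.\<close>

definition avg :: "'c set \<Rightarrow> ('c \<Rightarrow> 'a::real_vector) \<Rightarrow> 'a" where
  "avg A f = (1 / real (card A)) *\<^sub>R (\<Sum>i\<in>A. f i)"

text \<open>Local steps: loc ... h = x_{i,h}^{t,e}, started from x0 = xbar_j^{t,e}.\<close>
fun mtgc_loc :: "('c \<Rightarrow> 'a::real_vector \<Rightarrow> 'b \<Rightarrow> 'a) \<Rightarrow> real
    \<Rightarrow> (nat \<Rightarrow> nat \<Rightarrow> 'c \<Rightarrow> nat \<Rightarrow> 'b) \<Rightarrow> nat \<Rightarrow> nat \<Rightarrow> 'c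
    \<Rightarrow> 'a \<Rightarrow> 'a \<Rightarrow> 'a \<Rightarrow> nat \<Rightarrow> 'a" where
  "mtgc_loc g \<gamma> w t e i zi yj x0 0 = x0"
| "mtgc_loc g \<gamma> w t e i zi yj x0 (Suc h) =
     (let x = mtgc_loc g \<gamma> w t e i zi yj x0 h
      in x - \<gamma> *\<^sub>R (g i x (w t e i h) + zi + yj))"

text \<open>Inner (group) rounds within global round t, starting from xb = xbar^t and
  y = (y_j^t)_j: returns (xbar_j^{t,e})_j and (z_i^{t,e})_{j,i}.\<close>
fun mtgc_inner :: "('c \<Rightarrow> 'a::real_vector \<Rightarrow> 'b \<Rightarrow> 'a) \<Rightarrow> real \<Rightarrow> (nat \<Rightarrow> 'c set)
    \<Rightarrow> nat \<Rightarrow> (nat \<Rightarrow> nat \<Rightarrow> 'c \<Rightarrow> nat \<Rightarrow> 'b) \<Rightarrow> nat \<Rightarrow> 'a \<Rightarrow> (nat \<Rightarrow> 'a)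
    \<Rightarrow> nat \<Rightarrow> (nat \<Rightarrow> 'a) \<times> (nat \<Rightarrow> 'c \<Rightarrow> 'a)" where
  "mtgc_inner g \<gamma> C H w t xb y 0 =
     ((\<lambda>j. xb),
      (\<lambda>j i. - g i xb (w t 0 i 0) + avg (C j) (\<lambda>i'. g i' xb (w t 0 i' 0))))"
| "mtgc_inner g \<gamma> C H w t xb y (Suc e) =
     (let (xj, z) = mtgc_inner g \<gamma> C H w t xb y e;
          xH = (\<lambda>j i. mtgc_loc g \<gamma> w t e i (z j i) (y j) (xj j) H);
          xj' = (\<lambda>j. avg (C j) (xH j));
          z' = (\<lambda>j i. z j i + (1 / (real H * \<gamma>)) *\<^sub>R (xH j i - xj' j))
      in (xj', z'))"

text \<open>Global rounds: returns (xbar^t, (y_j^t)_j).\<close>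
fun mtgc_round :: "('c \<Rightarrow> 'a::real_vector \<Rightarrow> 'b \<Rightarrow> 'a) \<Rightarrow> real \<Rightarrow> (nat \<Rightarrow> 'c set)
    \<Rightarrow> nat \<Rightarrow> nat \<Rightarrow> nat \<Rightarrow> 'a \<Rightarrow> (nat \<Rightarrow> nat \<Rightarrow> 'c \<Rightarrow> nat \<Rightarrow> 'b) \<Rightarrow> nat
    \<Rightarrow> 'a \<times> (nat \<Rightarrow> 'a)" where
  "mtgc_round g \<gamma> C N E H x0 w 0 =
     (x0, (\<lambda>j. - avg (C j) (\<lambda>i. g i x0 (w 0 0 i 0))
              + (1 / real N) *\<^sub>R (\<Sum>j'<N. avg (C j') (\<lambda>i. g i x0 (w 0 0 i 0)))))"
| "mtgc_round g \<gamma> C N E H x0 w (Suc t) =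
     (let (xb, y) = mtgc_round g \<gamma> C N E H x0 w t;
          xj = fst (mtgc_inner g \<gamma> C H w t xb y E);
          xb' = (1 / real N) *\<^sub>R (\<Sum>j<N. xj j);
          y' = (\<lambda>j. y j + (1 / (real H * real E * \<gamma>)) *\<^sub>R (xj j - xb'))
      in (xb', y'))"

definition mtgc_xbar where "mtgc_xbar g \<gamma> C N E H x0 w t = fst (mtgc_round g \<gamma> C N E H x0 w t)"
definition mtgc_y where "mtgc_y g \<gamma> C N E H x0 w t j = snd (mtgc_round g \<gamma> C N E H x0 w t) j"

definition mtgc_xbj where
  "mtgc_xbj g \<gamma> C N E H x0 w t e j =
     fst (mtgc_inner g \<gamma> C H w t (mtgc_xbar g \<gamma> C N E H x0 w t) (mtgc_y g \<gamma> C N E H x0 w t) e) j"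

definition mtgc_z where
  "mtgc_z g \<gamma> C N E H x0 w t e j i =
     snd (mtgc_inner g \<gamma> C H w t (mtgc_xbar g \<gamma> C N E H x0 w t) (mtgc_y g \<gamma> C N E H x0 w t) e) j i"

definition mtgc_x where
  "mtgc_x g \<gamma> C N E H x0 w t e j i h =
     mtgc_loc g \<gamma> w t e i (mtgc_z g \<gamma> C N E H x0 w t e j i) (mtgc_y g \<gamma> C N E H x0 w t j)
        (mtgc_xbj g \<gamma> C N E H x0 w t e j) h"

definition mtgc_xhat where
  "mtgc_xhat g \<gamma> C N E H x0 w t e = (1 / real N) *\<^sub>R (\<Sum>j<N. mtgc_xbj g \<gamma> C N E H x0 w t e j)"

end

theory Submission
  imports Defs
begin

lemma inner_Suc_fst:
  "fst (mtgc_inner g \<gamma> C H w t xb y (Suc e)) j =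
     avg (C j) (\<lambda>i. mtgc_loc g \<gamma> w t e i (snd (mtgc_inner g \<gamma> C H w t xb y e) j i) (y j)
        (fst (mtgc_inner g \<gamma> C H w t xb y e) j) H)"
  by (simp add: Let_def split_beta)

lemma inner_Suc_snd:
  "snd (mtgc_inner g \<gamma> C H w t xb y (Suc e)) j i =
     snd (mtgc_inner g \<gamma> C H w t xb y e) j i + (1 / (real H * \<gamma>)) *\<^sub>R
       (mtgc_loc g \<gamma> w t e i (snd (mtgc_inner g \<gamma> C H w t xb y e) j i) (y j)
          (fst (mtgc_inner g \<gamma> C H w t xb y e) j) H - fst (mtgc_inner g \<gamma> C H w t xb y (Suc e)) j)"
  by (simp add: Let_def split_beta)

lemma round_Suc_fst:
  "fst (mtgc_round g \<gamma> C N E H x0 w (Suc t)) =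
     (1 / real N) *\<^sub>R (\<Sum>j<N. fst (mtgc_inner g \<gamma> C H w t (fst (mtgc_round g \<gamma> C N E H x0 w t)) (snd (mtgc_round g \<gamma> C N E H x0 w t)) E) j)"
  by (simp add: Let_def split_beta)

lemma round_Suc_snd:
  "snd (mtgc_round g \<gamma> C N E H x0 w (Suc t)) j =
     snd (mtgc_round g \<gamma> C N E H x0 w t) j + (1 / (real H * real E * \<gamma>)) *\<^sub>R
      (fst (mtgc_inner g \<gamma> C H w t (fst (mtgc_round g \<gamma> C N E H x0 w t)) (snd (mtgc_round g \<gamma> C N E H x0 w t)) E) j
        - fst (mtgc_round g \<gamma> C N E H x0 w (Suc t)))"
  by (simp add: Let_def split_beta)

lemma loc_unroll:
  "mtgc_loc g \<gamma> w t e i zi yj x0 n = x0 - \<gamma> *\<^sub>R (\<Sum>h<n. g i (mtgc_loc g \<gamma> w t e i zi yj x0 h) (w t e i h) + zi + yj)"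
  by (induction n) (simp_all add: Let_def algebra_simps)

lemma avg_sum_zero_lemma:
  assumes "finite A" "A \<noteq> {}"
  shows "(\<Sum>i\<in>A. f i - avg A f) = 0"
proof -
  have "card A > 0" using assms by (simp add: card_gt_0_iff)
  then show ?thesis by (simp add: sum_subtractf avg_def sum_constant_scaleR)
qed

lemma z_sum_zero:
  assumes "finite (C j)" "C j \<noteq> {}"
  shows "(\<Sum>i\<in>C j. snd (mtgc_inner g \<gamma> C H w t xb y e) j i) = 0"
proof (induction e)
  case 0
  have "card (C j) > 0" using assms by (simp add: card_gt_0_iff)
  then show ?case by (simp add: avg_def sum.distrib sum_constant_scaleR sum_negf sum_subtractf)
next
  case (Suc e)
  show ?case
    apply (simp only: inner_Suc_snd sum.distrib Suc)
    apply (simp only: inner_Suc_fst flip: scaleR_right.sum)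
    using avg_sum_zero_lemma[OF assms, of "\<lambda>i. mtgc_loc g \<gamma> w t e i (snd (mtgc_inner g \<gamma> C H w t xb y e) j i) (y j)
          (fst (mtgc_inner g \<gamma> C H w t xb y e) j) H"] by simp
qed

lemma y_sum_zero:
  assumes "N \<ge> 1"
  shows "(\<Sum>j<N. snd (mtgc_round g \<gamma> C N E H x0 w t) j) = 0"
proof (induction t)
  case 0
  then show ?case using assms by (simp add: sum.distrib sum_negf sum_constant_scaleR sum_subtractf)
next
  case (Suc t)
  have "(\<Sum>j<N. snd (mtgc_round g \<gamma> C N E H x0 w (Suc t)) j) =
     (\<Sum>j<N. snd (mtgc_round g \<gamma> C N E H x0 w t) j) + (1 / (real H * real E * \<gamma>)) *\<^sub>R
      (\<Sum>j<N. fst (mtgc_inner g \<gamma> C H w t (fst (mtgc_round g \<gamma> C N E H x0 w t)) (snd (mtgc_round g \<gamma> C N E H x0 w t)) E) j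
        - fst (mtgc_round g \<gamma> C N E H x0 w (Suc t)))"
    by (simp only: round_Suc_snd sum.distrib scaleR_right.sum)
  also have "\<dots> = 0" using assms Suc by (simp only: round_Suc_fst sum_subtractf) (simp add: sum_constant_scaleR)
  finally show ?case .
qed

lemma avg_lin:
  fixes a :: "'c \<Rightarrow> nat \<Rightarrow> 'a::real_vector"
  assumes "finite A" "A \<noteq> {}" "(\<Sum>i\<in>A. z i) = 0"
  shows "avg A (\<lambda>i. c - \<gamma> *\<^sub>R (\<Sum>h<n. a i h + z i + y)) = c - \<gamma> *\<^sub>R (\<Sum>h<n. avg A (\<lambda>i. a i h) + y)"
proof -
  have cp: "real (card A) > 0" using assms by (simp add: card_gt_0_iff)
  have "(\<Sum>i\<in>A. c - \<gamma> *\<^sub>R (\<Sum>h<n. a i h + z i + y)) =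
        real (card A) *\<^sub>R c - \<gamma> *\<^sub>R ((\<Sum>h<n. \<Sum>i\<in>A. a i h) + real n *\<^sub>R (\<Sum>i\<in>A. z i) + (real (card A) * real n) *\<^sub>R y)"
    by (simp add: sum_subtractf sum.distrib sum_constant_scaleR flip: scaleR_right.sum)
       (simp add: sum.swap[of _ A] scaleR_right.sum)
  also have "\<dots> = real (card A) *\<^sub>R c - \<gamma> *\<^sub>R ((\<Sum>h<n. \<Sum>i\<in>A. a i h) + (real (card A) * real n) *\<^sub>R y)"
    using assms by simp
  finally have e1: "(\<Sum>i\<in>A. c - \<gamma> *\<^sub>R (\<Sum>h<n. a i h + z i + y)) = real (card A) *\<^sub>R c - \<gamma> *\<^sub>R ((\<Sum>h<n. \<Sum>i\<in>A. a i h) + (real (card A) * real n) *\<^sub>R y)" .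
  show ?thesis
    unfolding avg_def e1 using cp
    by (simp add: sum.distrib sum_constant_scaleR scaleR_right.sum scaleR_right_diff_distrib scaleR_add_right)
qed

lemma xbj_Suc:
  assumes "finite (C j)" "C j \<noteq> {}"
  shows "mtgc_xbj g \<gamma> C N E H x0 W t (Suc e) j = mtgc_xbj g \<gamma> C N E H x0 W t e j
     - \<gamma> *\<^sub>R (\<Sum>h<H. avg (C j) (\<lambda>i. g i (mtgc_x g \<gamma> C N E H x0 W t e j i h) (W t e i h)) + mtgc_y g \<gamma> C N E H x0 W t j)"
proof -
  have "mtgc_xbj g \<gamma> C N E H x0 W t (Suc e) j = avg (C j) (\<lambda>i. mtgc_x g \<gamma> C N E H x0 W t e j i H)"
    unfolding mtgc_xbj_def mtgc_x_def mtgc_z_def mtgc_y_def inner_Suc_fst by simp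
  also have "\<dots> = avg (C j) (\<lambda>i. mtgc_xbj g \<gamma> C N E H x0 W t e j - \<gamma> *\<^sub>R (\<Sum>h<H. g i (mtgc_x g \<gamma> C N E H x0 W t e j i h) (W t e i h)
        + mtgc_z g \<gamma> C N E H x0 W t e j i + mtgc_y g \<gamma> C N E H x0 W t j))"
    unfolding mtgc_x_def by (subst loc_unroll) simp
  also have "\<dots> = mtgc_xbj g \<gamma> C N E H x0 W t e j
     - \<gamma> *\<^sub>R (\<Sum>h<H. avg (C j) (\<lambda>i. g i (mtgc_x g \<gamma> C N E H x0 W t e j i h) (W t e i h)) + mtgc_y g \<gamma> C N E H x0 W t j)"
    apply (rule avg_lin[OF assms])
    unfolding mtgc_z_def using z_sum_zero[of C j, OF assms] by blast
  finally show ?thesis .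
qed

definition Gj where
  "Gj g \<gamma> C N E H x0 W t e h j = avg (C j) (\<lambda>i. g i (mtgc_x g \<gamma> C N E H x0 W t e j i h) (W t e i h))"

lemma delta_formula:
  assumes N1: "N \<ge> 1" and CC: "\<And>j. j < N \<Longrightarrow> finite (C j) \<and> C j \<noteq> {}" and j: "j < N"
  shows "mtgc_xhat g \<gamma> C N E H x0 W t e - mtgc_xbj g \<gamma> C N E H x0 W t e j =
    \<gamma> *\<^sub>R (\<Sum>e'<e. \<Sum>h<H. Gj g \<gamma> C N E H x0 W t e' h j
        - (1 / real N) *\<^sub>R (\<Sum>j'<N. Gj g \<gamma> C N E H x0 W t e' h j') + mtgc_y g \<gamma> C N E H x0 W t j)"
  using j
proof (induction e arbitrary: j)
  case 0
  have "mtgc_xbj g \<gamma> C N E H x0 W t 0 j' = mtgc_xbar g \<gamma> C N E H x0 W t" for j'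
    unfolding mtgc_xbj_def by simp
  then show ?case using N1 unfolding mtgc_xhat_def by (simp add: sum_constant_scaleR)
next
  case (Suc e)
  let ?G = "Gj g \<gamma> C N E H x0 W t e"
  let ?y = "mtgc_y g \<gamma> C N E H x0 W t"
  have xs: "mtgc_xbj g \<gamma> C N E H x0 W t (Suc e) j' = mtgc_xbj g \<gamma> C N E H x0 W t e j' - \<gamma> *\<^sub>R (\<Sum>h<H. ?G h j' + ?y j')"
    if "j' < N" for j'
    unfolding Gj_def using xbj_Suc[of C j'] CC[OF that] by blast
  have ys: "(\<Sum>j'<N. ?y j') = 0" unfolding mtgc_y_def using y_sum_zero[OF N1, of g \<gamma> C E H x0 W t] by (simp add: mtgc_y_def)
  have ys2: "(\<Sum>j'<N. \<Sum>h<H. ?y j') = 0" using ys by (simp add: sum_constant_scaleR flip: scaleR_right.sum)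
  have "mtgc_xhat g \<gamma> C N E H x0 W t (Suc e) = (1 / real N) *\<^sub>R (\<Sum>j'<N. mtgc_xbj g \<gamma> C N E H x0 W t e j' - \<gamma> *\<^sub>R (\<Sum>h<H. ?G h j' + ?y j'))"
    unfolding mtgc_xhat_def using xs by simp
  also have "\<dots> = mtgc_xhat g \<gamma> C N E H x0 W t e - \<gamma> *\<^sub>R (\<Sum>h<H. (1 / real N) *\<^sub>R (\<Sum>j'<N. ?G h j'))"
    unfolding mtgc_xhat_def
    by (simp add: sum_subtractf sum.distrib scaleR_right_diff_distrib scaleR_right.sum ys ys2 sum.swap[of _ "{..<N}"]
        flip: scaleR_right.sum)
  finally have xh: "mtgc_xhat g \<gamma> C N E H x0 W t (Suc e) = mtgc_xhat g \<gamma> C N E H x0 W t e - \<gamma> *\<^sub>R (\<Sum>h<H. (1 / real N) *\<^sub>R (\<Sum>j'<N. ?G h j'))" .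
  have "mtgc_xhat g \<gamma> C N E H x0 W t (Suc e) - mtgc_xbj g \<gamma> C N E H x0 W t (Suc e) j
     = (mtgc_xhat g \<gamma> C N E H x0 W t e - mtgc_xbj g \<gamma> C N E H x0 W t e j)
       + \<gamma> *\<^sub>R (\<Sum>h<H. ?G h j - (1 / real N) *\<^sub>R (\<Sum>j'<N. ?G h j') + ?y j)"
    unfolding xh xs[OF Suc.prems]
    by (simp add: algebra_simps sum_subtractf sum.distrib)
  then show ?case
    unfolding Suc.IH[OF Suc.prems]
    by (simp add: scaleR_add_right)
qed

lemma norm_sum_sq:
  fixes v :: "'k \<Rightarrow> 'a::real_normed_vector"
  shows "(norm (\<Sum>k\<in>K. v k))\<^sup>2 \<le> real (card K) * (\<Sum>k\<in>K. (norm (v k))\<^sup>2)"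
proof -
  have "(norm (\<Sum>k\<in>K. v k))\<^sup>2 \<le> (\<Sum>k\<in>K. norm (v k))\<^sup>2"
    by (rule power_mono[OF norm_sum]) simp
  also have "\<dots> \<le> (\<Sum>k\<in>K. (norm (v k))\<^sup>2) * card K" by (rule sum_squared_le_sum_of_squares)
  finally show ?thesis by (simp add: mult.commute)
qed

lemma centered_le:
  fixes v :: "'k \<Rightarrow> 'a::real_inner"
  assumes "finite A"
  shows "(\<Sum>j\<in>A. (norm (v j - (1 / real (card A)) *\<^sub>R (\<Sum>j'\<in>A. v j')))\<^sup>2) \<le> (\<Sum>j\<in>A. (norm (v j))\<^sup>2)"
proof (cases "A = {}")
  case True then show ?thesis by simp
next
  case False
  define n where "n = real (card A)"
  have np: "n > 0" using False assms by (simp add: n_def card_gt_0_iff)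
  define m where "m = (1 / n) *\<^sub>R (\<Sum>j'\<in>A. v j')"
  have sm: "(\<Sum>j\<in>A. v j) = n *\<^sub>R m" using np by (simp add: m_def)
  have "(\<Sum>j\<in>A. (norm (v j - m))\<^sup>2) = (\<Sum>j\<in>A. (norm (v j))\<^sup>2 - 2 * inner (v j) m + (norm m)\<^sup>2)"
  proof (rule sum.cong[OF refl])
    fix j
    show "(norm (v j - m))\<^sup>2 = (norm (v j))\<^sup>2 - 2 * inner (v j) m + (norm m)\<^sup>2"
      using dot_norm_neg[of "v j" m] by simp
  qed
  also have "\<dots> = (\<Sum>j\<in>A. (norm (v j))\<^sup>2) - 2 * inner (\<Sum>j\<in>A. v j) m + n * (norm m)\<^sup>2"
    by (simp add: sum.distrib sum_subtractf inner_sum_left sum_distrib_left n_def)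
  also have "\<dots> = (\<Sum>j\<in>A. (norm (v j))\<^sup>2) - n * (norm m)\<^sup>2"
    by (simp add: sm power2_norm_eq_inner)
  also have "\<dots> \<le> (\<Sum>j\<in>A. (norm (v j))\<^sup>2)" using np by simp
  finally show ?thesis unfolding m_def n_def .
qed

lemma centered_le_N:
  fixes v :: "nat \<Rightarrow> 'a::real_inner"
  shows "(\<Sum>j<N. (norm (v j - (1 / real N) *\<^sub>R (\<Sum>j'<N. v j')))\<^sup>2) \<le> (\<Sum>j<N. (norm (v j))\<^sup>2)"
  using centered_le[of "{..<N}" v] by simp

lemma avg_sq_le:
  fixes f :: "'k \<Rightarrow> 'a::real_normed_vector"
  assumes "finite A" "A \<noteq> {}"
  shows "(norm (avg A f))\<^sup>2 \<le> (1 / real (card A)) * (\<Sum>i\<in>A. (norm (f i))\<^sup>2)"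
proof -
  have np: "real (card A) > 0" using assms by (simp add: card_gt_0_iff)
  have "(norm (avg A f))\<^sup>2 = (1 / real (card A))\<^sup>2 * (norm (\<Sum>i\<in>A. f i))\<^sup>2"
    by (simp add: avg_def power_mult_distrib power_divide)
  also have "\<dots> \<le> (1 / real (card A))\<^sup>2 * (real (card A) * (\<Sum>i\<in>A. (norm (f i))\<^sup>2))"
    by (rule mult_left_mono[OF norm_sum_sq]) simp
  also have "\<dots> = (1 / real (card A)) * (\<Sum>i\<in>A. (norm (f i))\<^sup>2)"
    using np by (simp add: power2_eq_square)
  finally show ?thesis .
qed

lemma two_sq_real:
  fixes x y :: real
  shows "(x+y)\<^sup>2 \<le> 2*(x\<^sup>2+y\<^sup>2)"
proof -
  have "2*(x\<^sup>2+y\<^sup>2) - (x+y)\<^sup>2 = (x-y)\<^sup>2" by (simp add: power2_eq_square algebra_simps)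
  then show ?thesis by (metis diff_ge_0_iff_ge zero_le_power2)
qed

lemma four_sq_real:
  fixes x y z u :: real
  shows "(x+y+z+u)\<^sup>2 \<le> 4*(x\<^sup>2+y\<^sup>2+z\<^sup>2+u\<^sup>2)"
proof -
  have "(x+y+z+u)\<^sup>2 = ((x+y)+(z+u))\<^sup>2" by (simp add: add.assoc)
  also have "\<dots> \<le> 2*((x+y)\<^sup>2+(z+u)\<^sup>2)" by (rule two_sq_real)
  also have "\<dots> \<le> 2*(2*(x\<^sup>2+y\<^sup>2) + 2*(z\<^sup>2+u\<^sup>2))"
    using add_mono[OF two_sq_real[of x y] two_sq_real[of z u]] by simp
  finally show ?thesis by simp
qed

lemma four_sq:
  fixes a b c d :: "'a::real_normed_vector"
  shows "(norm (a + b + c + d))\<^sup>2 \<le> 4 * ((norm a)\<^sup>2 + (norm b)\<^sup>2 + (norm c)\<^sup>2 + (norm d)\<^sup>2)"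
proof -
  have "norm (a + b + c + d) \<le> norm (a + b + c) + norm d" by (rule norm_triangle_ineq)
  also have "\<dots> \<le> norm (a + b) + norm c + norm d" using norm_triangle_ineq[of "a+b" c] by linarith
  also have "\<dots> \<le> norm a + norm b + norm c + norm d" using norm_triangle_ineq[of a b] by linarith
  finally have "norm (a + b + c + d) \<le> norm a + norm b + norm c + norm d" .
  then have "(norm (a + b + c + d))\<^sup>2 \<le> (norm a + norm b + norm c + norm d)\<^sup>2"
    by (rule power_mono) simp
  also have "\<dots> \<le> 4 * ((norm a)\<^sup>2 + (norm b)\<^sup>2 + (norm c)\<^sup>2 + (norm d)\<^sup>2)"
    by (rule four_sq_real)
  finally show ?thesis .
qed

lemma pw_abstract:
  fixes \<nu> q r f G :: "'k \<Rightarrow> nat \<Rightarrow> 'a::real_inner" and y \<Delta> :: "nat \<Rightarrow> 'a"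
  assumes K: "finite K"
    and D: "\<And>j. j < N \<Longrightarrow> \<Delta> j = \<gamma> *\<^sub>R (\<Sum>k\<in>K. G k j - (1 / real N) *\<^sub>R (\<Sum>j'<N. G k j') + y j)"
    and G: "\<And>k j. k \<in> K \<Longrightarrow> j < N \<Longrightarrow> G k j = \<nu> k j + q k j + r k j + f k j"
  shows "(1 / real N) * (\<Sum>j<N. (norm (\<Delta> j))\<^sup>2) \<le>
     4 * \<gamma>\<^sup>2 * ((1 / real N) * (\<Sum>j<N. (norm (\<Sum>k\<in>K. \<nu> k j - (1 / real N) *\<^sub>R (\<Sum>j'<N. \<nu> k j')))\<^sup>2))
     + 4 * \<gamma>\<^sup>2 * real (card K) * (\<Sum>k\<in>K. (1 / real N) * (\<Sum>j<N. (norm (q k j))\<^sup>2 + (norm (r k j))\<^sup>2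
          + (norm (y j + f k j - (1 / real N) *\<^sub>R (\<Sum>j'<N. f k j')))\<^sup>2))"
proof -
  define av where "av v = (1 / real N) *\<^sub>R (\<Sum>j'<N. v j')" for v :: "nat \<Rightarrow> 'a"
  define A where "A j = (\<Sum>k\<in>K. \<nu> k j - av (\<nu> k))" for j
  define B where "B j = (\<Sum>k\<in>K. q k j - av (q k))" for j
  define Cc where "Cc j = (\<Sum>k\<in>K. r k j - av (r k))" for j
  define Dd where "Dd j = (\<Sum>k\<in>K. y j + f k j - av (f k))" for j
  have avG: "av (G k) = av (\<nu> k) + av (q k) + av (r k) + av (f k)" if "k \<in> K" for k
  proof -
    have "av (G k) = (1 / real N) *\<^sub>R (\<Sum>j'<N. \<nu> k j' + q k j' + r k j' + f k j')"
      unfolding av_def using G[OF that] by simp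
    then show ?thesis unfolding av_def by (simp add: sum.distrib scaleR_add_right)
  qed
  have split: "\<Delta> j = \<gamma> *\<^sub>R (A j + B j + Cc j + Dd j)" if "j < N" for j
  proof -
    have "\<Delta> j = \<gamma> *\<^sub>R (\<Sum>k\<in>K. G k j - av (G k) + y j)" unfolding av_def using D[OF that] .
    also have "(\<Sum>k\<in>K. G k j - av (G k) + y j) = (\<Sum>k\<in>K. (\<nu> k j - av (\<nu> k)) + (q k j - av (q k)) + (r k j - av (r k)) + (y j + f k j - av (f k)))"
      by (rule sum.cong[OF refl]) (simp add: G[OF _ that] avG algebra_simps)
    also have "\<dots> = A j + B j + Cc j + Dd j"
      unfolding A_def B_def Cc_def Dd_def by (simp add: sum.distrib)
    finally show ?thesis .
  qed
  have bnd: "(norm (\<Delta> j))\<^sup>2 \<le> 4 * \<gamma>\<^sup>2 * (norm (A j))\<^sup>2 + 4 * \<gamma>\<^sup>2 * real (card K) *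
     (\<Sum>k\<in>K. (norm (q k j - av (q k)))\<^sup>2 + (norm (r k j - av (r k)))\<^sup>2 + (norm (y j + f k j - av (f k)))\<^sup>2)"
    if "j < N" for j
  proof -
    have "(norm (\<Delta> j))\<^sup>2 = \<gamma>\<^sup>2 * (norm (A j + B j + Cc j + Dd j))\<^sup>2"
      using split[OF that] by (simp add: power_mult_distrib)
    also have "\<dots> \<le> \<gamma>\<^sup>2 * (4 * ((norm (A j))\<^sup>2 + (norm (B j))\<^sup>2 + (norm (Cc j))\<^sup>2 + (norm (Dd j))\<^sup>2))"
      by (rule mult_left_mono[OF four_sq]) simp
    also have "\<dots> \<le> \<gamma>\<^sup>2 * (4 * ((norm (A j))\<^sup>2 + real (card K) * (\<Sum>k\<in>K. (norm (q k j - av (q k)))\<^sup>2)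
        + real (card K) * (\<Sum>k\<in>K. (norm (r k j - av (r k)))\<^sup>2) + real (card K) * (\<Sum>k\<in>K. (norm (y j + f k j - av (f k)))\<^sup>2)))"
      unfolding B_def Cc_def Dd_def
      by (intro mult_left_mono add_mono order_refl norm_sum_sq) simp_all
    also have "\<dots> = 4 * \<gamma>\<^sup>2 * (norm (A j))\<^sup>2 + 4 * \<gamma>\<^sup>2 * real (card K) *
     (\<Sum>k\<in>K. (norm (q k j - av (q k)))\<^sup>2 + (norm (r k j - av (r k)))\<^sup>2 + (norm (y j + f k j - av (f k)))\<^sup>2)"
      by (simp add: sum.distrib algebra_simps)
    finally show ?thesis .
  qed
  have cq: "(\<Sum>j<N. (norm (v k j - av (v k)))\<^sup>2) \<le> (\<Sum>j<N. (norm (v k j))\<^sup>2)" for v :: "'k \<Rightarrow> nat \<Rightarrow> 'a" and k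
    unfolding av_def by (rule centered_le_N)
  have "(\<Sum>j<N. (norm (\<Delta> j))\<^sup>2) \<le> (\<Sum>j<N. 4 * \<gamma>\<^sup>2 * (norm (A j))\<^sup>2 + 4 * \<gamma>\<^sup>2 * real (card K) *
     (\<Sum>k\<in>K. (norm (q k j - av (q k)))\<^sup>2 + (norm (r k j - av (r k)))\<^sup>2 + (norm (y j + f k j - av (f k)))\<^sup>2))"
    by (rule sum_mono) (rule bnd, simp)
  also have "\<dots> = 4 * \<gamma>\<^sup>2 * (\<Sum>j<N. (norm (A j))\<^sup>2) + 4 * \<gamma>\<^sup>2 * real (card K) *
     (\<Sum>k\<in>K. (\<Sum>j<N. (norm (q k j - av (q k)))\<^sup>2) + (\<Sum>j<N. (norm (r k j - av (r k)))\<^sup>2) + (\<Sum>j<N. (norm (y j + f k j - av (f k)))\<^sup>2))"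
    by (simp only: sum.distrib sum_distrib_left[symmetric] sum.swap[of _ "{..<N}" K])
  also have "\<dots> \<le> 4 * \<gamma>\<^sup>2 * (\<Sum>j<N. (norm (A j))\<^sup>2) + 4 * \<gamma>\<^sup>2 * real (card K) *
     (\<Sum>k\<in>K. (\<Sum>j<N. (norm (q k j))\<^sup>2) + (\<Sum>j<N. (norm (r k j))\<^sup>2) + (\<Sum>j<N. (norm (y j + f k j - av (f k)))\<^sup>2))"
    by (intro add_mono order_refl mult_left_mono sum_mono cq) simp_all
  finally have main: "(\<Sum>j<N. (norm (\<Delta> j))\<^sup>2) \<le> 4 * \<gamma>\<^sup>2 * (\<Sum>j<N. (norm (A j))\<^sup>2) + 4 * \<gamma>\<^sup>2 * real (card K) *
     (\<Sum>k\<in>K. (\<Sum>j<N. (norm (q k j))\<^sup>2) + (\<Sum>j<N. (norm (r k j))\<^sup>2) + (\<Sum>j<N. (norm (y j + f k j - av (f k)))\<^sup>2))" .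
  have "(1 / real N) * (\<Sum>j<N. (norm (\<Delta> j))\<^sup>2) \<le> (1 / real N) * (4 * \<gamma>\<^sup>2 * (\<Sum>j<N. (norm (A j))\<^sup>2) + 4 * \<gamma>\<^sup>2 * real (card K) *
     (\<Sum>k\<in>K. (\<Sum>j<N. (norm (q k j))\<^sup>2) + (\<Sum>j<N. (norm (r k j))\<^sup>2) + (\<Sum>j<N. (norm (y j + f k j - av (f k)))\<^sup>2)))"
    by (rule mult_left_mono[OF main]) simp
  also have "\<dots> = 4 * \<gamma>\<^sup>2 * ((1 / real N) * (\<Sum>j<N. (norm (A j))\<^sup>2))
     + 4 * \<gamma>\<^sup>2 * real (card K) * (\<Sum>k\<in>K. (1 / real N) * (\<Sum>j<N. (norm (q k j))\<^sup>2 + (norm (r k j))\<^sup>2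
          + (norm (y j + f k j - av (f k)))\<^sup>2))"
    by (simp add: sum.distrib sum_distrib_left algebra_simps)
  finally show ?thesis unfolding A_def av_def .
qed

lemma avg_add: "avg A (\<lambda>i. f i + g i) = avg A f + avg A g"
  by (simp add: avg_def sum.distrib scaleR_add_right)
lemma avg_diff: "avg A (\<lambda>i. f i - g i) = avg A f - avg A g"
  by (simp add: avg_def sum_subtractf scaleR_diff_right)

lemma avg_lip_sq:
  fixes F :: "'c \<Rightarrow> 'a::real_normed_vector \<Rightarrow> 'a"
  assumes "finite A" "A \<noteq> {}" "\<And>i. i \<in> A \<Longrightarrow> norm (F i (u i) - F i (v i)) \<le> L * norm (u i - v i)"
  shows "(norm (avg A (\<lambda>i. F i (u i) - F i (v i))))\<^sup>2 \<le> L\<^sup>2 * ((1 / real (card A)) * (\<Sum>i\<in>A. (norm (u i - v i))\<^sup>2))"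
proof -
  have "(norm (avg A (\<lambda>i. F i (u i) - F i (v i))))\<^sup>2 \<le> (1 / real (card A)) * (\<Sum>i\<in>A. (norm (F i (u i) - F i (v i)))\<^sup>2)"
    by (rule avg_sq_le[OF assms(1,2)])
  also have "\<dots> \<le> (1 / real (card A)) * (\<Sum>i\<in>A. L\<^sup>2 * (norm (u i - v i))\<^sup>2)"
  proof (intro mult_left_mono sum_mono)
    fix i assume i: "i \<in> A"
    have "(norm (F i (u i) - F i (v i)))\<^sup>2 \<le> (L * norm (u i - v i))\<^sup>2"
      by (rule power_mono[OF assms(3)[OF i]]) simp
    then show "(norm (F i (u i) - F i (v i)))\<^sup>2 \<le> L\<^sup>2 * (norm (u i - v i))\<^sup>2" by (simp add: power_mult_distrib)
  qed simp
  finally show ?thesis by (simp add: sum_distrib_left algebra_simps)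
qed

lemma sum_prod_fst_snd: "(\<Sum>a\<in>A. \<Sum>b\<in>B. F a b) = (\<Sum>k\<in>A \<times> B. F (fst k) (snd k))"
  by (simp add: sum.cartesian_product split_beta')

context
  fixes gs :: "'c \<Rightarrow> 'a::euclidean_space \<Rightarrow> 'b \<Rightarrow> 'a" and gF :: "'c \<Rightarrow> 'a \<Rightarrow> 'a"
    and \<gamma> L :: real and C :: "nat \<Rightarrow> 'c set" and N E H :: nat and x0 :: 'a and t :: nat
begin

definition "Xv W e j i h = mtgc_x gs \<gamma> C N E H x0 W t e j i h"
definition "xbv W e j = mtgc_xbj gs \<gamma> C N E H x0 W t e j"
definition "xhv W e = mtgc_xhat gs \<gamma> C N E H x0 W t e"
definition "yv W j = mtgc_y gs \<gamma> C N E H x0 W t j"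
definition "gfv j x = avg (C j) (\<lambda>i. gF i x)"
definition "epsv W e h j i = gs i (Xv W e j i h) (W t e i h) - gF i (Xv W e j i h)"
definition "nuv W k j = avg (C j) (\<lambda>i. epsv W (fst k) (snd k) j i)"

definition "df W e = (\<Sum>j<N. (1 / real N) * (norm (xhv W e - xbv W e j))\<^sup>2)"
definition "qf W e = (\<Sum>j<N. \<Sum>i\<in>C j. \<Sum>h<H. (1 / (real N * real H * real (card (C j)))) * (norm (xbv W e j - Xv W e j i h))\<^sup>2)"
definition "yf W e = (\<Sum>j<N. (1 / real N) * (norm (yv W j + gfv j (xhv W e) - (1 / real N) *\<^sub>R (\<Sum>j'<N. gfv j' (xhv W e))))\<^sup>2)"
definition "nf W e = (1 / real N) * (\<Sum>j<N. (norm (\<Sum>k\<in>{..<e} \<times> {..<H}. nuv W k j - (1 / real N) *\<^sub>R (\<Sum>j'<N. nuv W k j')))\<^sup>2)"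

lemma pw_mtgc:
  assumes N1: "N \<ge> 1" and CC: "\<And>j. j < N \<Longrightarrow> finite (C j) \<and> C j \<noteq> {}"
    and Lip: "\<And>j i x y. j < N \<Longrightarrow> i \<in> C j \<Longrightarrow> norm (gF i x - gF i y) \<le> L * norm (x - y)"
  shows "df W e \<le> 4 * \<gamma>\<^sup>2 * nf W e + 4 * \<gamma>\<^sup>2 * (real e * real H * real H) * (\<Sum>e'<e. L\<^sup>2 * qf W e' + L\<^sup>2 * df W e' + yf W e')"
proof -
  let ?K = "{..<e} \<times> {..<H}"
  define G where "G k j = Gj gs \<gamma> C N E H x0 W t (fst k) (snd k) j" for k :: "nat \<times> nat" and j
  define q where "q k j = avg (C j) (\<lambda>i. gF i (Xv W (fst k) j i (snd k)) - gF i (xbv W (fst k) j))" for k :: "nat \<times> nat" and j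
  define r where "r k j = avg (C j) (\<lambda>i. gF i (xbv W (fst k) j) - gF i (xhv W (fst k)))" for k :: "nat \<times> nat" and j
  define f where "f k j = gfv j (xhv W (fst k))" for k :: "nat \<times> nat" and j
  define \<Delta> where "\<Delta> j = xhv W e - xbv W e j" for j
  have D: "\<Delta> j = \<gamma> *\<^sub>R (\<Sum>k\<in>?K. G k j - (1 / real N) *\<^sub>R (\<Sum>j'<N. G k j') + yv W j)" if "j < N" for j
    unfolding \<Delta>_def xhv_def xbv_def yv_def G_def using delta_formula[where g=gs and \<gamma>=\<gamma> and E=E and H=H and W=W and t=t and e=e, OF N1 CC that]
    by (simp add: sum_prod_fst_snd)
  have GG: "G k j = nuv W k j + q k j + r k j + f k j" if "j < N" for k j
    unfolding G_def nuv_def q_def r_def f_def gfv_def Gj_def epsv_def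
    by (simp add: Xv_def flip: avg_add avg_diff)
  have pw: "(1 / real N) * (\<Sum>j<N. (norm (\<Delta> j))\<^sup>2) \<le>
     4 * \<gamma>\<^sup>2 * ((1 / real N) * (\<Sum>j<N. (norm (\<Sum>k\<in>?K. nuv W k j - (1 / real N) *\<^sub>R (\<Sum>j'<N. nuv W k j')))\<^sup>2))
     + 4 * \<gamma>\<^sup>2 * real (card ?K) * (\<Sum>k\<in>?K. (1 / real N) * (\<Sum>j<N. (norm (q k j))\<^sup>2 + (norm (r k j))\<^sup>2
          + (norm (yv W j + f k j - (1 / real N) *\<^sub>R (\<Sum>j'<N. f k j')))\<^sup>2))"
    by (rule pw_abstract[where G=G]) (auto intro: D GG)
  have qb: "(norm (q k j))\<^sup>2 \<le> L\<^sup>2 * ((1 / real (card (C j))) * (\<Sum>i\<in>C j. (norm (xbv W (fst k) j - Xv W (fst k) j i (snd k)))\<^sup>2))"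
    if "j < N" for k j
  proof -
    have "(norm (q k j))\<^sup>2 \<le> L\<^sup>2 * ((1 / real (card (C j))) * (\<Sum>i\<in>C j. (norm (Xv W (fst k) j i (snd k) - xbv W (fst k) j))\<^sup>2))"
      unfolding q_def using CC[OF that] by (intro avg_lip_sq Lip[OF that]) auto
    then show ?thesis by (simp add: norm_minus_commute)
  qed
  have rb: "(norm (r k j))\<^sup>2 \<le> L\<^sup>2 * (norm (xhv W (fst k) - xbv W (fst k) j))\<^sup>2"
    if "j < N" for k j
  proof -
    have "(norm (r k j))\<^sup>2 \<le> L\<^sup>2 * ((1 / real (card (C j))) * (\<Sum>i\<in>C j. (norm (xbv W (fst k) j - xhv W (fst k)))\<^sup>2))"
      unfolding r_def using CC[OF that] by (intro avg_lip_sq Lip[OF that]) auto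
    also have "\<dots> = L\<^sup>2 * (norm (xhv W (fst k) - xbv W (fst k) j))\<^sup>2"
      using CC[OF that] by (simp add: norm_minus_commute card_gt_0_iff)
    finally show ?thesis .
  qed
  have inner: "(\<Sum>k\<in>?K. (1 / real N) * (\<Sum>j<N. (norm (q k j))\<^sup>2 + (norm (r k j))\<^sup>2
          + (norm (yv W j + f k j - (1 / real N) *\<^sub>R (\<Sum>j'<N. f k j')))\<^sup>2))
      \<le> real H * (\<Sum>e'<e. L\<^sup>2 * qf W e' + L\<^sup>2 * df W e' + yf W e')"
  proof -
    have "(\<Sum>k\<in>?K. (1 / real N) * (\<Sum>j<N. (norm (q k j))\<^sup>2 + (norm (r k j))\<^sup>2
          + (norm (yv W j + f k j - (1 / real N) *\<^sub>R (\<Sum>j'<N. f k j')))\<^sup>2))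
       \<le> (\<Sum>k\<in>?K. (1 / real N) * (\<Sum>j<N. L\<^sup>2 * ((1 / real (card (C j))) * (\<Sum>i\<in>C j. (norm (xbv W (fst k) j - Xv W (fst k) j i (snd k)))\<^sup>2))
           + L\<^sup>2 * (norm (xhv W (fst k) - xbv W (fst k) j))\<^sup>2
          + (norm (yv W j + f k j - (1 / real N) *\<^sub>R (\<Sum>j'<N. f k j')))\<^sup>2))"
      by (intro sum_mono mult_left_mono add_mono qb rb order_refl) auto
    also have "\<dots> = (\<Sum>e'<e. \<Sum>h<H. (1 / real N) * (\<Sum>j<N. L\<^sup>2 * ((1 / real (card (C j))) * (\<Sum>i\<in>C j. (norm (xbv W e' j - Xv W e' j i h))\<^sup>2))
           + L\<^sup>2 * (norm (xhv W e' - xbv W e' j))\<^sup>2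
          + (norm (yv W j + gfv j (xhv W e') - (1 / real N) *\<^sub>R (\<Sum>j'<N. gfv j' (xhv W e'))))\<^sup>2))"
      unfolding f_def by (simp add: sum_prod_fst_snd)
    also have "\<dots> = real H * (\<Sum>e'<e. L\<^sup>2 * qf W e' + L\<^sup>2 * df W e' + yf W e')"
    proof -
      have "(\<Sum>h<H. (1 / real N) * (\<Sum>j<N. L\<^sup>2 * ((1 / real (card (C j))) * (\<Sum>i\<in>C j. (norm (xbv W e' j - Xv W e' j i h))\<^sup>2))
           + L\<^sup>2 * (norm (xhv W e' - xbv W e' j))\<^sup>2
          + (norm (yv W j + gfv j (xhv W e') - (1 / real N) *\<^sub>R (\<Sum>j'<N. gfv j' (xhv W e'))))\<^sup>2))
        = real H * (L\<^sup>2 * qf W e' + L\<^sup>2 * df W e' + yf W e')" for e'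
      proof -
        have q1: "(\<Sum>h<H. (1 / real N) * (\<Sum>j<N. L\<^sup>2 * ((1 / real (card (C j))) * (\<Sum>i\<in>C j. (norm (xbv W e' j - Xv W e' j i h))\<^sup>2))))
             = real H * (L\<^sup>2 * qf W e')"
        proof (cases "H = 0")
          case True then show ?thesis by simp
        next
          case False
          define F where "F h j i = (norm (xbv W e' j - Xv W e' j i h))\<^sup>2" for h j i
          have "(\<Sum>h<H. (1 / real N) * (\<Sum>j<N. L\<^sup>2 * ((1 / real (card (C j))) * (\<Sum>i\<in>C j. F h j i))))
              = (\<Sum>h<H. \<Sum>j<N. \<Sum>i\<in>C j. (L\<^sup>2 / (real N * real (card (C j)))) * F h j i)"
            by (simp add: sum_distrib_left)
          also have "\<dots> = (\<Sum>j<N. \<Sum>h<H. \<Sum>i\<in>C j. (L\<^sup>2 / (real N * real (card (C j)))) * F h j i)"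
            by (rule sum.swap)
          also have "\<dots> = (\<Sum>j<N. \<Sum>i\<in>C j. \<Sum>h<H. (L\<^sup>2 / (real N * real (card (C j)))) * F h j i)"
            by (rule sum.cong[OF refl], rule sum.swap)
          also have "\<dots> = real H * (L\<^sup>2 * (\<Sum>j<N. \<Sum>i\<in>C j. \<Sum>h<H. (1 / (real N * real H * real (card (C j)))) * F h j i))"
            unfolding sum_distrib_left using False
            by (intro sum.cong refl) (simp add: field_simps)
          finally show ?thesis unfolding qf_def F_def .
        qed
        have split3: "(\<Sum>h<H. (1 / real N) * (\<Sum>j<N. a h j + b j + c j)) =
           (\<Sum>h<H. (1 / real N) * (\<Sum>j<N. a h j)) + real H * ((1 / real N) * (\<Sum>j<N. b j)) + real H * ((1 / real N) * (\<Sum>j<N. c j))"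
          for a :: "nat \<Rightarrow> nat \<Rightarrow> real" and b c :: "nat \<Rightarrow> real"
          by (simp add: sum.distrib distrib_left)
        have d1: "(1 / real N) * (\<Sum>j<N. L\<^sup>2 * (norm (xhv W e' - xbv W e' j))\<^sup>2) = L\<^sup>2 * df W e'"
          unfolding df_def by (simp add: sum_distrib_left)
        have y1: "(1 / real N) * (\<Sum>j<N. (norm (yv W j + gfv j (xhv W e') - (1 / real N) *\<^sub>R (\<Sum>j'<N. gfv j' (xhv W e'))))\<^sup>2) = yf W e'"
          unfolding yf_def by (simp add: sum_distrib_left)
        show ?thesis unfolding split3 q1 d1 y1 by (simp add: algebra_simps)
      qed
      then show ?thesis by (simp add: sum_distrib_left)
    qed
    finally show ?thesis .
  qed
  have cK: "real (card ?K) = real e * real H" by (simp add: card_cartesian_product)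
  have "df W e = (1 / real N) * (\<Sum>j<N. (norm (\<Delta> j))\<^sup>2)"
    unfolding df_def \<Delta>_def by (simp add: sum_distrib_left)
  also have "\<dots> \<le> 4 * \<gamma>\<^sup>2 * nf W e + 4 * \<gamma>\<^sup>2 * real (card ?K) * (real H * (\<Sum>e'<e. L\<^sup>2 * qf W e' + L\<^sup>2 * df W e' + yf W e'))"
    using pw unfolding nf_def
    by (rule order_trans) (intro add_mono order_refl mult_left_mono inner, simp)
  also have "\<dots> = 4 * \<gamma>\<^sup>2 * nf W e + 4 * \<gamma>\<^sup>2 * (real e * real H * real H) * (\<Sum>e'<e. L\<^sup>2 * qf W e' + L\<^sup>2 * df W e' + yf W e')"
    unfolding cK by simp
  finally show ?thesis .
qed

end

definition sigP :: "'m measure \<Rightarrow> 'b measure \<Rightarrow> ('k \<Rightarrow> 'm \<Rightarrow> 'b) \<Rightarrow> 'k set \<Rightarrow> 'm measure" where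
  "sigP M S X P = sigma (space M) (\<Union>p\<in>P. {X p -` A \<inter> space M | A. A \<in> sets S})"

lemma sigP_space: "space (sigP M S X P) = space M"
  unfolding sigP_def by (rule space_measure_of) auto

lemma sigP_sets: "sets (sigP M S X P) = sigma_sets (space M) (\<Union>p\<in>P. {X p -` A \<inter> space M | A. A \<in> sets S})"
  unfolding sigP_def by (rule sets_measure_of) auto

lemma sigP_coord:
  assumes "p \<in> P" "X p \<in> measurable M S"
  shows "X p \<in> measurable (sigP M S X P) S"
proof (rule measurableI)
  fix x assume "x \<in> space (sigP M S X P)"
  then show "X p x \<in> space S" using assms(2) unfolding sigP_space by (auto dest: measurable_space)
next
  fix A assume "A \<in> sets S"
  then have "X p -` A \<inter> space M \<in> (\<Union>p\<in>P. {X p -` A \<inter> space M | A. A \<in> sets S})" using assms(1) by blast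
  then show "X p -` A \<inter> space (sigP M S X P) \<in> sets (sigP M S X P)"
    unfolding sigP_space sigP_sets by (rule sigma_sets.Basic)
qed

lemma sigP_sub:
  assumes "\<And>p. p \<in> P \<Longrightarrow> X p \<in> measurable M S"
  shows "sets (sigP M S X P) \<subseteq> sets M"
  unfolding sigP_sets
proof (rule sigma_sets_le_sets_iff[THEN iffD2])
  show "(\<Union>p\<in>P. {X p -` A \<inter> space M | A. A \<in> sets S}) \<subseteq> sets M"
    using assms by (auto intro: measurable_sets)
qed

lemma (in prob_space) indep_from_sigP:
  assumes ind: "indep_vars (\<lambda>_. S) X I" and PI: "P \<subseteq> I" and kI: "k \<in> I" and kP: "k \<notin> P"
    and Z: "Z \<in> measurable (sigP M S X P) Mz"
  shows "random_variable Mz Z \<and> random_variable S (X k) \<and>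
    distr M Mz Z \<Otimes>\<^sub>M distr M S (X k) = distr M (Mz \<Otimes>\<^sub>M S) (\<lambda>x. (Z x, X k x))"
proof -
  have Xm: "\<And>p. p \<in> I \<Longrightarrow> X p \<in> measurable M S" using ind unfolding indep_vars_def by auto
  have ZM: "Z \<in> measurable M Mz"
  proof (rule measurableI)
    fix x assume "x \<in> space M" then show "Z x \<in> space Mz"
      using Z by (auto dest: measurable_space simp: sigP_space)
  next
    fix A assume "A \<in> sets Mz"
    then have "Z -` A \<inter> space (sigP M S X P) \<in> sets (sigP M S X P)" by (rule measurable_sets[OF Z])
    then show "Z -` A \<inter> space M \<in> sets M" using sigP_sub[of P X M S] Xm PI unfolding sigP_space by blast
  qed
  define E where "E p = {X p -` A \<inter> space M | A. A \<in> sets S}" for p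
  have indE: "indep_sets E I" using ind unfolding indep_vars_def2 E_def by simp
  define II where "II b = (if b then P else {k})" for b
  have U: "(\<Union>b\<in>UNIV. II b) = P \<union> {k}" unfolding II_def by auto
  have indE': "indep_sets E (\<Union>b\<in>UNIV. II b)" unfolding U using PI kI
    by (intro indep_sets_mono_index[OF _ indE]) auto
  have IS: "Int_stable (E p)" for p
    unfolding E_def Int_stable_def
    by (auto, rule_tac x="A \<inter> Aa" in exI, auto)
  have dj: "disjoint_family_on II UNIV" unfolding II_def disjoint_family_on_def using kP by auto
  have c: "indep_sets (\<lambda>b. sigma_sets (space M) (\<Union>p\<in>II b. E p)) UNIV"
    by (rule indep_sets_collect_sigma[OF indE' IS dj])
  have c2: "indep_set (sigma_sets (space M) (\<Union>p\<in>P. E p)) (sigma_sets (space M) (E k))"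
    unfolding indep_set_def
  proof (rule indep_sets_cong[THEN iffD1, OF refl _ c])
    fix b :: bool show "sigma_sets (space M) (\<Union>p\<in>II b. E p) = case_bool (sigma_sets (space M) (\<Union>p\<in>P. E p)) (sigma_sets (space M) (E k)) b"
      by (cases b) (auto simp: II_def)
  qed
  have s1: "sigma_sets (space M) {Z -` A \<inter> space M |A. A \<in> sets Mz} \<subseteq> sigma_sets (space M) (\<Union>p\<in>P. E p)"
  proof (rule sigma_sets_mono)
    show "{Z -` A \<inter> space M |A. A \<in> sets Mz} \<subseteq> sigma_sets (space M) (\<Union>p\<in>P. E p)"
    proof
      fix B assume "B \<in> {Z -` A \<inter> space M |A. A \<in> sets Mz}"
      then obtain A where A: "A \<in> sets Mz" "B = Z -` A \<inter> space M" by blast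
      have "Z -` A \<inter> space (sigP M S X P) \<in> sets (sigP M S X P)" by (rule measurable_sets[OF Z A(1)])
      then show "B \<in> sigma_sets (space M) (\<Union>p\<in>P. E p)" unfolding A(2) sigP_space sigP_sets E_def .
    qed
  qed
  have c3: "indep_set (sigma_sets (space M) {Z -` A \<inter> space M |A. A \<in> sets Mz}) (sigma_sets (space M) {X k -` A \<inter> space M |A. A \<in> sets S})"
    using c2 unfolding indep_set_def
    by (rule indep_sets_mono_sets) (use s1 in \<open>auto simp: E_def split: bool.split\<close>)
  have rvs: "random_variable Mz Z" "random_variable S (X k)" using ZM Xm[OF kI] by auto
  then have XY: "random_variable (Mz \<Otimes>\<^sub>M S) (\<lambda>x. (Z x, X k x))"
    by (rule measurable_Pair)
  let ?S = "distr M Mz Z" and ?T = "distr M S (X k)" and ?J = "distr M (Mz \<Otimes>\<^sub>M S) (\<lambda>x. (Z x, X k x))"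
  interpret PX: prob_space ?S by (rule prob_space_distr) fact
  interpret PY: prob_space ?T by (rule prob_space_distr) fact
  interpret XY: pair_prob_space ?S ?T ..
  have "?S \<Otimes>\<^sub>M ?T = ?J"
  proof (rule pair_measure_eqI)
    show "sigma_finite_measure ?S" ..
    show "sigma_finite_measure ?T" ..
    fix A B assume A: "A \<in> sets ?S" and B: "B \<in> sets ?T"
    have "emeasure ?J (A \<times> B) = emeasure M ((\<lambda>x. (Z x, X k x)) -` (A \<times> B) \<inter> space M)"
      using A B by (intro emeasure_distr[OF XY]) auto
    also have "((\<lambda>x. (Z x, X k x)) -` (A \<times> B) \<inter> space M) = (Z -` A \<inter> space M) \<inter> (X k -` B \<inter> space M)" by auto
    also have "emeasure M \<dots> = emeasure M (Z -` A \<inter> space M) * emeasure M (X k -` B \<inter> space M)"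
    proof -
      have a: "Z -` A \<inter> space M \<in> sigma_sets (space M) {Z -` A \<inter> space M |A. A \<in> sets Mz}"
        using A by (intro sigma_sets.Basic) auto
      have b: "X k -` B \<inter> space M \<in> sigma_sets (space M) {X k -` A \<inter> space M |A. A \<in> sets S}"
        using B by (intro sigma_sets.Basic) auto
      show ?thesis using c3[unfolded indep_sets2_eq] a b
        by (simp add: emeasure_eq_measure measure_nonneg ennreal_mult)
    qed
    also have "\<dots> = emeasure ?S A * emeasure ?T B"
      using rvs A B by (simp add: emeasure_distr)
    finally show "emeasure ?S A * emeasure ?T B = emeasure ?J (A \<times> B)" by simp
  qed simp
  then show ?thesis using rvs by simp
qed

lemma (in prob_space) core1:
  fixes gs :: "'v::euclidean_space \<Rightarrow> 'b \<Rightarrow> 'v" and gF :: "'v \<Rightarrow> 'v" and x :: "'z \<Rightarrow> 'v"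
  assumes ind: "random_variable Mz Z \<and> random_variable S \<xi> \<and>
    distr M Mz Z \<Otimes>\<^sub>M distr M S \<xi> = distr M (Mz \<Otimes>\<^sub>M S) (\<lambda>x. (Z x, \<xi> x))"
    and Dk: "distr M S \<xi> = Dk"
    and xm: "x \<in> borel_measurable Mz"
    and gsm: "(\<lambda>(x, s). gs x s) \<in> borel_measurable (borel \<Otimes>\<^sub>M S)"
    and gFm: "gF \<in> borel_measurable borel"
    and var: "\<And>x. (\<integral>\<^sup>+ s. ennreal ((norm (gs x s - gF x))\<^sup>2) \<partial>Dk) \<le> ennreal (\<sigma>\<^sup>2)"
  shows "(\<integral>\<^sup>+ \<omega>. ennreal ((norm (gs (x (Z \<omega>)) (\<xi> \<omega>) - gF (x (Z \<omega>))))\<^sup>2) \<partial>M) \<le> ennreal (\<sigma>\<^sup>2)"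
proof -
  have rv: "random_variable Mz Z" "random_variable S \<xi>" "distr M Mz Z \<Otimes>\<^sub>M distr M S \<xi> = distr M (Mz \<Otimes>\<^sub>M S) (\<lambda>x. (Z x, \<xi> x))"
    using ind by auto
  define f where "f p = ennreal ((norm (gs (x (fst p)) (snd p) - gF (x (fst p))))\<^sup>2)" for p
  have gsm2: "(\<lambda>p. gs (x (fst p)) (snd p)) \<in> borel_measurable (Mz \<Otimes>\<^sub>M S)"
  proof -
    have "(\<lambda>p. (x (fst p), snd p)) \<in> measurable (Mz \<Otimes>\<^sub>M S) (borel \<Otimes>\<^sub>M S)"
      by (rule measurable_Pair[OF measurable_compose[OF measurable_fst xm] measurable_snd])
    from measurable_compose[OF this gsm] show ?thesis by simp
  qed
  have fm: "f \<in> borel_measurable (Mz \<Otimes>\<^sub>M S)"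
  proof -
    have gFm2: "(\<lambda>p. gF (x (fst p))) \<in> borel_measurable (Mz \<Otimes>\<^sub>M S)"
      by (rule measurable_compose[OF measurable_compose[OF measurable_fst xm] gFm])
    have "(\<lambda>p. (norm (gs (x (fst p)) (snd p) - gF (x (fst p))))\<^sup>2) \<in> borel_measurable (Mz \<Otimes>\<^sub>M S)"
    proof -
      have "(\<lambda>p. gs (x (fst p)) (snd p) - gF (x (fst p))) \<in> borel_measurable (Mz \<Otimes>\<^sub>M S)"
        by (rule borel_measurable_diff[OF gsm2 gFm2])
      then have "(\<lambda>p. norm (gs (x (fst p)) (snd p) - gF (x (fst p)))) \<in> borel_measurable (Mz \<Otimes>\<^sub>M S)"
        by (rule measurable_compose[OF _ borel_measurable_norm])
      then show ?thesis by (rule borel_measurable_power)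
    qed
    then show ?thesis unfolding f_def by (rule measurable_compose[OF _ measurable_ennreal])
  qed
  interpret Pz: prob_space "distr M Mz Z" by (rule prob_space_distr[OF rv(1)])
  interpret Pk: prob_space "distr M S \<xi>" by (rule prob_space_distr[OF rv(2)])
  have "(\<integral>\<^sup>+ \<omega>. ennreal ((norm (gs (x (Z \<omega>)) (\<xi> \<omega>) - gF (x (Z \<omega>))))\<^sup>2) \<partial>M) = (\<integral>\<^sup>+ \<omega>. f (Z \<omega>, \<xi> \<omega>) \<partial>M)"
    unfolding f_def by simp
  also have "\<dots> = integral\<^sup>N (distr M (Mz \<Otimes>\<^sub>M S) (\<lambda>\<omega>. (Z \<omega>, \<xi> \<omega>))) f"
    by (rule nn_integral_distr[symmetric, OF measurable_Pair[OF rv(1) rv(2)]]) (unfold measurable_distr_eq1, rule fm)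
  also have "\<dots> = integral\<^sup>N (distr M Mz Z \<Otimes>\<^sub>M distr M S \<xi>) f" unfolding rv(3) ..
  also have "\<dots> = (\<integral>\<^sup>+ z. \<integral>\<^sup>+ s. f (z, s) \<partial>distr M S \<xi> \<partial>distr M Mz Z)"
    by (rule Pk.nn_integral_fst[symmetric])
       (subst measurable_cong_sets[OF sets_pair_measure_cong[OF sets_distr sets_distr] refl], rule fm)
  also have "\<dots> \<le> (\<integral>\<^sup>+ z. ennreal (\<sigma>\<^sup>2) \<partial>distr M Mz Z)"
    by (intro nn_integral_mono) (simp add: f_def Dk var)
  also have "\<dots> = ennreal (\<sigma>\<^sup>2)" using Pz.emeasure_space_1 by simp
  finally show ?thesis .
qed

lemma abs_inner_le_sq: "\<bar>inner (a::'v::real_inner) b\<bar> \<le> (norm a)\<^sup>2 + (norm b)\<^sup>2"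
proof -
  have "\<bar>inner a b\<bar> \<le> norm a * norm b" by (rule Cauchy_Schwarz_ineq2)
  also have "\<dots> \<le> (norm a)\<^sup>2 + (norm b)\<^sup>2"
  proof -
    have "0 \<le> (norm a - norm b)\<^sup>2" by simp
    then have "2 * (norm a * norm b) \<le> (norm a)\<^sup>2 + (norm b)\<^sup>2" by (simp add: power2_eq_square algebra_simps)
    moreover have "0 \<le> norm a * norm b" by simp
    ultimately show ?thesis by linarith
  qed
  finally show ?thesis .
qed

lemma (in prob_space) core2:
  fixes gs :: "'v::euclidean_space \<Rightarrow> 'b \<Rightarrow> 'v" and gF :: "'v \<Rightarrow> 'v" and x u :: "'z \<Rightarrow> 'v"
  assumes ind: "random_variable Mz Z \<and> random_variable S \<xi> \<and>
    distr M Mz Z \<Otimes>\<^sub>M distr M S \<xi> = distr M (Mz \<Otimes>\<^sub>M S) (\<lambda>x. (Z x, \<xi> x))"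
    and Dk: "distr M S \<xi> = Dk"
    and xm: "x \<in> borel_measurable Mz" and um: "u \<in> borel_measurable Mz"
    and gsm: "(\<lambda>(x, s). gs x s) \<in> borel_measurable (borel \<Otimes>\<^sub>M S)"
    and gFm: "gF \<in> borel_measurable borel"
    and var: "\<And>x. (\<integral>\<^sup>+ s. ennreal ((norm (gs x s - gF x))\<^sup>2) \<partial>Dk) \<le> ennreal (\<sigma>\<^sup>2)"
    and unb: "\<And>x. integrable Dk (gs x) \<and> (\<integral>s. gs x s \<partial>Dk) = gF x"
    and uL2: "(\<integral>\<^sup>+ \<omega>. ennreal ((norm (u (Z \<omega>)))\<^sup>2) \<partial>M) < \<infinity>"
  shows "integrable M (\<lambda>\<omega>. inner (u (Z \<omega>)) (gs (x (Z \<omega>)) (\<xi> \<omega>) - gF (x (Z \<omega>))))"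
    and "(\<integral>\<omega>. inner (u (Z \<omega>)) (gs (x (Z \<omega>)) (\<xi> \<omega>) - gF (x (Z \<omega>))) \<partial>M) = 0"
proof -
  have rv: "random_variable Mz Z" "random_variable S \<xi>" "distr M Mz Z \<Otimes>\<^sub>M distr M S \<xi> = distr M (Mz \<Otimes>\<^sub>M S) (\<lambda>x. (Z x, \<xi> x))"
    using ind by auto
  interpret Pz: prob_space "distr M Mz Z" by (rule prob_space_distr[OF rv(1)])
  interpret Pk: prob_space "distr M S \<xi>" by (rule prob_space_distr[OF rv(2)])
  interpret PP: pair_prob_space "distr M Mz Z" "distr M S \<xi>" ..
  let ?P = "distr M Mz Z \<Otimes>\<^sub>M distr M S \<xi>"
  have setsP: "sets ?P = sets (Mz \<Otimes>\<^sub>M S)" by (rule sets_pair_measure_cong[OF sets_distr sets_distr])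
  define v where "v p = gs (x (fst p)) (snd p) - gF (x (fst p))" for p
  define h where "h p = inner (u (fst p)) (v p)" for p
  have vm: "v \<in> borel_measurable (Mz \<Otimes>\<^sub>M S)"
  proof -
    have "(\<lambda>p. (x (fst p), snd p)) \<in> measurable (Mz \<Otimes>\<^sub>M S) (borel \<Otimes>\<^sub>M S)"
      by (rule measurable_Pair[OF measurable_compose[OF measurable_fst xm] measurable_snd])
    from measurable_compose[OF this gsm] have g2: "(\<lambda>p. gs (x (fst p)) (snd p)) \<in> borel_measurable (Mz \<Otimes>\<^sub>M S)" by simp
    have gFm2: "(\<lambda>p. gF (x (fst p))) \<in> borel_measurable (Mz \<Otimes>\<^sub>M S)"
      by (rule measurable_compose[OF measurable_compose[OF measurable_fst xm] gFm])
    show ?thesis unfolding v_def by (rule borel_measurable_diff[OF g2 gFm2])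
  qed
  have um2: "(\<lambda>p. u (fst p)) \<in> borel_measurable (Mz \<Otimes>\<^sub>M S)"
    by (rule measurable_compose[OF measurable_fst um])
  have hm: "h \<in> borel_measurable (Mz \<Otimes>\<^sub>M S)"
    unfolding h_def by (rule borel_measurable_inner[OF um2 vm])
  have hmP: "h \<in> borel_measurable ?P" using hm by (subst measurable_cong_sets[OF setsP refl])
  define bnd where "bnd p = ennreal ((norm (u (fst p)))\<^sup>2) + ennreal ((norm (v p))\<^sup>2)" for p
  have bm: "bnd \<in> borel_measurable (Mz \<Otimes>\<^sub>M S)"
    unfolding bnd_def
    by (intro borel_measurable_add measurable_compose[OF _ measurable_ennreal] borel_measurable_power
        measurable_compose[OF um2 borel_measurable_norm] measurable_compose[OF vm borel_measurable_norm])
  have "(\<integral>\<^sup>+ p. ennreal (norm (h p)) \<partial>?P) \<le> (\<integral>\<^sup>+ p. bnd p \<partial>?P)"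
  proof (rule nn_integral_mono)
    fix p
    have "norm (h p) \<le> (norm (u (fst p)))\<^sup>2 + (norm (v p))\<^sup>2" unfolding h_def real_norm_def by (rule abs_inner_le_sq)
    then show "ennreal (norm (h p)) \<le> bnd p" unfolding bnd_def by (simp add: ennreal_plus[symmetric] del: ennreal_plus)
  qed
  also have "\<dots> = (\<integral>\<^sup>+ z. \<integral>\<^sup>+ s. bnd (z, s) \<partial>distr M S \<xi> \<partial>distr M Mz Z)"
    by (rule Pk.nn_integral_fst[symmetric]) (subst measurable_cong_sets[OF setsP refl], rule bm)
  also have "\<dots> \<le> (\<integral>\<^sup>+ z. ennreal ((norm (u z))\<^sup>2) + ennreal (\<sigma>\<^sup>2) \<partial>distr M Mz Z)"
  proof (rule nn_integral_mono)
    fix z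
    have "(\<integral>\<^sup>+ s. bnd (z, s) \<partial>distr M S \<xi>) = (\<integral>\<^sup>+ s. ennreal ((norm (u z))\<^sup>2) \<partial>distr M S \<xi>) + (\<integral>\<^sup>+ s. ennreal ((norm (v (z, s)))\<^sup>2) \<partial>distr M S \<xi>)"
      unfolding bnd_def fst_conv
    proof (rule nn_integral_add)
      show "(\<lambda>s. ennreal ((norm (v (z, s)))\<^sup>2)) \<in> borel_measurable (distr M S \<xi>)"
      proof -
        have "(\<lambda>s. (x z, s)) \<in> measurable S (borel \<Otimes>\<^sub>M S)"
          by (rule measurable_Pair[OF measurable_const measurable_ident_sets]) auto
        from measurable_compose[OF this gsm] have "(\<lambda>s. gs (x z) s) \<in> borel_measurable S" by simp
        then have "(\<lambda>s. v (z, s)) \<in> borel_measurable S" unfolding v_def by simp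
        then have "(\<lambda>s. ennreal ((norm (v (z, s)))\<^sup>2)) \<in> borel_measurable S"
          by (intro measurable_compose[OF _ measurable_ennreal] borel_measurable_power measurable_compose[OF _ borel_measurable_norm])
        then show ?thesis by (subst measurable_cong_sets[OF sets_distr refl])
      qed
    qed simp
    also have "\<dots> \<le> ennreal ((norm (u z))\<^sup>2) + ennreal (\<sigma>\<^sup>2)"
      using var[of "x z"] Pk.emeasure_space_1 unfolding v_def Dk by simp
    finally show "(\<integral>\<^sup>+ s. bnd (z, s) \<partial>distr M S \<xi>) \<le> ennreal ((norm (u z))\<^sup>2) + ennreal (\<sigma>\<^sup>2)" .
  qed
  also have "\<dots> = (\<integral>\<^sup>+ z. ennreal ((norm (u z))\<^sup>2) \<partial>distr M Mz Z) + ennreal (\<sigma>\<^sup>2)"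
  proof -
    have um3: "(\<lambda>z. ennreal ((norm (u z))\<^sup>2)) \<in> borel_measurable Mz"
      by (intro measurable_compose[OF _ measurable_ennreal] borel_measurable_power measurable_compose[OF um borel_measurable_norm])
    have "(\<integral>\<^sup>+ z. ennreal ((norm (u z))\<^sup>2) + ennreal (\<sigma>\<^sup>2) \<partial>distr M Mz Z) =
       (\<integral>\<^sup>+ z. ennreal ((norm (u z))\<^sup>2) \<partial>distr M Mz Z) + (\<integral>\<^sup>+ z. ennreal (\<sigma>\<^sup>2) \<partial>distr M Mz Z)"
      by (rule nn_integral_add) (use um3 in \<open>simp_all add: measurable_distr_eq1\<close>)
    then show ?thesis using Pz.emeasure_space_1 by simp
  qed
  also have "\<dots> < \<infinity>"
  proof -
    have um3: "(\<lambda>z. ennreal ((norm (u z))\<^sup>2)) \<in> borel_measurable Mz"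
      by (intro measurable_compose[OF _ measurable_ennreal] borel_measurable_power measurable_compose[OF um borel_measurable_norm])
    have "(\<integral>\<^sup>+ z. ennreal ((norm (u z))\<^sup>2) \<partial>distr M Mz Z) = (\<integral>\<^sup>+ \<omega>. ennreal ((norm (u (Z \<omega>)))\<^sup>2) \<partial>M)"
      by (rule nn_integral_distr[OF rv(1)]) (simp add: um3 measurable_distr_eq1)
    then show ?thesis using uL2 by simp
  qed
  finally have intP: "integrable ?P h" using hmP by (simp add: integrable_iff_bounded)
  have PJ: "?P = distr M (Mz \<Otimes>\<^sub>M S) (\<lambda>x. (Z x, \<xi> x))" by (rule rv(3))
  have ZX: "(\<lambda>x. (Z x, \<xi> x)) \<in> measurable M (Mz \<Otimes>\<^sub>M S)" by (rule measurable_Pair[OF rv(1) rv(2)])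
  have eqh: "(\<lambda>\<omega>. inner (u (Z \<omega>)) (gs (x (Z \<omega>)) (\<xi> \<omega>) - gF (x (Z \<omega>)))) = (\<lambda>\<omega>. h (Z \<omega>, \<xi> \<omega>))"
    unfolding h_def v_def by simp
  show "integrable M (\<lambda>\<omega>. inner (u (Z \<omega>)) (gs (x (Z \<omega>)) (\<xi> \<omega>) - gF (x (Z \<omega>))))"
    unfolding eqh using intP unfolding PJ by (subst (asm) integrable_distr_eq[OF ZX hm])
  have "(\<integral>\<omega>. h (Z \<omega>, \<xi> \<omega>) \<partial>M) = integral\<^sup>L ?P h"
    unfolding PJ by (rule integral_distr[OF ZX hm, symmetric])
  also have "\<dots> = (\<integral>z. (\<integral>s. h (z, s) \<partial>distr M S \<xi>) \<partial>distr M Mz Z)"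
    by (rule PP.integral_fst'[OF intP, symmetric])
  also have "\<dots> = (\<integral>z. 0 \<partial>distr M Mz Z)"
  proof (rule Bochner_Integration.integral_cong[OF refl])
    fix z
    have i1: "integrable (distr M S \<xi>) (gs (x z))" using unb[of "x z"] Dk by simp
    have i2: "(\<integral>s. gs (x z) s \<partial>distr M S \<xi>) = gF (x z)" using unb[of "x z"] Dk by simp
    have "(\<integral>s. h (z, s) \<partial>distr M S \<xi>) = inner (u z) (\<integral>s. gs (x z) s - gF (x z) \<partial>distr M S \<xi>)"
      unfolding h_def v_def fst_conv snd_conv
      by (rule integral_inner_right) (intro Bochner_Integration.integrable_diff i1 Pk.integrable_const)
    also have "(\<integral>s. gs (x z) s - gF (x z) \<partial>distr M S \<xi>) = 0"
      using i1 i2 by (subst Bochner_Integration.integral_diff) (auto simp: Pk.prob_space[simplified])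
    finally show "(\<integral>s. h (z, s) \<partial>distr M S \<xi>) = 0" by simp
  qed
  also have "\<dots> = 0" by simp
  finally show "(\<integral>\<omega>. inner (u (Z \<omega>)) (gs (x (Z \<omega>)) (\<xi> \<omega>) - gF (x (Z \<omega>))) \<partial>M) = 0"
    unfolding eqh .
qed

lemma meas_avg:
  assumes "\<And>i. i \<in> A \<Longrightarrow> (\<lambda>\<omega>. f i \<omega>) \<in> borel_measurable \<Omega>"
  shows "(\<lambda>\<omega>. avg A (\<lambda>i. f i \<omega>) :: 'a::euclidean_space) \<in> borel_measurable \<Omega>"
  unfolding avg_def using assms by (intro borel_measurable_scaleR borel_measurable_const borel_measurable_sum) auto

lemma meas_gs:
  assumes gsm: "(\<lambda>(x, s). gs x s) \<in> borel_measurable (borel \<Otimes>\<^sub>M S)"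
    and xm: "x \<in> borel_measurable \<Omega>" and wm: "w \<in> measurable \<Omega> S"
  shows "(\<lambda>\<omega>. gs (x \<omega>) (w \<omega>) :: 'a::euclidean_space) \<in> borel_measurable \<Omega>"
  using measurable_compose[OF measurable_Pair[OF xm wm] gsm] by simp

lemma meas_loc:
  fixes gs :: "'c \<Rightarrow> 'a::euclidean_space \<Rightarrow> 'b \<Rightarrow> 'a"
  assumes gsm: "(\<lambda>(x, s). gs i x s) \<in> borel_measurable (borel \<Otimes>\<^sub>M S)"
    and xzm: "xz \<in> borel_measurable \<Omega>" and zm: "z \<in> borel_measurable \<Omega>" and ym: "y \<in> borel_measurable \<Omega>"
    and wm: "\<And>h'. h' < h \<Longrightarrow> (\<lambda>\<omega>. W \<omega> t e i h') \<in> measurable \<Omega> S"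
  shows "(\<lambda>\<omega>. mtgc_loc gs \<gamma> (W \<omega>) t e i (z \<omega>) (y \<omega>) (xz \<omega>) h) \<in> borel_measurable \<Omega>"
  using wm
proof (induction h)
  case 0
  then show ?case using xzm by simp
next
  case (Suc h)
  have ih: "(\<lambda>\<omega>. mtgc_loc gs \<gamma> (W \<omega>) t e i (z \<omega>) (y \<omega>) (xz \<omega>) h) \<in> borel_measurable \<Omega>"
    using Suc by auto
  have g: "(\<lambda>\<omega>. gs i (mtgc_loc gs \<gamma> (W \<omega>) t e i (z \<omega>) (y \<omega>) (xz \<omega>) h) (W \<omega> t e i h)) \<in> borel_measurable \<Omega>"
    by (rule meas_gs[OF gsm ih Suc.prems[OF lessI]])
  show ?case
    using ih g zm ym by (simp add: Let_def)
qed

lemma meas_inner: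
  fixes gs :: "'c \<Rightarrow> 'a::euclidean_space \<Rightarrow> 'b \<Rightarrow> 'a"
  assumes gsm: "\<And>i. i \<in> C j \<Longrightarrow> (\<lambda>(x, s). gs i x s) \<in> borel_measurable (borel \<Otimes>\<^sub>M S)"
    and xbm: "xb \<in> borel_measurable \<Omega>" and ym: "(\<lambda>\<omega>. y \<omega> j) \<in> borel_measurable \<Omega>"
    and wm: "\<And>e' i h. e' < e \<Longrightarrow> i \<in> C j \<Longrightarrow> h < H \<Longrightarrow> (\<lambda>\<omega>. W \<omega> t e' i h) \<in> measurable \<Omega> S"
    and wm0: "\<And>i. i \<in> C j \<Longrightarrow> (\<lambda>\<omega>. W \<omega> t 0 i 0) \<in> measurable \<Omega> S"
  shows "(\<lambda>\<omega>. fst (mtgc_inner gs \<gamma> C H (W \<omega>) t (xb \<omega>) (y \<omega>) e) j) \<in> borel_measurable \<Omega> \<and>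
         (\<forall>i\<in>C j. (\<lambda>\<omega>. snd (mtgc_inner gs \<gamma> C H (W \<omega>) t (xb \<omega>) (y \<omega>) e) j i) \<in> borel_measurable \<Omega>)"
  using wm
proof (induction e)
  case 0
  have g: "(\<lambda>\<omega>. gs i (xb \<omega>) (W \<omega> t 0 i 0)) \<in> borel_measurable \<Omega>" if "i \<in> C j" for i
    by (rule meas_gs[OF gsm[OF that] xbm wm0[OF that]])
  have a: "(\<lambda>\<omega>. avg (C j) (\<lambda>i. gs i (xb \<omega>) (W \<omega> t 0 i 0))) \<in> borel_measurable \<Omega>"
    by (rule meas_avg) (rule g)
  show ?case using xbm g a by auto
next
  case (Suc e)
  have ih: "(\<lambda>\<omega>. fst (mtgc_inner gs \<gamma> C H (W \<omega>) t (xb \<omega>) (y \<omega>) e) j) \<in> borel_measurable \<Omega>"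
           "\<And>i. i \<in> C j \<Longrightarrow> (\<lambda>\<omega>. snd (mtgc_inner gs \<gamma> C H (W \<omega>) t (xb \<omega>) (y \<omega>) e) j i) \<in> borel_measurable \<Omega>"
    using Suc by auto
  have l: "(\<lambda>\<omega>. mtgc_loc gs \<gamma> (W \<omega>) t e i (snd (mtgc_inner gs \<gamma> C H (W \<omega>) t (xb \<omega>) (y \<omega>) e) j i) (y \<omega> j)
        (fst (mtgc_inner gs \<gamma> C H (W \<omega>) t (xb \<omega>) (y \<omega>) e) j) H) \<in> borel_measurable \<Omega>" if "i \<in> C j" for i
    by (rule meas_loc[where gs=gs and i=i and \<Omega>=\<Omega> and z="\<lambda>\<omega>. snd (mtgc_inner gs \<gamma> C H (W \<omega>) t (xb \<omega>) (y \<omega>) e) j i"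
          and y="\<lambda>\<omega>. y \<omega> j" and xz="\<lambda>\<omega>. fst (mtgc_inner gs \<gamma> C H (W \<omega>) t (xb \<omega>) (y \<omega>) e) j", OF gsm[OF that] ih(1) ih(2)[OF that] ym])
       (rule Suc.prems, auto simp: that)
  have f: "(\<lambda>\<omega>. fst (mtgc_inner gs \<gamma> C H (W \<omega>) t (xb \<omega>) (y \<omega>) (Suc e)) j) \<in> borel_measurable \<Omega>"
    unfolding inner_Suc_fst by (rule meas_avg) (rule l)
  show ?case
  proof (intro conjI ballI f)
    fix i assume i: "i \<in> C j"
    show "(\<lambda>\<omega>. snd (mtgc_inner gs \<gamma> C H (W \<omega>) t (xb \<omega>) (y \<omega>) (Suc e)) j i) \<in> borel_measurable \<Omega>"
      unfolding inner_Suc_snd using ih(2)[OF i] l[OF i] f by simp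
  qed
qed

lemma meas_round:
  fixes gs :: "'c \<Rightarrow> 'a::euclidean_space \<Rightarrow> 'b \<Rightarrow> 'a"
  assumes gsm: "\<And>i. i \<in> (\<Union>j<N. C j) \<Longrightarrow> (\<lambda>(x, s). gs i x s) \<in> borel_measurable (borel \<Otimes>\<^sub>M S)"
    and EH: "E \<ge> 1" "H \<ge> 1"
    and wm: "\<And>t' e i h. t' < t \<Longrightarrow> e < E \<Longrightarrow> h < H \<Longrightarrow> i \<in> (\<Union>j<N. C j) \<Longrightarrow> (\<lambda>\<omega>. W \<omega> t' e i h) \<in> measurable \<Omega> S"
    and wm0: "\<And>i. i \<in> (\<Union>j<N. C j) \<Longrightarrow> (\<lambda>\<omega>. W \<omega> 0 0 i 0) \<in> measurable \<Omega> S"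
  shows "(\<lambda>\<omega>. fst (mtgc_round gs \<gamma> C N E H x0 (W \<omega>) t)) \<in> borel_measurable \<Omega> \<and>
         (\<forall>j<N. (\<lambda>\<omega>. snd (mtgc_round gs \<gamma> C N E H x0 (W \<omega>) t) j) \<in> borel_measurable \<Omega>)"
  using wm
proof (induction t)
  case 0
  have g: "(\<lambda>\<omega>. avg (C j) (\<lambda>i. gs i x0 (W \<omega> 0 0 i 0))) \<in> borel_measurable \<Omega>" if "j < N" for j
    by (rule meas_avg, rule meas_gs[OF gsm borel_measurable_const wm0]) (use that in auto)
  show ?case using g by simp
next
  case (Suc t)
  have ih: "(\<lambda>\<omega>. fst (mtgc_round gs \<gamma> C N E H x0 (W \<omega>) t)) \<in> borel_measurable \<Omega>"
           "\<And>j. j < N \<Longrightarrow> (\<lambda>\<omega>. snd (mtgc_round gs \<gamma> C N E H x0 (W \<omega>) t) j) \<in> borel_measurable \<Omega>"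
    using Suc by auto
  have inn: "(\<lambda>\<omega>. fst (mtgc_inner gs \<gamma> C H (W \<omega>) t (fst (mtgc_round gs \<gamma> C N E H x0 (W \<omega>) t)) (snd (mtgc_round gs \<gamma> C N E H x0 (W \<omega>) t)) E) j) \<in> borel_measurable \<Omega>"
    if "j < N" for j
  proof -
    have jC: "i \<in> C j \<Longrightarrow> i \<in> (\<Union>j<N. C j)" for i using that by blast
    show ?thesis
    proof (rule meas_inner[where gs=gs and C=C and j=j and S=S and xb="\<lambda>\<omega>. fst (mtgc_round gs \<gamma> C N E H x0 (W \<omega>) t)"
        and y="\<lambda>\<omega>. snd (mtgc_round gs \<gamma> C N E H x0 (W \<omega>) t)" and \<Omega>=\<Omega> and e=E and H=H and W=W and t=t and \<gamma>=\<gamma>, THEN conjunct1])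
      show "\<And>i. i \<in> C j \<Longrightarrow> (\<lambda>(x, s). gs i x s) \<in> borel_measurable (borel \<Otimes>\<^sub>M S)" by (rule gsm[OF jC])
      show "(\<lambda>\<omega>. fst (mtgc_round gs \<gamma> C N E H x0 (W \<omega>) t)) \<in> borel_measurable \<Omega>" by (rule ih(1))
      show "(\<lambda>\<omega>. snd (mtgc_round gs \<gamma> C N E H x0 (W \<omega>) t) j) \<in> borel_measurable \<Omega>" by (rule ih(2)[OF that])
      show "\<And>e' i h. e' < E \<Longrightarrow> i \<in> C j \<Longrightarrow> h < H \<Longrightarrow> (\<lambda>\<omega>. W \<omega> t e' i h) \<in> measurable \<Omega> S"
        by (rule Suc.prems) (use that in auto)
      show "\<And>i. i \<in> C j \<Longrightarrow> (\<lambda>\<omega>. W \<omega> t 0 i 0) \<in> measurable \<Omega> S"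
        by (rule Suc.prems) (use EH that in auto)
    qed
  qed
  have f: "(\<lambda>\<omega>. fst (mtgc_round gs \<gamma> C N E H x0 (W \<omega>) (Suc t))) \<in> borel_measurable \<Omega>"
    unfolding round_Suc_fst by (intro borel_measurable_scaleR borel_measurable_const borel_measurable_sum inn) simp
  show ?case
  proof (intro conjI allI impI f)
    fix j assume j: "j < N"
    show "(\<lambda>\<omega>. snd (mtgc_round gs \<gamma> C N E H x0 (W \<omega>) (Suc t)) j) \<in> borel_measurable \<Omega>"
      unfolding round_Suc_snd
      by (intro borel_measurable_add borel_measurable_scaleR borel_measurable_const borel_measurable_diff ih(2)[OF j] inn[OF j] f)
  qed
qed

definition bef :: "nat \<Rightarrow> nat \<Rightarrow> 'c set \<Rightarrow> nat \<Rightarrow> nat \<Rightarrow> nat \<Rightarrow> nat \<Rightarrow> nat \<Rightarrow> 'c \<Rightarrow> nat \<Rightarrow> bool" where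
  "bef E H Cl t e h t' e' i h' \<longleftrightarrow> i \<in> Cl \<and> e' < E \<and> h' < H \<and> (t' < t \<or> (t' = t \<and> (e' < e \<or> (e' = e \<and> h' < h))))"

lemma meas_xbar:
  fixes gs :: "'c \<Rightarrow> 'a::euclidean_space \<Rightarrow> 'b \<Rightarrow> 'a"
  assumes gsm: "\<And>i. i \<in> (\<Union>j<N. C j) \<Longrightarrow> (\<lambda>(x, s). gs i x s) \<in> borel_measurable (borel \<Otimes>\<^sub>M S)"
    and EH: "E \<ge> 1" "H \<ge> 1"
    and wm: "\<And>t' e i h. t' < t \<Longrightarrow> e < E \<Longrightarrow> h < H \<Longrightarrow> i \<in> (\<Union>j<N. C j) \<Longrightarrow> (\<lambda>\<omega>. W \<omega> t' e i h) \<in> measurable \<Omega> S"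
  shows "(\<lambda>\<omega>. mtgc_xbar gs \<gamma> C N E H x0 (W \<omega>) t) \<in> borel_measurable \<Omega>"
proof (cases t)
  case 0 then show ?thesis unfolding mtgc_xbar_def by simp
next
  case (Suc t0)
  have "(\<lambda>\<omega>. fst (mtgc_round gs \<gamma> C N E H x0 (W \<omega>) t)) \<in> borel_measurable \<Omega> \<and>
         (\<forall>j<N. (\<lambda>\<omega>. snd (mtgc_round gs \<gamma> C N E H x0 (W \<omega>) t) j) \<in> borel_measurable \<Omega>)"
  proof (rule meas_round[OF gsm EH])
    show "\<And>t' e i h. t' < t \<Longrightarrow> e < E \<Longrightarrow> h < H \<Longrightarrow> i \<in> (\<Union>j<N. C j) \<Longrightarrow> (\<lambda>\<omega>. W \<omega> t' e i h) \<in> measurable \<Omega> S"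
      by (rule wm)
    show "\<And>i. i \<in> (\<Union>j<N. C j) \<Longrightarrow> (\<lambda>\<omega>. W \<omega> 0 0 i 0) \<in> measurable \<Omega> S"
      by (rule wm) (use Suc EH in auto)
  qed auto
  then have "(\<lambda>\<omega>. fst (mtgc_round gs \<gamma> C N E H x0 (W \<omega>) t)) \<in> borel_measurable \<Omega>" by blast
  then show ?thesis unfolding mtgc_xbar_def .
qed

lemma meas_round_bef:
  fixes gs :: "'c \<Rightarrow> 'a::euclidean_space \<Rightarrow> 'b \<Rightarrow> 'a"
  assumes gsm: "\<And>i. i \<in> (\<Union>j<N. C j) \<Longrightarrow> (\<lambda>(x, s). gs i x s) \<in> borel_measurable (borel \<Otimes>\<^sub>M S)"
    and EH: "E \<ge> 1" "H \<ge> 1"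
    and wm: "\<And>t' e' i h'. bef E H (\<Union>j<N. C j) t e h t' e' i h' \<Longrightarrow> (\<lambda>\<omega>. W \<omega> t' e' i h') \<in> measurable \<Omega> S"
    and nz: "e > 0 \<or> h > 0"
  shows "(\<lambda>\<omega>. fst (mtgc_round gs \<gamma> C N E H x0 (W \<omega>) t)) \<in> borel_measurable \<Omega> \<and>
         (\<forall>j<N. (\<lambda>\<omega>. snd (mtgc_round gs \<gamma> C N E H x0 (W \<omega>) t) j) \<in> borel_measurable \<Omega>)"
proof (rule meas_round[OF gsm EH])
  show "\<And>t' e i h. t' < t \<Longrightarrow> e < E \<Longrightarrow> h < H \<Longrightarrow> i \<in> (\<Union>j<N. C j) \<Longrightarrow> (\<lambda>\<omega>. W \<omega> t' e i h) \<in> measurable \<Omega> S"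
    by (rule wm) (auto simp: bef_def)
  show "\<And>i. i \<in> (\<Union>j<N. C j) \<Longrightarrow> (\<lambda>\<omega>. W \<omega> 0 0 i 0) \<in> measurable \<Omega> S"
    by (rule wm) (use EH nz in \<open>auto simp: bef_def\<close>)
qed auto

lemma meas_inner_bef:
  fixes gs :: "'c \<Rightarrow> 'a::euclidean_space \<Rightarrow> 'b \<Rightarrow> 'a"
  assumes gsm: "\<And>i. i \<in> (\<Union>j<N. C j) \<Longrightarrow> (\<lambda>(x, s). gs i x s) \<in> borel_measurable (borel \<Otimes>\<^sub>M S)"
    and EH: "E \<ge> 1" "H \<ge> 1" and j: "j < N" and eE: "e \<le> E"
    and wm: "\<And>t' e' i h'. bef E H (\<Union>j<N. C j) t e h t' e' i h' \<Longrightarrow> (\<lambda>\<omega>. W \<omega> t' e' i h') \<in> measurable \<Omega> S"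
    and nz: "e > 0 \<or> h > 0"
  shows "(\<lambda>\<omega>. mtgc_xbj gs \<gamma> C N E H x0 (W \<omega>) t e j) \<in> borel_measurable \<Omega> \<and>
         (\<forall>i\<in>C j. (\<lambda>\<omega>. mtgc_z gs \<gamma> C N E H x0 (W \<omega>) t e j i) \<in> borel_measurable \<Omega>)"
proof -
  have R: "(\<lambda>\<omega>. fst (mtgc_round gs \<gamma> C N E H x0 (W \<omega>) t)) \<in> borel_measurable \<Omega> \<and>
         (\<forall>j<N. (\<lambda>\<omega>. snd (mtgc_round gs \<gamma> C N E H x0 (W \<omega>) t) j) \<in> borel_measurable \<Omega>)"
    by (rule meas_round_bef[OF gsm EH wm nz])
  have jC: "i \<in> C j \<Longrightarrow> i \<in> (\<Union>j<N. C j)" for i using j by blast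
  have "(\<lambda>\<omega>. fst (mtgc_inner gs \<gamma> C H (W \<omega>) t (fst (mtgc_round gs \<gamma> C N E H x0 (W \<omega>) t)) (snd (mtgc_round gs \<gamma> C N E H x0 (W \<omega>) t)) e) j) \<in> borel_measurable \<Omega> \<and>
         (\<forall>i\<in>C j. (\<lambda>\<omega>. snd (mtgc_inner gs \<gamma> C H (W \<omega>) t (fst (mtgc_round gs \<gamma> C N E H x0 (W \<omega>) t)) (snd (mtgc_round gs \<gamma> C N E H x0 (W \<omega>) t)) e) j i) \<in> borel_measurable \<Omega>)"
  proof (rule meas_inner[where gs=gs and C=C and j=j and S=S and xb="\<lambda>\<omega>. fst (mtgc_round gs \<gamma> C N E H x0 (W \<omega>) t)"
        and y="\<lambda>\<omega>. snd (mtgc_round gs \<gamma> C N E H x0 (W \<omega>) t)" and \<Omega>=\<Omega> and e=e and H=H and W=W and t=t and \<gamma>=\<gamma>])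
    show "\<And>i. i \<in> C j \<Longrightarrow> (\<lambda>(x, s). gs i x s) \<in> borel_measurable (borel \<Otimes>\<^sub>M S)" by (rule gsm[OF jC])
    show "(\<lambda>\<omega>. fst (mtgc_round gs \<gamma> C N E H x0 (W \<omega>) t)) \<in> borel_measurable \<Omega>" using R by (rule conjunct1)
    show "(\<lambda>\<omega>. snd (mtgc_round gs \<gamma> C N E H x0 (W \<omega>) t) j) \<in> borel_measurable \<Omega>" using R[THEN conjunct2] j by simp
    show "(\<lambda>\<omega>. W \<omega> t e' i h') \<in> measurable \<Omega> S" if a: "e' < e" "i \<in> C j" "h' < H" for e' i h'
    proof (rule wm)
      have "i \<in> (\<Union>j<N. C j)" by (rule jC[OF a(2)])
      then show "bef E H (\<Union>j<N. C j) t e h t e' i h'" unfolding bef_def using a eE by simp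
    qed
    show "(\<lambda>\<omega>. W \<omega> t 0 i 0) \<in> measurable \<Omega> S" if a: "i \<in> C j" for i
    proof (rule wm)
      have "i \<in> (\<Union>j<N. C j)" by (rule jC[OF a])
      then show "bef E H (\<Union>j<N. C j) t e h t 0 i 0" unfolding bef_def using EH nz eE by auto
    qed
  qed
  then show ?thesis unfolding mtgc_xbj_def mtgc_z_def mtgc_xbar_def mtgc_y_def by simp
qed

lemma meas_xbj:
  fixes gs :: "'c \<Rightarrow> 'a::euclidean_space \<Rightarrow> 'b \<Rightarrow> 'a"
  assumes gsm: "\<And>i. i \<in> (\<Union>j<N. C j) \<Longrightarrow> (\<lambda>(x, s). gs i x s) \<in> borel_measurable (borel \<Otimes>\<^sub>M S)"
    and EH: "E \<ge> 1" "H \<ge> 1" and j: "j < N" and eE: "e \<le> E"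
    and wm: "\<And>t' e' i h'. bef E H (\<Union>j<N. C j) t e 0 t' e' i h' \<Longrightarrow> (\<lambda>\<omega>. W \<omega> t' e' i h') \<in> measurable \<Omega> S"
  shows "(\<lambda>\<omega>. mtgc_xbj gs \<gamma> C N E H x0 (W \<omega>) t e j) \<in> borel_measurable \<Omega>"
proof (cases "e = 0")
  case True
  have "(\<lambda>\<omega>. mtgc_xbar gs \<gamma> C N E H x0 (W \<omega>) t) \<in> borel_measurable \<Omega>"
  proof (rule meas_xbar[OF gsm EH])
    fix t' e' i h' assume a: "t' < t" "e' < E" "h' < H" "i \<in> (\<Union>j<N. C j)"
    show "(\<lambda>\<omega>. W \<omega> t' e' i h') \<in> measurable \<Omega> S" by (rule wm) (unfold bef_def, use a in simp)
  qed
  then show ?thesis using True unfolding mtgc_xbj_def mtgc_xbar_def by simp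
next
  case False
  then have nz: "e > 0 \<or> 0 > (0::nat)" by simp
  have "(\<lambda>\<omega>. mtgc_xbj gs \<gamma> C N E H x0 (W \<omega>) t e j) \<in> borel_measurable \<Omega> \<and>
         (\<forall>i\<in>C j. (\<lambda>\<omega>. mtgc_z gs \<gamma> C N E H x0 (W \<omega>) t e j i) \<in> borel_measurable \<Omega>)"
    by (rule meas_inner_bef[OF gsm EH j eE wm nz])
  then show ?thesis by (rule conjunct1)
qed

lemma meas_X:
  fixes gs :: "'c \<Rightarrow> 'a::euclidean_space \<Rightarrow> 'b \<Rightarrow> 'a"
  assumes gsm: "\<And>i. i \<in> (\<Union>j<N. C j) \<Longrightarrow> (\<lambda>(x, s). gs i x s) \<in> borel_measurable (borel \<Otimes>\<^sub>M S)"
    and EH: "E \<ge> 1" "H \<ge> 1" and j: "j < N" and i: "i \<in> C j" and eE: "e < E" and hH: "h \<le> H"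
    and wm: "\<And>t' e' i h'. bef E H (\<Union>j<N. C j) t e h t' e' i h' \<Longrightarrow> (\<lambda>\<omega>. W \<omega> t' e' i h') \<in> measurable \<Omega> S"
  shows "(\<lambda>\<omega>. mtgc_x gs \<gamma> C N E H x0 (W \<omega>) t e j i h) \<in> borel_measurable \<Omega>"
proof -
  have xb: "(\<lambda>\<omega>. mtgc_xbj gs \<gamma> C N E H x0 (W \<omega>) t e j) \<in> borel_measurable \<Omega>"
  proof (rule meas_xbj[OF gsm EH j less_imp_le[OF eE]])
    fix t' e' i h' assume a: "bef E H (\<Union>j<N. C j) t e 0 t' e' i h'"
    show "(\<lambda>\<omega>. W \<omega> t' e' i h') \<in> measurable \<Omega> S" by (rule wm) (use a in \<open>unfold bef_def, auto\<close>)
  qed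
  show ?thesis
  proof (cases "h = 0")
    case True then show ?thesis using xb unfolding mtgc_x_def by simp
  next
    case False
    then have nz: "e > 0 \<or> h > 0" by simp
    have jC: "i \<in> (\<Union>j<N. C j)" using i j by blast
    have "(\<lambda>\<omega>. mtgc_xbj gs \<gamma> C N E H x0 (W \<omega>) t e j) \<in> borel_measurable \<Omega> \<and>
         (\<forall>i\<in>C j. (\<lambda>\<omega>. mtgc_z gs \<gamma> C N E H x0 (W \<omega>) t e j i) \<in> borel_measurable \<Omega>)"
      by (rule meas_inner_bef[OF gsm EH j less_imp_le[OF eE] wm nz])
    then have z: "(\<lambda>\<omega>. mtgc_z gs \<gamma> C N E H x0 (W \<omega>) t e j i) \<in> borel_measurable \<Omega>"
      using i by blast
    have "(\<lambda>\<omega>. fst (mtgc_round gs \<gamma> C N E H x0 (W \<omega>) t)) \<in> borel_measurable \<Omega> \<and>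
         (\<forall>j<N. (\<lambda>\<omega>. snd (mtgc_round gs \<gamma> C N E H x0 (W \<omega>) t) j) \<in> borel_measurable \<Omega>)"
      by (rule meas_round_bef[OF gsm EH wm nz])
    then have y: "(\<lambda>\<omega>. mtgc_y gs \<gamma> C N E H x0 (W \<omega>) t j) \<in> borel_measurable \<Omega>"
      using j unfolding mtgc_y_def by simp
    show ?thesis unfolding mtgc_x_def
    proof (rule meas_loc[where gs=gs and i=i and \<Omega>=\<Omega> and z="\<lambda>\<omega>. mtgc_z gs \<gamma> C N E H x0 (W \<omega>) t e j i"
          and y="\<lambda>\<omega>. mtgc_y gs \<gamma> C N E H x0 (W \<omega>) t j" and xz="\<lambda>\<omega>. mtgc_xbj gs \<gamma> C N E H x0 (W \<omega>) t e j", OF gsm[OF jC] xb z y])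
      fix h' assume "h' < h"
      then show "(\<lambda>\<omega>. W \<omega> t e i h') \<in> measurable \<Omega> S" by (intro wm) (unfold bef_def, use jC eE hH in simp)
    qed
  qed
qed

lemma L2_orth:
  fixes f :: "'k \<Rightarrow> 'm \<Rightarrow> 'a::euclidean_space" and \<alpha> :: "'k \<Rightarrow> real"
  assumes T: "finite T"
    and fm: "\<And>\<tau>. \<tau> \<in> T \<Longrightarrow> f \<tau> \<in> borel_measurable M"
    and fi: "\<And>\<tau>. \<tau> \<in> T \<Longrightarrow> integrable M (\<lambda>\<omega>. (norm (f \<tau> \<omega>))\<^sup>2)"
    and orth: "\<And>\<tau>1 \<tau>2. \<tau>1 \<in> T \<Longrightarrow> \<tau>2 \<in> T \<Longrightarrow> \<tau>1 \<noteq> \<tau>2 \<Longrightarrow> (\<integral>\<omega>. inner (f \<tau>1 \<omega>) (f \<tau>2 \<omega>) \<partial>M) = 0"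
  shows "integrable M (\<lambda>\<omega>. (norm (\<Sum>\<tau>\<in>T. \<alpha> \<tau> *\<^sub>R f \<tau> \<omega>))\<^sup>2)"
    and "(\<integral>\<omega>. (norm (\<Sum>\<tau>\<in>T. \<alpha> \<tau> *\<^sub>R f \<tau> \<omega>))\<^sup>2 \<partial>M) = (\<Sum>\<tau>\<in>T. (\<alpha> \<tau>)\<^sup>2 * (\<integral>\<omega>. (norm (f \<tau> \<omega>))\<^sup>2 \<partial>M))"
proof -
  have ii: "integrable M (\<lambda>\<omega>. inner (f \<tau>1 \<omega>) (f \<tau>2 \<omega>))" if "\<tau>1 \<in> T" "\<tau>2 \<in> T" for \<tau>1 \<tau>2
  proof (rule Bochner_Integration.integrable_bound)
    show "integrable M (\<lambda>\<omega>. (norm (f \<tau>1 \<omega>))\<^sup>2 + (norm (f \<tau>2 \<omega>))\<^sup>2)"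
      using fi that by auto
    show "(\<lambda>\<omega>. inner (f \<tau>1 \<omega>) (f \<tau>2 \<omega>)) \<in> borel_measurable M"
      using fm that by (intro borel_measurable_inner) auto
    show "AE \<omega> in M. norm (inner (f \<tau>1 \<omega>) (f \<tau>2 \<omega>)) \<le> norm ((norm (f \<tau>1 \<omega>))\<^sup>2 + (norm (f \<tau>2 \<omega>))\<^sup>2)"
      using abs_inner_le_sq by auto
  qed
  have expand: "(norm (\<Sum>\<tau>\<in>T. \<alpha> \<tau> *\<^sub>R f \<tau> \<omega>))\<^sup>2 = (\<Sum>\<tau>1\<in>T. \<Sum>\<tau>2\<in>T. (\<alpha> \<tau>1 * \<alpha> \<tau>2) * inner (f \<tau>2 \<omega>) (f \<tau>1 \<omega>))" for \<omega>
    unfolding power2_norm_eq_inner inner_sum_left inner_sum_right by (simp add: algebra_simps)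
  have int2: "integrable M (\<lambda>\<omega>. \<Sum>\<tau>1\<in>T. \<Sum>\<tau>2\<in>T. (\<alpha> \<tau>1 * \<alpha> \<tau>2) * inner (f \<tau>2 \<omega>) (f \<tau>1 \<omega>))"
    using ii by (intro Bochner_Integration.integrable_sum integrable_mult_right) auto
  show "integrable M (\<lambda>\<omega>. (norm (\<Sum>\<tau>\<in>T. \<alpha> \<tau> *\<^sub>R f \<tau> \<omega>))\<^sup>2)"
    unfolding expand by (rule int2)
  have "(\<integral>\<omega>. (norm (\<Sum>\<tau>\<in>T. \<alpha> \<tau> *\<^sub>R f \<tau> \<omega>))\<^sup>2 \<partial>M) = (\<integral>\<omega>. (\<Sum>\<tau>1\<in>T. \<Sum>\<tau>2\<in>T. (\<alpha> \<tau>1 * \<alpha> \<tau>2) * inner (f \<tau>2 \<omega>) (f \<tau>1 \<omega>)) \<partial>M)"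
    unfolding expand ..
  also have "\<dots> = (\<Sum>\<tau>1\<in>T. \<Sum>\<tau>2\<in>T. (\<alpha> \<tau>1 * \<alpha> \<tau>2) * (\<integral>\<omega>. inner (f \<tau>2 \<omega>) (f \<tau>1 \<omega>) \<partial>M))"
    using ii by (simp add: Bochner_Integration.integral_sum integrable_mult_right Bochner_Integration.integrable_sum)
  also have "\<dots> = (\<Sum>\<tau>1\<in>T. \<Sum>\<tau>2\<in>T. if \<tau>2 = \<tau>1 then (\<alpha> \<tau>1)\<^sup>2 * (\<integral>\<omega>. (norm (f \<tau>1 \<omega>))\<^sup>2 \<partial>M) else 0)"
    by (intro sum.cong refl) (auto simp: orth power2_eq_square dot_square_norm)
  also have "\<dots> = (\<Sum>\<tau>\<in>T. (\<alpha> \<tau>)\<^sup>2 * (\<integral>\<omega>. (norm (f \<tau> \<omega>))\<^sup>2 \<partial>M))"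
    using T by simp
  finally show "(\<integral>\<omega>. (norm (\<Sum>\<tau>\<in>T. \<alpha> \<tau> *\<^sub>R f \<tau> \<omega>))\<^sup>2 \<partial>M) = (\<Sum>\<tau>\<in>T. (\<alpha> \<tau>)\<^sup>2 * (\<integral>\<omega>. (norm (f \<tau> \<omega>))\<^sup>2 \<partial>M))" .
qed

locale mtgc_ctx =
  fixes M :: "'m measure" and S :: "'b measure" and D :: "'c \<Rightarrow> 'b measure" and C :: "nat \<Rightarrow> 'c set"
    and N E H :: nat and gs :: "'c \<Rightarrow> 'a::euclidean_space \<Rightarrow> 'b \<Rightarrow> 'a" and gF :: "'c \<Rightarrow> 'a \<Rightarrow> 'a"
    and L \<sigma> \<gamma> :: real and x0 :: 'a and \<xi> :: "nat \<Rightarrow> nat \<Rightarrow> 'c \<Rightarrow> nat \<Rightarrow> 'm \<Rightarrow> 'b" and t :: nat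
  assumes prob: "prob_space M"
    and N_pos: "N \<ge> 1"
    and C_fin: "\<And>j. j < N \<Longrightarrow> finite (C j)"
    and C_ne: "\<And>j. j < N \<Longrightarrow> C j \<noteq> {}"
    and C_disj: "\<And>j j'. j < N \<Longrightarrow> j' < N \<Longrightarrow> j \<noteq> j' \<Longrightarrow> C j \<inter> C j' = {}"
    and E_pos: "E \<ge> 1" and H_pos: "H \<ge> 1"
    and \<gamma>_pos: "\<gamma> > 0"
    and \<gamma>_le: "\<gamma> \<le> 1 / (10 * real E * real H * L)"
    and D_sets: "\<And>i. i \<in> (\<Union>j<N. C j) \<Longrightarrow> sets (D i) = sets S"
    and D_prob: "\<And>i. i \<in> (\<Union>j<N. C j) \<Longrightarrow> prob_space (D i)"
    and gs_meas: "\<And>i. i \<in> (\<Union>j<N. C j) \<Longrightarrow> (\<lambda>(x, s). gs i x s) \<in> borel_measurable (borel \<Otimes>\<^sub>M S)"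
    and A1: "\<And>i x y. i \<in> (\<Union>j<N. C j) \<Longrightarrow> norm (gF i x - gF i y) \<le> L * norm (x - y)"
    and A2_unb: "\<And>i x. i \<in> (\<Union>j<N. C j) \<Longrightarrow> integrable (D i) (gs i x) \<and> (\<integral>s. gs i x s \<partial>D i) = gF i x"
    and A2_var: "\<And>i x. i \<in> (\<Union>j<N. C j) \<Longrightarrow>
                   (\<integral>\<^sup>+ s. ennreal ((norm (gs i x s - gF i x))\<^sup>2) \<partial>D i) \<le> ennreal (\<sigma>\<^sup>2)"
    and \<xi>_indep: "prob_space.indep_vars M (\<lambda>_. S) (\<lambda>(t', e, i, h). \<xi> t' e i h) {(t', e, i, h). e < E \<and> h < H \<and> i \<in> (\<Union>j<N. C j)}"
    and \<xi>_distr: "\<And>t' e i h. (t', e, i, h) \<in> {(t', e, i, h). e < E \<and> h < H \<and> i \<in> (\<Union>j<N. C j)} \<Longrightarrow> distr M S (\<xi> t' e i h) = D i"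
begin

abbreviation "II \<equiv> {(t', e, i, h). e < E \<and> h < H \<and> i \<in> (\<Union>j<N. C j)}"
abbreviation "Xf \<equiv> (\<lambda>(t', e, i, h). \<xi> t' e i h)"
abbreviation "w \<equiv> (\<lambda>\<omega> t' e i h. \<xi> t' e i h \<omega>)"

sublocale P: prob_space M by (rule prob)

lemma L_pos: "L > 0"
proof (rule ccontr)
  assume "\<not> L > 0"
  then have "10 * real E * real H * L \<le> 0" using E_pos H_pos by (simp add: mult_nonneg_nonpos)
  then have "1 / (10 * real E * real H * L) \<le> 0" by (simp add: divide_nonpos_nonneg)
  then show False using \<gamma>_le \<gamma>_pos by linarith
qed

lemma xi_meas: "e < E \<Longrightarrow> h < H \<Longrightarrow> i \<in> (\<Union>j<N. C j) \<Longrightarrow> \<xi> t' e i h \<in> measurable M S"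
  using \<xi>_indep unfolding P.indep_vars_def by auto

lemma gF_meas: "i \<in> (\<Union>j<N. C j) \<Longrightarrow> gF i \<in> borel_measurable borel"
proof -
  assume i: "i \<in> (\<Union>j<N. C j)"
  have "L-lipschitz_on UNIV (gF i)"
    by (rule lipschitz_onI) (use A1[OF i] L_pos in \<open>auto simp: dist_norm\<close>)
  then have "continuous_on UNIV (gF i)" by (rule lipschitz_on_continuous_on)
  then show ?thesis by (rule borel_measurable_continuous_onI)
qed

lemma gsm': "i \<in> (\<Union>j<N. C j) \<Longrightarrow> (\<lambda>(x, s). gs i x s) \<in> borel_measurable (borel \<Otimes>\<^sub>M S)"
  by (rule gs_meas)

lemma Xf_simp: "Xf (t', e, i, h) = \<xi> t' e i h" by simp

lemma sig_coord:
  assumes "P \<subseteq> II" "(t', e, i, h) \<in> P"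
  shows "(\<lambda>\<omega>. w \<omega> t' e i h) \<in> measurable (sigP M S Xf P) S"
proof -
  have "(t', e, i, h) \<in> II" using assms by blast
  then have "\<xi> t' e i h \<in> measurable M S" by (intro xi_meas) auto
  then have "Xf (t', e, i, h) \<in> measurable M S" by simp
  then have "Xf (t', e, i, h) \<in> measurable (sigP M S Xf P) S"
    by (rule sigP_coord[OF assms(2)])
  then show ?thesis by simp
qed

lemma bef_II: "bef E H (\<Union>j<N. C j) t e h t' e' i h' \<Longrightarrow> (t', e', i, h') \<in> II"
  unfolding bef_def by auto

lemma X_meas_gen:
  assumes j: "j < N" and i: "i \<in> C j" and e: "e < E" and h: "h < H"
    and cm: "\<And>t' e' i h'. bef E H (\<Union>j<N. C j) t e h t' e' i h' \<Longrightarrow> (\<lambda>\<omega>. w \<omega> t' e' i h') \<in> measurable \<Omega> S"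
  shows "(\<lambda>\<omega>. mtgc_x gs \<gamma> C N E H x0 (w \<omega>) t e j i h) \<in> borel_measurable \<Omega>"
  by (rule meas_X[where W=w and \<Omega>=\<Omega> and gs=gs and \<gamma>=\<gamma> and C=C and N=N and E=E and H=H and t=t and S=S,
        OF gsm' E_pos H_pos j i e less_imp_le[OF h] cm])

lemma X_meas: "j < N \<Longrightarrow> i \<in> C j \<Longrightarrow> e < E \<Longrightarrow> h < H \<Longrightarrow>
    (\<lambda>\<omega>. mtgc_x gs \<gamma> C N E H x0 (w \<omega>) t e j i h) \<in> borel_measurable M"
  by (rule X_meas_gen) (auto simp: bef_def intro: xi_meas)

lemma xbj_meas: "j < N \<Longrightarrow> e \<le> E \<Longrightarrow> (\<lambda>\<omega>. mtgc_xbj gs \<gamma> C N E H x0 (w \<omega>) t e j) \<in> borel_measurable M"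
  by (rule meas_xbj[OF gsm' E_pos H_pos]) (auto simp: bef_def intro: xi_meas)

lemma y_meas: "j < N \<Longrightarrow> (\<lambda>\<omega>. mtgc_y gs \<gamma> C N E H x0 (w \<omega>) t j) \<in> borel_measurable M"
proof -
  assume j: "j < N"
  have "(\<lambda>\<omega>. fst (mtgc_round gs \<gamma> C N E H x0 (w \<omega>) t)) \<in> borel_measurable M \<and>
         (\<forall>j<N. (\<lambda>\<omega>. snd (mtgc_round gs \<gamma> C N E H x0 (w \<omega>) t) j) \<in> borel_measurable M)"
    by (rule meas_round[OF gsm' E_pos H_pos]) (use E_pos H_pos in \<open>auto intro: xi_meas\<close>)
  then show ?thesis using j unfolding mtgc_y_def by simp
qed

lemma xhat_meas: "e \<le> E \<Longrightarrow> (\<lambda>\<omega>. mtgc_xhat gs \<gamma> C N E H x0 (w \<omega>) t e) \<in> borel_measurable M"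
  unfolding mtgc_xhat_def using xbj_meas by (intro borel_measurable_scaleR borel_measurable_const borel_measurable_sum) auto

end

context mtgc_ctx
begin

abbreviation "ep e h j i \<omega> \<equiv> epsv gs gF \<gamma> C N E H x0 t (w \<omega>) e h j i"

lemma ep_eq: "ep e h j i \<omega> = gs i (mtgc_x gs \<gamma> C N E H x0 (w \<omega>) t e j i h) (\<xi> t e i h \<omega>) - gF i (mtgc_x gs \<gamma> C N E H x0 (w \<omega>) t e j i h)"
  unfolding epsv_def Xv_def by simp

lemma ep_meas_gen:
  assumes j: "j < N" and i: "i \<in> C j" and e: "e < E" and h: "h < H"
    and cm: "\<And>t' e' i h'. bef E H (\<Union>j<N. C j) t e h t' e' i h' \<Longrightarrow> (\<lambda>\<omega>. w \<omega> t' e' i h') \<in> measurable \<Omega> S"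
    and cm0: "(\<lambda>\<omega>. w \<omega> t e i h) \<in> measurable \<Omega> S"
  shows "ep e h j i \<in> borel_measurable \<Omega>"
proof -
  have iC: "i \<in> (\<Union>j<N. C j)" using i j by blast
  have X: "(\<lambda>\<omega>. mtgc_x gs \<gamma> C N E H x0 (w \<omega>) t e j i h) \<in> borel_measurable \<Omega>"
    by (rule X_meas_gen[OF j i e h cm])
  have g: "(\<lambda>\<omega>. gs i (mtgc_x gs \<gamma> C N E H x0 (w \<omega>) t e j i h) (\<xi> t e i h \<omega>)) \<in> borel_measurable \<Omega>"
    using meas_gs[OF gsm'[OF iC] X cm0] by simp
  have f: "(\<lambda>\<omega>. gF i (mtgc_x gs \<gamma> C N E H x0 (w \<omega>) t e j i h)) \<in> borel_measurable \<Omega>"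
    by (rule measurable_compose[OF X gF_meas[OF iC]])
  show ?thesis unfolding ep_eq by (rule borel_measurable_diff[OF g f])
qed

lemma ep_meas: "j < N \<Longrightarrow> i \<in> C j \<Longrightarrow> e < E \<Longrightarrow> h < H \<Longrightarrow> ep e h j i \<in> borel_measurable M"
  by (rule ep_meas_gen) (auto simp: bef_def intro: xi_meas)

lemma ep_var:
  assumes j: "j < N" and i: "i \<in> C j" and e: "e < E" and h: "h < H"
  shows "(\<integral>\<^sup>+ \<omega>. ennreal ((norm (ep e h j i \<omega>))\<^sup>2) \<partial>M) \<le> ennreal (\<sigma>\<^sup>2)"
proof -
  have iC: "i \<in> (\<Union>j<N. C j)" using i j by blast
  define P where "P = II - {(t, e, i, h)}"
  have PI: "P \<subseteq> II" unfolding P_def by blast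
  have kI: "(t, e, i, h) \<in> II" using iC e h by auto
  have kP: "(t, e, i, h) \<notin> P" unfolding P_def by blast
  define Z where "Z \<omega> = mtgc_x gs \<gamma> C N E H x0 (w \<omega>) t e j i h" for \<omega>
  have Zm: "Z \<in> borel_measurable (sigP M S Xf P)"
    unfolding Z_def
  proof (rule X_meas_gen[OF j i e h])
    fix t' e' i' h' assume b: "bef E H (\<Union>j<N. C j) t e h t' e' i' h'"
    have "(t', e', i', h') \<in> P" unfolding P_def using bef_II[OF b] b by (auto simp: bef_def)
    then show "(\<lambda>\<omega>. w \<omega> t' e' i' h') \<in> measurable (sigP M S Xf P) S" by (rule sig_coord[OF PI])
  qed
  have ind: "P.random_variable borel Z \<and> P.random_variable S (Xf (t, e, i, h)) \<and>
    distr M borel Z \<Otimes>\<^sub>M distr M S (Xf (t, e, i, h)) = distr M (borel \<Otimes>\<^sub>M S) (\<lambda>x. (Z x, Xf (t, e, i, h) x))"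
    by (rule P.indep_from_sigP[OF \<xi>_indep PI kI kP Zm])
  have ind': "P.random_variable borel Z \<and> P.random_variable S (\<xi> t e i h) \<and>
    distr M borel Z \<Otimes>\<^sub>M distr M S (\<xi> t e i h) = distr M (borel \<Otimes>\<^sub>M S) (\<lambda>x. (Z x, \<xi> t e i h x))"
    using ind by simp
  have "(\<integral>\<^sup>+ \<omega>. ennreal ((norm (gs i (id (Z \<omega>)) (\<xi> t e i h \<omega>) - gF i (id (Z \<omega>))))\<^sup>2) \<partial>M) \<le> ennreal (\<sigma>\<^sup>2)"
    by (rule P.core1[OF ind' \<xi>_distr[OF kI] _ gsm'[OF iC] gF_meas[OF iC] A2_var[OF iC]]) simp
  then show ?thesis unfolding ep_eq Z_def by simp
qed

lemma ep_L2: "j < N \<Longrightarrow> i \<in> C j \<Longrightarrow> e < E \<Longrightarrow> h < H \<Longrightarrow> integrable M (\<lambda>\<omega>. (norm (ep e h j i \<omega>))\<^sup>2)"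
proof -
  assume a: "j < N" "i \<in> C j" "e < E" "h < H"
  have m: "(\<lambda>\<omega>. (norm (ep e h j i \<omega>))\<^sup>2) \<in> borel_measurable M"
    using ep_meas[OF a] by measurable
  have "(\<integral>\<^sup>+ \<omega>. ennreal ((norm (ep e h j i \<omega>))\<^sup>2) \<partial>M) < \<infinity>"
    using ep_var[OF a] by (rule le_less_trans) simp
  then show ?thesis using m by (intro integrableI_nonneg) auto
qed

lemma ep_orth_ord:
  assumes j1: "j1 < N" and i1: "i1 \<in> C j1" and e1: "e1 < E" and h1: "h1 < H"
    and j2: "j2 < N" and i2: "i2 \<in> C j2" and e2: "e2 < E" and h2: "h2 < H"
    and ord: "e1 < e2 \<or> (e1 = e2 \<and> h1 \<le> h2)"
    and ne: "(e1, h1, j1, i1) \<noteq> (e2, h2, j2, i2)"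
  shows "(\<integral>\<omega>. inner (ep e1 h1 j1 i1 \<omega>) (ep e2 h2 j2 i2 \<omega>) \<partial>M) = 0"
proof -
  have iC1: "i1 \<in> (\<Union>j<N. C j)" using i1 j1 by blast
  have iC2: "i2 \<in> (\<Union>j<N. C j)" using i2 j2 by blast
  have kne: "(t, e1, i1, h1) \<noteq> (t, e2, i2, h2)"
  proof
    assume "(t, e1, i1, h1) = (t, e2, i2, h2)"
    then have eq: "e1 = e2" "i1 = i2" "h1 = h2" by auto
    have "j1 = j2"
    proof (rule ccontr)
      assume "j1 \<noteq> j2"
      then have "C j1 \<inter> C j2 = {}" by (rule C_disj[OF j1 j2])
      then show False using i1 i2 eq(2) by blast
    qed
    then show False using ne eq by simp
  qed
  define P where "P = II - {(t, e2, i2, h2)}"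
  have PI: "P \<subseteq> II" unfolding P_def by blast
  have kI: "(t, e2, i2, h2) \<in> II" using iC2 e2 h2 by auto
  have kP: "(t, e2, i2, h2) \<notin> P" unfolding P_def by blast
  have cm1: "(\<lambda>\<omega>. w \<omega> t' e' i' h') \<in> measurable (sigP M S Xf P) S"
    if b: "bef E H (\<Union>j<N. C j) t e1 h1 t' e' i' h'" for t' e' i' h'
  proof (rule sig_coord[OF PI])
    show "(t', e', i', h') \<in> P" unfolding P_def using bef_II[OF b] b ord by (auto simp: bef_def)
  qed
  have cm2: "(\<lambda>\<omega>. w \<omega> t' e' i' h') \<in> measurable (sigP M S Xf P) S"
    if b: "bef E H (\<Union>j<N. C j) t e2 h2 t' e' i' h'" for t' e' i' h'
  proof (rule sig_coord[OF PI])
    show "(t', e', i', h') \<in> P" unfolding P_def using bef_II[OF b] b by (auto simp: bef_def)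
  qed
  have cm0: "(\<lambda>\<omega>. w \<omega> t e1 i1 h1) \<in> measurable (sigP M S Xf P) S"
    by (rule sig_coord[OF PI]) (use kne iC1 e1 h1 in \<open>auto simp: P_def\<close>)
  have U: "ep e1 h1 j1 i1 \<in> borel_measurable (sigP M S Xf P)"
    by (rule ep_meas_gen[OF j1 i1 e1 h1 cm1 cm0])
  define X2 where "X2 \<omega> = mtgc_x gs \<gamma> C N E H x0 (w \<omega>) t e2 j2 i2 h2" for \<omega>
  have X2m: "X2 \<in> borel_measurable (sigP M S Xf P)"
    unfolding X2_def by (rule X_meas_gen[OF j2 i2 e2 h2 cm2])
  define Z where "Z \<omega> = (ep e1 h1 j1 i1 \<omega>, X2 \<omega>)" for \<omega>
  have Zm: "Z \<in> measurable (sigP M S Xf P) (borel \<Otimes>\<^sub>M borel)"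
    unfolding Z_def by (rule measurable_Pair[OF U X2m])
  have ind: "P.random_variable (borel \<Otimes>\<^sub>M borel) Z \<and> P.random_variable S (Xf (t, e2, i2, h2)) \<and>
    distr M (borel \<Otimes>\<^sub>M borel) Z \<Otimes>\<^sub>M distr M S (Xf (t, e2, i2, h2)) = distr M ((borel \<Otimes>\<^sub>M borel) \<Otimes>\<^sub>M S) (\<lambda>x. (Z x, Xf (t, e2, i2, h2) x))"
    by (rule P.indep_from_sigP[OF \<xi>_indep PI kI kP Zm])
  have ind': "P.random_variable (borel \<Otimes>\<^sub>M borel) Z \<and> P.random_variable S (\<xi> t e2 i2 h2) \<and>
    distr M (borel \<Otimes>\<^sub>M borel) Z \<Otimes>\<^sub>M distr M S (\<xi> t e2 i2 h2) = distr M ((borel \<Otimes>\<^sub>M borel) \<Otimes>\<^sub>M S) (\<lambda>x. (Z x, \<xi> t e2 i2 h2 x))"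
    using ind by simp
  have uL2: "(\<integral>\<^sup>+ \<omega>. ennreal ((norm (fst (Z \<omega>)))\<^sup>2) \<partial>M) < \<infinity>"
    unfolding Z_def fst_conv using ep_var[OF j1 i1 e1 h1] by (rule le_less_trans) simp
  have "(\<integral>\<omega>. inner (fst (Z \<omega>)) (gs i2 (snd (Z \<omega>)) (\<xi> t e2 i2 h2 \<omega>) - gF i2 (snd (Z \<omega>))) \<partial>M) = 0"
    by (rule P.core2(2)[OF ind' \<xi>_distr[OF kI] measurable_snd measurable_fst gsm'[OF iC2] gF_meas[OF iC2]
          A2_var[OF iC2] A2_unb[OF iC2] uL2])
  then show ?thesis unfolding Z_def X2_def ep_eq by simp
qed

lemma ep_orth:
  assumes j1: "j1 < N" and i1: "i1 \<in> C j1" and e1: "e1 < E" and h1: "h1 < H"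
    and j2: "j2 < N" and i2: "i2 \<in> C j2" and e2: "e2 < E" and h2: "h2 < H"
    and ne: "(e1, h1, j1, i1) \<noteq> (e2, h2, j2, i2)"
  shows "(\<integral>\<omega>. inner (ep e1 h1 j1 i1 \<omega>) (ep e2 h2 j2 i2 \<omega>) \<partial>M) = 0"
proof (cases "e1 < e2 \<or> (e1 = e2 \<and> h1 \<le> h2)")
  case True
  then show ?thesis by (rule ep_orth_ord[OF j1 i1 e1 h1 j2 i2 e2 h2 _ ne])
next
  case False
  then have ord: "e2 < e1 \<or> (e2 = e1 \<and> h2 \<le> h1)" by auto
  have "(\<integral>\<omega>. inner (ep e2 h2 j2 i2 \<omega>) (ep e1 h1 j1 i1 \<omega>) \<partial>M) = 0"
    by (rule ep_orth_ord[OF j2 i2 e2 h2 j1 i1 e1 h1 ord]) (use ne in auto)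
  then show ?thesis by (simp add: inner_commute)
qed

end

lemma delta_sq_sum:
  assumes "j0 < N"
  shows "(\<Sum>j<N. ((if j0 = j then 1 else 0) - 1 / real N)\<^sup>2) = (real N - 1) / real N"
proof -
  have N0: "real N > 0" using assms by simp
  have "(\<Sum>j<N. ((if j0 = j then 1 else 0) - 1 / real N)\<^sup>2) =
        (1 - 1 / real N)\<^sup>2 + (\<Sum>j\<in>{..<N} - {j0}. ((if j0 = j then 1 else 0) - 1 / real N)\<^sup>2)"
    using assms by (subst sum.remove[of _ j0]) auto
  also have "(\<Sum>j\<in>{..<N} - {j0}. ((if j0 = j then 1 else 0) - 1 / real N)\<^sup>2) = (\<Sum>j\<in>{..<N} - {j0}. (1 / real N)\<^sup>2)"
    by (intro sum.cong) auto
  also have "\<dots> = (real N - 1) * (1 / real N)\<^sup>2" using assms by (simp add: card_Diff_subset)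
  also have "(1 - 1 / real N)\<^sup>2 + (real N - 1) * (1 / real N)\<^sup>2 = (real N - 1) / real N"
    using N0 by (simp add: field_simps power2_eq_square)
  finally show ?thesis .
qed

context mtgc_ctx
begin

lemma nf_rep:
  assumes j: "j < N"
  shows "(\<Sum>k\<in>{..<e} \<times> {..<H}. nuv gs gF \<gamma> C N E H x0 t (w \<omega>) k j - (1 / real N) *\<^sub>R (\<Sum>j'<N. nuv gs gF \<gamma> C N E H x0 t (w \<omega>) k j'))
    = (\<Sum>\<tau>\<in>({..<e} \<times> {..<H}) \<times> (SIGMA j0:{..<N}. C j0).
         (((if fst (snd \<tau>) = j then 1 else 0) - 1 / real N) / real (card (C (fst (snd \<tau>))))) *\<^sub>R
         ep (fst (fst \<tau>)) (snd (fst \<tau>)) (fst (snd \<tau>)) (snd (snd \<tau>)) \<omega>)"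
proof -
  have inner: "nuv gs gF \<gamma> C N E H x0 t (w \<omega>) k j - (1 / real N) *\<^sub>R (\<Sum>j'<N. nuv gs gF \<gamma> C N E H x0 t (w \<omega>) k j')
    = (\<Sum>p\<in>(SIGMA j0:{..<N}. C j0). (((if fst p = j then 1 else 0) - 1 / real N) / real (card (C (fst p)))) *\<^sub>R
         ep (fst k) (snd k) (fst p) (snd p) \<omega>)" for k
  proof -
    define v where "v j0 = nuv gs gF \<gamma> C N E H x0 t (w \<omega>) k j0" for j0
    have v: "v j0 = (\<Sum>i\<in>C j0. (1 / real (card (C j0))) *\<^sub>R ep (fst k) (snd k) j0 i \<omega>)" for j0
      unfolding v_def nuv_def avg_def by (simp add: scaleR_right.sum)
    have "(\<Sum>p\<in>(SIGMA j0:{..<N}. C j0). (((if fst p = j then 1 else 0) - 1 / real N) / real (card (C (fst p)))) *\<^sub>R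
         ep (fst k) (snd k) (fst p) (snd p) \<omega>)
       = (\<Sum>j0<N. \<Sum>i\<in>C j0. (((if j0 = j then 1 else 0) - 1 / real N) / real (card (C j0))) *\<^sub>R ep (fst k) (snd k) j0 i \<omega>)"
    proof -
      have "(\<Sum>j0<N. \<Sum>i\<in>C j0. (((if j0 = j then 1 else 0) - 1 / real N) / real (card (C j0))) *\<^sub>R ep (fst k) (snd k) j0 i \<omega>)
        = (\<Sum>(j0, i)\<in>(SIGMA j0:{..<N}. C j0). (((if j0 = j then 1 else 0) - 1 / real N) / real (card (C j0))) *\<^sub>R ep (fst k) (snd k) j0 i \<omega>)"
        by (rule sum.Sigma) (auto simp: C_fin)
      then show ?thesis by (simp add: split_beta')
    qed
    also have "\<dots> = (\<Sum>j0<N. ((if j0 = j then 1 else 0) - 1 / real N) *\<^sub>R v j0)"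
      unfolding v by (simp add: scaleR_right.sum divide_inverse)
    also have "\<dots> = (\<Sum>j0<N. (if j0 = j then v j0 else 0) - (1 / real N) *\<^sub>R v j0)"
      by (rule sum.cong) (auto simp: scaleR_diff_left)
    also have "\<dots> = (\<Sum>j0<N. (if j0 = j then v j0 else 0)) - (1 / real N) *\<^sub>R (\<Sum>j0<N. v j0)"
      by (simp only: sum_subtractf scaleR_right.sum)
    also have "\<dots> = v j - (1 / real N) *\<^sub>R (\<Sum>j0<N. v j0)"
      using j by (simp add: sum.delta)
    finally show ?thesis unfolding v_def by simp
  qed
  show ?thesis unfolding inner
    by (simp add: sum.cartesian_product split_beta')
qed

lemma noise_bound:
  assumes eE: "e \<le> E"
  shows "integrable M (\<lambda>\<omega>. nf gs gF \<gamma> C N E H x0 t (w \<omega>) e)"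
    and "(\<integral>\<omega>. nf gs gF \<gamma> C N E H x0 t (w \<omega>) e \<partial>M) \<le>
      real e * real H * ((real N - 1) / (real N)\<^sup>2) * (\<Sum>j<N. 1 / real (card (C j))) * \<sigma>\<^sup>2"
proof -
  define T where "T = ({..<e} \<times> {..<H}) \<times> (SIGMA j0:{..<N}. C j0)"
  define f where "f \<tau> \<omega> = ep (fst (fst \<tau>)) (snd (fst \<tau>)) (fst (snd \<tau>)) (snd (snd \<tau>)) \<omega>" for \<tau> :: "(nat \<times> nat) \<times> nat \<times> 'c" and \<omega>
  define \<alpha> where "\<alpha> j \<tau> = ((if fst (snd \<tau>) = j then 1 else 0) - 1 / real N) / real (card (C (fst (snd \<tau>))))" for j and \<tau> :: "(nat \<times> nat) \<times> nat \<times> 'c"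
  have Tfin: "finite T" unfolding T_def using C_fin by (auto intro!: finite_SigmaI)
  have Tmem: "fst (fst \<tau>) < E \<and> snd (fst \<tau>) < H \<and> fst (snd \<tau>) < N \<and> snd (snd \<tau>) \<in> C (fst (snd \<tau>))" if "\<tau> \<in> T" for \<tau>
    using that eE unfolding T_def by auto
  have fm: "f \<tau> \<in> borel_measurable M" if "\<tau> \<in> T" for \<tau>
    unfolding f_def using Tmem[OF that] by (intro ep_meas) auto
  have fi: "integrable M (\<lambda>\<omega>. (norm (f \<tau> \<omega>))\<^sup>2)" if "\<tau> \<in> T" for \<tau>
    unfolding f_def using Tmem[OF that] by (intro ep_L2) auto
  have fv: "(\<integral>\<omega>. (norm (f \<tau> \<omega>))\<^sup>2 \<partial>M) \<le> \<sigma>\<^sup>2" if "\<tau> \<in> T" for \<tau>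
  proof -
    have "ennreal (\<integral>\<omega>. (norm (f \<tau> \<omega>))\<^sup>2 \<partial>M) = (\<integral>\<^sup>+ \<omega>. ennreal ((norm (f \<tau> \<omega>))\<^sup>2) \<partial>M)"
      by (rule nn_integral_eq_integral[symmetric, OF fi[OF that]]) simp
    also have "\<dots> \<le> ennreal (\<sigma>\<^sup>2)" unfolding f_def using Tmem[OF that] by (intro ep_var) auto
    finally show ?thesis by (simp add: ennreal_le_iff)
  qed
  have orth: "(\<integral>\<omega>. inner (f \<tau>1 \<omega>) (f \<tau>2 \<omega>) \<partial>M) = 0" if "\<tau>1 \<in> T" "\<tau>2 \<in> T" "\<tau>1 \<noteq> \<tau>2" for \<tau>1 \<tau>2
    unfolding f_def using Tmem[OF that(1)] Tmem[OF that(2)] that(3)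
    by (intro ep_orth) (auto simp: prod_eq_iff)
  have rep: "nf gs gF \<gamma> C N E H x0 t (w \<omega>) e = (1 / real N) * (\<Sum>j<N. (norm (\<Sum>\<tau>\<in>T. \<alpha> j \<tau> *\<^sub>R f \<tau> \<omega>))\<^sup>2)" for \<omega>
    unfolding nf_def T_def \<alpha>_def f_def by (intro arg_cong[where f="\<lambda>x. 1 / real N * x"] sum.cong refl) (simp add: nf_rep)
  have L2: "integrable M (\<lambda>\<omega>. (norm (\<Sum>\<tau>\<in>T. \<alpha> j \<tau> *\<^sub>R f \<tau> \<omega>))\<^sup>2)"
     "(\<integral>\<omega>. (norm (\<Sum>\<tau>\<in>T. \<alpha> j \<tau> *\<^sub>R f \<tau> \<omega>))\<^sup>2 \<partial>M) = (\<Sum>\<tau>\<in>T. (\<alpha> j \<tau>)\<^sup>2 * (\<integral>\<omega>. (norm (f \<tau> \<omega>))\<^sup>2 \<partial>M))" for j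
    using L2_orth[OF Tfin fm fi orth] by auto
  show int: "integrable M (\<lambda>\<omega>. nf gs gF \<gamma> C N E H x0 t (w \<omega>) e)"
    unfolding rep using L2(1) by (intro integrable_mult_right Bochner_Integration.integrable_sum) auto
  have "(\<integral>\<omega>. nf gs gF \<gamma> C N E H x0 t (w \<omega>) e \<partial>M) = (1 / real N) * (\<Sum>j<N. \<Sum>\<tau>\<in>T. (\<alpha> j \<tau>)\<^sup>2 * (\<integral>\<omega>. (norm (f \<tau> \<omega>))\<^sup>2 \<partial>M))"
    unfolding rep using L2 by (simp add: Bochner_Integration.integral_sum)
  also have "\<dots> \<le> (1 / real N) * (\<Sum>j<N. \<Sum>\<tau>\<in>T. (\<alpha> j \<tau>)\<^sup>2 * \<sigma>\<^sup>2)"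
    by (intro mult_left_mono sum_mono fv) auto
  also have "\<dots> = (\<Sum>\<tau>\<in>T. ((real N - 1) / ((real N)\<^sup>2 * (real (card (C (fst (snd \<tau>)))))\<^sup>2)) * \<sigma>\<^sup>2)"
  proof -
    have "(\<Sum>j<N. (\<alpha> j \<tau>)\<^sup>2) = (real N - 1) / (real N * (real (card (C (fst (snd \<tau>)))))\<^sup>2)" if "\<tau> \<in> T" for \<tau>
    proof -
      have "(\<Sum>j<N. (\<alpha> j \<tau>)\<^sup>2) = (\<Sum>j<N. ((if fst (snd \<tau>) = j then 1 else 0) - 1 / real N)\<^sup>2) / (real (card (C (fst (snd \<tau>)))))\<^sup>2"
        unfolding \<alpha>_def by (simp add: power_divide sum_divide_distrib)
      also have "\<dots> = ((real N - 1) / real N) / (real (card (C (fst (snd \<tau>)))))\<^sup>2"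
        using Tmem[OF that] by (simp add: delta_sq_sum)
      finally show ?thesis by simp
    qed
    note sq = this
    have sw: "(\<Sum>j<N. \<Sum>\<tau>\<in>T. (\<alpha> j \<tau>)\<^sup>2 * \<sigma>\<^sup>2) = (\<Sum>\<tau>\<in>T. (\<Sum>j<N. (\<alpha> j \<tau>)\<^sup>2) * \<sigma>\<^sup>2)"
      by (subst sum.swap) (simp add: sum_distrib_right)
    have "(1 / real N) * (\<Sum>j<N. \<Sum>\<tau>\<in>T. (\<alpha> j \<tau>)\<^sup>2 * \<sigma>\<^sup>2) = (\<Sum>\<tau>\<in>T. (1 / real N) * ((real N - 1) / (real N * (real (card (C (fst (snd \<tau>)))))\<^sup>2)) * \<sigma>\<^sup>2)"
      unfolding sw sum_distrib_left by (intro sum.cong refl) (simp add: sq)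
    also have "\<dots> = (\<Sum>\<tau>\<in>T. ((real N - 1) / ((real N)\<^sup>2 * (real (card (C (fst (snd \<tau>)))))\<^sup>2)) * \<sigma>\<^sup>2)"
      by (intro sum.cong refl) (simp add: power2_eq_square)
    finally show ?thesis .
  qed
  also have "\<dots> = real e * real H * ((real N - 1) / (real N)\<^sup>2) * (\<Sum>j<N. 1 / real (card (C j))) * \<sigma>\<^sup>2"
  proof -
    define g where "g j0 = ((real N - 1) / ((real N)\<^sup>2 * (real (card (C j0)))\<^sup>2)) * \<sigma>\<^sup>2" for j0
    have "(\<Sum>\<tau>\<in>T. g (fst (snd \<tau>))) = (\<Sum>k\<in>{..<e} \<times> {..<H}. \<Sum>p\<in>(SIGMA j0:{..<N}. C j0). g (fst p))"
      unfolding T_def sum.cartesian_product by (simp add: split_beta')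
    also have "\<dots> = real e * real H * (\<Sum>p\<in>(SIGMA j0:{..<N}. C j0). g (fst p))"
      by (simp add: card_cartesian_product)
    also have "(\<Sum>p\<in>(SIGMA j0:{..<N}. C j0). g (fst p)) = (\<Sum>j0<N. \<Sum>i\<in>C j0. g j0)"
      by (subst sum.Sigma) (auto simp: C_fin split_beta')
    also have "\<dots> = (\<Sum>j0<N. real (card (C j0)) * g j0)" by simp
    also have "\<dots> = (\<Sum>j0<N. ((real N - 1) / (real N)\<^sup>2) * (1 / real (card (C j0))) * \<sigma>\<^sup>2)"
    proof (intro sum.cong refl)
      fix j0 assume "j0 \<in> {..<N}"
      then have "real (card (C j0)) > 0" using C_fin C_ne by (simp add: card_gt_0_iff)
      then show "real (card (C j0)) * g j0 = ((real N - 1) / (real N)\<^sup>2) * (1 / real (card (C j0))) * \<sigma>\<^sup>2"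
        unfolding g_def using N_pos by (simp add: field_simps power2_eq_square)
    qed
    also have "(\<Sum>j0<N. ((real N - 1) / (real N)\<^sup>2) * (1 / real (card (C j0))) * \<sigma>\<^sup>2) = ((real N - 1) / (real N)\<^sup>2) * (\<Sum>j0<N. 1 / real (card (C j0))) * \<sigma>\<^sup>2"
      by (simp only: sum_distrib_left sum_distrib_right)
    finally have "(\<Sum>\<tau>\<in>T. g (fst (snd \<tau>))) = real e * real H * (((real N - 1) / (real N)\<^sup>2) * (\<Sum>j0<N. 1 / real (card (C j0))) * \<sigma>\<^sup>2)" .
    then show ?thesis unfolding g_def by (simp only: mult_ac)
  qed
  finally show "(\<integral>\<omega>. nf gs gF \<gamma> C N E H x0 t (w \<omega>) e \<partial>M) \<le>
      real e * real H * ((real N - 1) / (real N)\<^sup>2) * (\<Sum>j<N. 1 / real (card (C j))) * \<sigma>\<^sup>2" .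
qed

end

lemma ennreal3:
  fixes a b x y z :: real
  assumes "a \<ge> 0" "b \<ge> 0" "x \<ge> 0" "y \<ge> 0" "z \<ge> 0"
  shows "ennreal (a * x + b * y + z) = ennreal a * ennreal x + ennreal b * ennreal y + ennreal z"
proof -
  have "ennreal (a * x + b * y + z) = ennreal (a * x + b * y) + ennreal z"
    using assms by (intro ennreal_plus) auto
  also have "ennreal (a * x + b * y) = ennreal (a * x) + ennreal (b * y)"
    using assms by (intro ennreal_plus) auto
  finally show ?thesis using assms by (simp add: ennreal_mult)
qed

lemma ennreal2m:
  fixes a b x y :: real
  assumes "a \<ge> 0" "b \<ge> 0" "x \<ge> 0" "y \<ge> 0"
  shows "ennreal (a * x + b * y) = ennreal a * ennreal x + ennreal b * ennreal y"
proof -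
  have "ennreal (a * x + b * y) = ennreal (a * x) + ennreal (b * y)"
    using assms by (intro ennreal_plus) auto
  then show ?thesis using assms by (simp add: ennreal_mult)
qed

lemma nn_lin:
  fixes f :: "'m \<Rightarrow> real" and g1 g2 g3 :: "'k \<Rightarrow> 'm \<Rightarrow> real"
  assumes K: "finite K" and a: "a \<ge> 0" and b: "b \<ge> 0" and c1: "c1 \<ge> 0" and c2: "c2 \<ge> 0"
    and fm: "f \<in> borel_measurable M" and f0: "\<And>\<omega>. f \<omega> \<ge> 0"
    and g1m: "\<And>k. k \<in> K \<Longrightarrow> g1 k \<in> borel_measurable M" and g10: "\<And>k \<omega>. k \<in> K \<Longrightarrow> g1 k \<omega> \<ge> 0"
    and g2m: "\<And>k. k \<in> K \<Longrightarrow> g2 k \<in> borel_measurable M" and g20: "\<And>k \<omega>. k \<in> K \<Longrightarrow> g2 k \<omega> \<ge> 0"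
    and g3m: "\<And>k. k \<in> K \<Longrightarrow> g3 k \<in> borel_measurable M" and g30: "\<And>k \<omega>. k \<in> K \<Longrightarrow> g3 k \<omega> \<ge> 0"
  shows "(\<integral>\<^sup>+ \<omega>. ennreal (a * f \<omega> + b * (\<Sum>k\<in>K. c1 * g1 k \<omega> + c2 * g2 k \<omega> + g3 k \<omega>)) \<partial>M) =
    ennreal a * (\<integral>\<^sup>+ \<omega>. ennreal (f \<omega>) \<partial>M) + ennreal b * (\<Sum>k\<in>K. ennreal c1 * (\<integral>\<^sup>+ \<omega>. ennreal (g1 k \<omega>) \<partial>M)
      + ennreal c2 * (\<integral>\<^sup>+ \<omega>. ennreal (g2 k \<omega>) \<partial>M) + (\<integral>\<^sup>+ \<omega>. ennreal (g3 k \<omega>) \<partial>M))"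
proof -
  have s0: "(\<Sum>k\<in>K. c1 * g1 k \<omega> + c2 * g2 k \<omega> + g3 k \<omega>) \<ge> 0" for \<omega>
    using g10 g20 g30 c1 c2 by (intro sum_nonneg) auto
  have e1: "ennreal (a * f \<omega> + b * (\<Sum>k\<in>K. c1 * g1 k \<omega> + c2 * g2 k \<omega> + g3 k \<omega>)) =
      ennreal a * ennreal (f \<omega>) + ennreal b * (\<Sum>k\<in>K. ennreal c1 * ennreal (g1 k \<omega>) + ennreal c2 * ennreal (g2 k \<omega>) + ennreal (g3 k \<omega>))" for \<omega>
  proof -
    have "ennreal (\<Sum>k\<in>K. c1 * g1 k \<omega> + c2 * g2 k \<omega> + g3 k \<omega>) = (\<Sum>k\<in>K. ennreal (c1 * g1 k \<omega> + c2 * g2 k \<omega> + g3 k \<omega>))"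
      using g10 g20 g30 c1 c2 by (intro sum_ennreal[symmetric]) auto
    also have "\<dots> = (\<Sum>k\<in>K. ennreal c1 * ennreal (g1 k \<omega>) + ennreal c2 * ennreal (g2 k \<omega>) + ennreal (g3 k \<omega>))"
      using g10 g20 g30 c1 c2 by (intro sum.cong refl ennreal3) auto
    finally show ?thesis using ennreal2m[OF a b f0 s0] by simp
  qed
  have mg1: "(\<lambda>\<omega>. ennreal (g1 k \<omega>)) \<in> borel_measurable M" if "k \<in> K" for k using g1m[OF that] by simp
  have mg2: "(\<lambda>\<omega>. ennreal (g2 k \<omega>)) \<in> borel_measurable M" if "k \<in> K" for k using g2m[OF that] by simp
  have mg3: "(\<lambda>\<omega>. ennreal (g3 k \<omega>)) \<in> borel_measurable M" if "k \<in> K" for k using g3m[OF that] by simp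
  have mk: "(\<lambda>\<omega>. ennreal c1 * ennreal (g1 k \<omega>) + ennreal c2 * ennreal (g2 k \<omega>) + ennreal (g3 k \<omega>)) \<in> borel_measurable M"
    if "k \<in> K" for k using mg1[OF that] mg2[OF that] mg3[OF that] by simp
  have ms: "(\<lambda>\<omega>. \<Sum>k\<in>K. ennreal c1 * ennreal (g1 k \<omega>) + ennreal c2 * ennreal (g2 k \<omega>) + ennreal (g3 k \<omega>)) \<in> borel_measurable M"
    using mk by (intro borel_measurable_sum) auto
  have "(\<integral>\<^sup>+ \<omega>. ennreal (a * f \<omega> + b * (\<Sum>k\<in>K. c1 * g1 k \<omega> + c2 * g2 k \<omega> + g3 k \<omega>)) \<partial>M) =
     (\<integral>\<^sup>+ \<omega>. ennreal a * ennreal (f \<omega>) + ennreal b * (\<Sum>k\<in>K. ennreal c1 * ennreal (g1 k \<omega>) + ennreal c2 * ennreal (g2 k \<omega>) + ennreal (g3 k \<omega>)) \<partial>M)"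
    unfolding e1 ..
  also have "\<dots> = (\<integral>\<^sup>+ \<omega>. ennreal a * ennreal (f \<omega>) \<partial>M) + (\<integral>\<^sup>+ \<omega>. ennreal b * (\<Sum>k\<in>K. ennreal c1 * ennreal (g1 k \<omega>) + ennreal c2 * ennreal (g2 k \<omega>) + ennreal (g3 k \<omega>)) \<partial>M)"
    by (rule nn_integral_add) (use fm ms in auto)
  also have "(\<integral>\<^sup>+ \<omega>. ennreal a * ennreal (f \<omega>) \<partial>M) = ennreal a * (\<integral>\<^sup>+ \<omega>. ennreal (f \<omega>) \<partial>M)"
    by (rule nn_integral_cmult) (use fm in simp)
  also have "(\<integral>\<^sup>+ \<omega>. ennreal b * (\<Sum>k\<in>K. ennreal c1 * ennreal (g1 k \<omega>) + ennreal c2 * ennreal (g2 k \<omega>) + ennreal (g3 k \<omega>)) \<partial>M)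
     = ennreal b * (\<integral>\<^sup>+ \<omega>. (\<Sum>k\<in>K. ennreal c1 * ennreal (g1 k \<omega>) + ennreal c2 * ennreal (g2 k \<omega>) + ennreal (g3 k \<omega>)) \<partial>M)"
    by (rule nn_integral_cmult[OF ms])
  also have "(\<integral>\<^sup>+ \<omega>. (\<Sum>k\<in>K. ennreal c1 * ennreal (g1 k \<omega>) + ennreal c2 * ennreal (g2 k \<omega>) + ennreal (g3 k \<omega>)) \<partial>M)
     = (\<Sum>k\<in>K. \<integral>\<^sup>+ \<omega>. ennreal c1 * ennreal (g1 k \<omega>) + ennreal c2 * ennreal (g2 k \<omega>) + ennreal (g3 k \<omega>) \<partial>M)"
    by (rule nn_integral_sum) (rule mk)
  also have "\<dots> = (\<Sum>k\<in>K. ennreal c1 * (\<integral>\<^sup>+ \<omega>. ennreal (g1 k \<omega>) \<partial>M)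
      + ennreal c2 * (\<integral>\<^sup>+ \<omega>. ennreal (g2 k \<omega>) \<partial>M) + (\<integral>\<^sup>+ \<omega>. ennreal (g3 k \<omega>) \<partial>M))"
  proof (rule sum.cong[OF refl])
    fix k assume k: "k \<in> K"
    show "(\<integral>\<^sup>+ \<omega>. ennreal c1 * ennreal (g1 k \<omega>) + ennreal c2 * ennreal (g2 k \<omega>) + ennreal (g3 k \<omega>) \<partial>M) =
      ennreal c1 * (\<integral>\<^sup>+ \<omega>. ennreal (g1 k \<omega>) \<partial>M) + ennreal c2 * (\<integral>\<^sup>+ \<omega>. ennreal (g2 k \<omega>) \<partial>M) + (\<integral>\<^sup>+ \<omega>. ennreal (g3 k \<omega>) \<partial>M)"
      using mg1[OF k] mg2[OF k] mg3[OF k] by (simp add: nn_integral_add nn_integral_cmult)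
  qed
  finally show ?thesis .
qed

context mtgc_ctx
begin

abbreviation "dfw e \<omega> \<equiv> df gs \<gamma> C N E H x0 t (w \<omega>) e"
abbreviation "qfw e \<omega> \<equiv> qf gs \<gamma> C N E H x0 t (w \<omega>) e"
abbreviation "yfw e \<omega> \<equiv> yf gs gF \<gamma> C N E H x0 t (w \<omega>) e"
abbreviation "nfw e \<omega> \<equiv> nf gs gF \<gamma> C N E H x0 t (w \<omega>) e"

lemma df_nn: "df gs \<gamma> C N E H x0 t W e \<ge> 0" unfolding df_def by (intro sum_nonneg) auto
lemma qf_nn: "qf gs \<gamma> C N E H x0 t W e \<ge> 0" unfolding qf_def by (intro sum_nonneg) auto
lemma yf_nn: "yf gs gF \<gamma> C N E H x0 t W e \<ge> 0" unfolding yf_def by (intro sum_nonneg) auto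
lemma nf_nn: "nf gs gF \<gamma> C N E H x0 t W e \<ge> 0" unfolding nf_def by (intro mult_nonneg_nonneg sum_nonneg) auto

lemma dfw_meas: "e \<le> E \<Longrightarrow> (\<lambda>\<omega>. dfw e \<omega>) \<in> borel_measurable M"
  unfolding df_def xhv_def xbv_def
  using xhat_meas xbj_meas by (intro borel_measurable_sum borel_measurable_times borel_measurable_const
       borel_measurable_power measurable_compose[OF _ borel_measurable_norm] borel_measurable_diff) auto

lemma qfw_meas: "e < E \<Longrightarrow> (\<lambda>\<omega>. qfw e \<omega>) \<in> borel_measurable M"
  unfolding qf_def Xv_def xbv_def
  using X_meas xbj_meas by (intro borel_measurable_sum borel_measurable_times borel_measurable_const
       borel_measurable_power measurable_compose[OF _ borel_measurable_norm] borel_measurable_diff) auto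

lemma gfv_meas: "e \<le> E \<Longrightarrow> j < N \<Longrightarrow> (\<lambda>\<omega>. gfv gF C j (mtgc_xhat gs \<gamma> C N E H x0 (w \<omega>) t e)) \<in> borel_measurable M"
  unfolding gfv_def
  by (rule meas_avg) (rule measurable_compose[OF xhat_meas gF_meas], auto)

lemma yfw_meas: "e \<le> E \<Longrightarrow> (\<lambda>\<omega>. yfw e \<omega>) \<in> borel_measurable M"
  unfolding yf_def xhv_def yv_def
  using y_meas gfv_meas by (intro borel_measurable_sum borel_measurable_times borel_measurable_const
       borel_measurable_power measurable_compose[OF _ borel_measurable_norm] borel_measurable_diff
       borel_measurable_add borel_measurable_scaleR) auto

lemma nfw_meas: "e \<le> E \<Longrightarrow> (\<lambda>\<omega>. nfw e \<omega>) \<in> borel_measurable M"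
  using noise_bound(1) by (rule borel_measurable_integrable)

definition "sc = ((real N - 1) / (real N)\<^sup>2) * (\<Sum>j<N. 1 / real (card (C j))) * \<sigma>\<^sup>2"

lemma sc_nn: "sc \<ge> 0"
  unfolding sc_def using N_pos by (intro mult_nonneg_nonneg sum_nonneg divide_nonneg_nonneg) auto

lemma per_e:
  assumes e: "e < E"
  shows "(\<integral>\<^sup>+ \<omega>. ennreal (dfw e \<omega>) \<partial>M) \<le> ennreal (4 * \<gamma>\<^sup>2 * (real e * real H * sc)) +
    ennreal (4 * \<gamma>\<^sup>2 * (real e * real H * real H)) * (\<Sum>e'<e. ennreal (L\<^sup>2) * (\<integral>\<^sup>+ \<omega>. ennreal (qfw e' \<omega>) \<partial>M)
      + ennreal (L\<^sup>2) * (\<integral>\<^sup>+ \<omega>. ennreal (dfw e' \<omega>) \<partial>M) + (\<integral>\<^sup>+ \<omega>. ennreal (yfw e' \<omega>) \<partial>M))"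
proof -
  have Lip: "norm (gF i x - gF i y) \<le> L * norm (x - y)" if "j < N" "i \<in> C j" for j i x y
    using that by (intro A1) blast
  have pw: "dfw e \<omega> \<le> 4 * \<gamma>\<^sup>2 * nfw e \<omega> + 4 * \<gamma>\<^sup>2 * (real e * real H * real H) * (\<Sum>e'<e. L\<^sup>2 * qfw e' \<omega> + L\<^sup>2 * dfw e' \<omega> + yfw e' \<omega>)" for \<omega>
    by (rule pw_mtgc[OF N_pos _ Lip]) (use C_fin C_ne in auto)
  have "(\<integral>\<^sup>+ \<omega>. ennreal (dfw e \<omega>) \<partial>M) \<le> (\<integral>\<^sup>+ \<omega>. ennreal (4 * \<gamma>\<^sup>2 * nfw e \<omega> + 4 * \<gamma>\<^sup>2 * (real e * real H * real H) * (\<Sum>e'<e. L\<^sup>2 * qfw e' \<omega> + L\<^sup>2 * dfw e' \<omega> + yfw e' \<omega>)) \<partial>M)"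
    by (intro nn_integral_mono ennreal_leI pw)
  also have "\<dots> = ennreal (4 * \<gamma>\<^sup>2) * (\<integral>\<^sup>+ \<omega>. ennreal (nfw e \<omega>) \<partial>M) + ennreal (4 * \<gamma>\<^sup>2 * (real e * real H * real H)) * (\<Sum>e'<e. ennreal (L\<^sup>2) * (\<integral>\<^sup>+ \<omega>. ennreal (qfw e' \<omega>) \<partial>M)
      + ennreal (L\<^sup>2) * (\<integral>\<^sup>+ \<omega>. ennreal (dfw e' \<omega>) \<partial>M) + (\<integral>\<^sup>+ \<omega>. ennreal (yfw e' \<omega>) \<partial>M))"
    by (rule nn_lin) (use e in \<open>auto intro!: nfw_meas qfw_meas dfw_meas yfw_meas nf_nn qf_nn df_nn yf_nn\<close>)
  finally have st1: "(\<integral>\<^sup>+ \<omega>. ennreal (dfw e \<omega>) \<partial>M) \<le> ennreal (4 * \<gamma>\<^sup>2) * (\<integral>\<^sup>+ \<omega>. ennreal (nfw e \<omega>) \<partial>M) + ennreal (4 * \<gamma>\<^sup>2 * (real e * real H * real H)) * (\<Sum>e'<e. ennreal (L\<^sup>2) * (\<integral>\<^sup>+ \<omega>. ennreal (qfw e' \<omega>) \<partial>M)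
      + ennreal (L\<^sup>2) * (\<integral>\<^sup>+ \<omega>. ennreal (dfw e' \<omega>) \<partial>M) + (\<integral>\<^sup>+ \<omega>. ennreal (yfw e' \<omega>) \<partial>M))" .
  have nb: "(\<integral>\<^sup>+ \<omega>. ennreal (nfw e \<omega>) \<partial>M) \<le> ennreal (real e * real H * sc)"
  proof -
    have "(\<integral>\<^sup>+ \<omega>. ennreal (nfw e \<omega>) \<partial>M) = ennreal (\<integral>\<omega>. nfw e \<omega> \<partial>M)"
      by (rule nn_integral_eq_integral[OF noise_bound(1)]) (use e nf_nn in auto)
    also have "\<dots> \<le> ennreal (real e * real H * sc)"
      using noise_bound(2)[of e] e unfolding sc_def by (intro ennreal_leI) (simp add: mult.assoc)
    finally show ?thesis .
  qed
  have em: "ennreal (4 * \<gamma>\<^sup>2) * ennreal (real e * real H * sc) = ennreal (4 * \<gamma>\<^sup>2 * (real e * real H * sc))"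
    by (rule ennreal_mult[symmetric]) (use sc_nn in auto)
  have "ennreal (4 * \<gamma>\<^sup>2) * (\<integral>\<^sup>+ \<omega>. ennreal (nfw e \<omega>) \<partial>M) \<le> ennreal (4 * \<gamma>\<^sup>2) * ennreal (real e * real H * sc)"
    by (rule mult_left_mono[OF nb]) simp
  then show ?thesis using st1 unfolding em
    by (meson add_right_mono order_trans)
qed

end

lemma sum_real_le: "(\<Sum>e<E. real e) \<le> (real E)\<^sup>2 / 2"
proof (induction E)
  case 0 then show ?case by simp
next
  case (Suc E)
  have "(\<Sum>e<Suc E. real e) = (\<Sum>e<E. real e) + real E" by simp
  also have "\<dots> \<le> (real E)\<^sup>2 / 2 + real E" using Suc by simp
  also have "\<dots> \<le> (real (Suc E))\<^sup>2 / 2" by (simp add: power2_eq_square field_simps)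
  finally show ?case .
qed

lemma final_real:
  fixes d q y :: "nat \<Rightarrow> real" and \<gamma> L sc :: real
  assumes d0: "\<And>e. d e \<ge> 0" and q0: "\<And>e. q e \<ge> 0" and y0: "\<And>e. y e \<ge> 0" and sc0: "sc \<ge> 0"
    and L0: "L > 0" and g0: "\<gamma> > 0" and E1: "E \<ge> 1" and H1: "H \<ge> 1"
    and gle: "\<gamma> \<le> 1 / (10 * real E * real H * L)"
    and pe: "\<And>e. e < E \<Longrightarrow> d e \<le> 4 * \<gamma>\<^sup>2 * (real e * real H * sc) +
       4 * \<gamma>\<^sup>2 * (real e * real H * real H) * (\<Sum>e'<e. L\<^sup>2 * q e' + L\<^sup>2 * d e' + y e')"
  shows "(\<Sum>e<E. d e) \<le> 24 * \<gamma>\<^sup>2 * real E ^ 2 * real H ^ 2 * L\<^sup>2 * (\<Sum>e<E. q e)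
     + 12 * \<gamma>\<^sup>2 * real E ^ 2 * real H ^ 2 * (\<Sum>e<E. y e) + 3 * \<gamma>\<^sup>2 * real E ^ 3 * real H * sc"
proof -
  define SS where "SS = (\<Sum>e'<E. L\<^sup>2 * q e' + L\<^sup>2 * d e' + y e')"
  have SSe: "(\<Sum>e'<e. L\<^sup>2 * q e' + L\<^sup>2 * d e' + y e') \<le> SS" if "e < E" for e
    unfolding SS_def using that d0 q0 y0 by (intro sum_mono2) auto
  have SS0: "SS \<ge> 0" unfolding SS_def using d0 q0 y0 by (intro sum_nonneg) auto
  have "(\<Sum>e<E. d e) \<le> (\<Sum>e<E. 4 * \<gamma>\<^sup>2 * (real e * real H * sc) + 4 * \<gamma>\<^sup>2 * (real e * real H * real H) * SS)"
  proof (rule sum_mono)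
    fix e assume "e \<in> {..<E}"
    then have e: "e < E" by simp
    have "4 * \<gamma>\<^sup>2 * (real e * real H * real H) * (\<Sum>e'<e. L\<^sup>2 * q e' + L\<^sup>2 * d e' + y e') \<le> 4 * \<gamma>\<^sup>2 * (real e * real H * real H) * SS"
      by (rule mult_left_mono[OF SSe[OF e]]) simp
    then show "d e \<le> 4 * \<gamma>\<^sup>2 * (real e * real H * sc) + 4 * \<gamma>\<^sup>2 * (real e * real H * real H) * SS"
      using pe[OF e] by linarith
  qed
  also have "\<dots> = (4 * \<gamma>\<^sup>2 * real H * sc + 4 * \<gamma>\<^sup>2 * real H * real H * SS) * (\<Sum>e<E. real e)"
    by (simp add: sum.distrib sum_distrib_left sum_distrib_right algebra_simps)
  also have "\<dots> \<le> (4 * \<gamma>\<^sup>2 * real H * sc + 4 * \<gamma>\<^sup>2 * real H * real H * SS) * ((real E)\<^sup>2 / 2)"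
    by (rule mult_left_mono[OF sum_real_le]) (use sc0 SS0 in simp)
  finally have D1: "(\<Sum>e<E. d e) \<le> 2 * \<gamma>\<^sup>2 * (real E)\<^sup>2 * real H * sc + 2 * (\<gamma>\<^sup>2 * (real E)\<^sup>2 * (real H)\<^sup>2) * SS"
    by (simp add: algebra_simps power2_eq_square)
  define c where "c = \<gamma>\<^sup>2 * (real E)\<^sup>2 * (real H)\<^sup>2"
  have c0: "c \<ge> 0" unfolding c_def by simp
  have cL: "c * L\<^sup>2 \<le> 1 / 100"
  proof -
    have pos: "10 * real E * real H * L > 0" using E1 H1 L0 by simp
    have "\<gamma> * (10 * real E * real H * L) \<le> 1" using gle pos by (simp add: field_simps)
    then have a: "\<gamma> * real E * real H * L \<le> 1 / 10" by (simp add: algebra_simps)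
    have b: "0 \<le> \<gamma> * real E * real H * L" using g0 L0 by simp
    have "(\<gamma> * real E * real H * L)\<^sup>2 \<le> (1 / 10)\<^sup>2" by (rule power_mono[OF a b])
    then have "\<gamma>\<^sup>2 * (real E)\<^sup>2 * (real H)\<^sup>2 * L\<^sup>2 \<le> (1 / 10)\<^sup>2" by (simp add: power_mult_distrib)
    also have "(1 / 10 :: real)\<^sup>2 = 1 / 100" by (simp add: power2_eq_square)
    finally show ?thesis unfolding c_def .
  qed
  have SSd: "SS = L\<^sup>2 * (\<Sum>e<E. q e) + L\<^sup>2 * (\<Sum>e<E. d e) + (\<Sum>e<E. y e)"
    unfolding SS_def by (simp add: sum.distrib sum_distrib_left)
  define DD where "DD = (\<Sum>e<E. d e)"
  define QQ where "QQ = (\<Sum>e<E. q e)"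
  define YY where "YY = (\<Sum>e<E. y e)"
  have DD0: "DD \<ge> 0" unfolding DD_def using d0 by (intro sum_nonneg) auto
  have QQ0: "QQ \<ge> 0" unfolding QQ_def using q0 by (intro sum_nonneg) auto
  have YY0: "YY \<ge> 0" unfolding YY_def using y0 by (intro sum_nonneg) auto
  define a1 where "a1 = 2 * \<gamma>\<^sup>2 * (real E)\<^sup>2 * real H * sc"
  have a10: "a1 \<ge> 0" unfolding a1_def using sc0 by simp
  have D2: "DD \<le> a1 + 2 * c * L\<^sup>2 * QQ + 2 * c * YY + 2 * (c * L\<^sup>2) * DD"
    using D1 unfolding SSd DD_def[symmetric] QQ_def[symmetric] YY_def[symmetric] c_def[symmetric] a1_def[symmetric]
    by (simp add: algebra_simps)
  have "2 * (c * L\<^sup>2) * DD \<le> 2 * (1/100) * DD" using cL DD0 by (intro mult_right_mono) auto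
  with D2 have D3: "(49/50) * DD \<le> a1 + 2 * c * L\<^sup>2 * QQ + 2 * c * YY" by linarith
  have t1: "a1 \<le> (49/50) * (3 * \<gamma>\<^sup>2 * real E ^ 3 * real H * sc)"
  proof -
    have "(real E)\<^sup>2 \<le> real E ^ 3" using E1 by (simp add: power_increasing)
    then have "2 * \<gamma>\<^sup>2 * (real E)\<^sup>2 * real H * sc \<le> 2 * \<gamma>\<^sup>2 * real E ^ 3 * real H * sc"
      using sc0 by (intro mult_right_mono mult_left_mono) auto
    moreover have "0 \<le> \<gamma>\<^sup>2 * real E ^ 3 * real H * sc" using sc0 by simp
    ultimately show ?thesis unfolding a1_def by linarith
  qed
  have "DD \<le> 24 * c * L\<^sup>2 * QQ + 12 * c * YY + 3 * \<gamma>\<^sup>2 * real E ^ 3 * real H * sc"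
  proof -
    have "0 \<le> c * L\<^sup>2 * QQ" using c0 QQ0 by simp
    moreover have "0 \<le> c * YY" using c0 YY0 by simp
    ultimately show ?thesis using D3 t1 a10 by linarith
  qed
  then show ?thesis unfolding DD_def QQ_def YY_def c_def by (simp add: algebra_simps)
qed

context mtgc_ctx
begin

abbreviation "Dn e \<equiv> (\<integral>\<^sup>+ \<omega>. ennreal (dfw e \<omega>) \<partial>M)"
abbreviation "Qn e \<equiv> (\<integral>\<^sup>+ \<omega>. ennreal (qfw e \<omega>) \<partial>M)"
abbreviation "Yn e \<equiv> (\<integral>\<^sup>+ \<omega>. ennreal (yfw e \<omega>) \<partial>M)"

lemma enn_rhs:
  assumes "A \<ge> 0" "B \<ge> 0" "\<And>k. k \<in> K \<Longrightarrow> q k \<ge> 0" "\<And>k. k \<in> K \<Longrightarrow> d k \<ge> 0" "\<And>k. k \<in> K \<Longrightarrow> y k \<ge> 0"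
  shows "ennreal A + ennreal B * (\<Sum>k\<in>K. ennreal (L\<^sup>2) * ennreal (q k) + ennreal (L\<^sup>2) * ennreal (d k) + ennreal (y k))
      = ennreal (A + B * (\<Sum>k\<in>K. L\<^sup>2 * q k + L\<^sup>2 * d k + y k))"
proof -
  have "(\<Sum>k\<in>K. ennreal (L\<^sup>2) * ennreal (q k) + ennreal (L\<^sup>2) * ennreal (d k) + ennreal (y k)) = (\<Sum>k\<in>K. ennreal (L\<^sup>2 * q k + L\<^sup>2 * d k + y k))"
    using assms by (intro sum.cong refl ennreal3[symmetric]) auto
  also have "\<dots> = ennreal (\<Sum>k\<in>K. L\<^sup>2 * q k + L\<^sup>2 * d k + y k)"
    using assms by (intro sum_ennreal) auto
  finally have s: "(\<Sum>k\<in>K. ennreal (L\<^sup>2) * ennreal (q k) + ennreal (L\<^sup>2) * ennreal (d k) + ennreal (y k)) = ennreal (\<Sum>k\<in>K. L\<^sup>2 * q k + L\<^sup>2 * d k + y k)" .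
  have nn: "(\<Sum>k\<in>K. L\<^sup>2 * q k + L\<^sup>2 * d k + y k) \<ge> 0" using assms by (intro sum_nonneg) auto
  show ?thesis unfolding s using assms nn by (simp add: ennreal_mult[symmetric] ennreal_plus[symmetric] del: ennreal_plus)
qed

lemma main_enn:
  "(\<Sum>e<E. Dn e) \<le> ennreal (24 * \<gamma>\<^sup>2 * real E ^ 2 * real H ^ 2 * L\<^sup>2) * (\<Sum>e<E. Qn e)
     + ennreal (12 * \<gamma>\<^sup>2 * real E ^ 2 * real H ^ 2) * (\<Sum>e<E. Yn e) + ennreal (3 * \<gamma>\<^sup>2 * real E ^ 3 * real H * sc)"
proof (cases "(\<Sum>e<E. Qn e) = \<top> \<or> (\<Sum>e<E. Yn e) = \<top>")
  case True
  have p1: "ennreal (24 * \<gamma>\<^sup>2 * real E ^ 2 * real H ^ 2 * L\<^sup>2) \<noteq> 0" using \<gamma>_pos L_pos E_pos H_pos by simp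
  have p2: "ennreal (12 * \<gamma>\<^sup>2 * real E ^ 2 * real H ^ 2) \<noteq> 0" using \<gamma>_pos E_pos H_pos by simp
  from True have "ennreal (24 * \<gamma>\<^sup>2 * real E ^ 2 * real H ^ 2 * L\<^sup>2) * (\<Sum>e<E. Qn e)
     + ennreal (12 * \<gamma>\<^sup>2 * real E ^ 2 * real H ^ 2) * (\<Sum>e<E. Yn e) + ennreal (3 * \<gamma>\<^sup>2 * real E ^ 3 * real H * sc) = \<top>"
    using p1 p2 by (auto simp: ennreal_mult_eq_top_iff)
  then show ?thesis by (simp only:) (rule top_greatest)
next
  case False
  have Qf: "Qn e < \<top>" if "e < E" for e
  proof -
    have "Qn e \<le> (\<Sum>e<E. Qn e)" using that by (intro member_le_sum) auto
    also have "\<dots> < \<top>" using False by (simp add: top.not_eq_extremum)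
    finally show ?thesis .
  qed
  have Yf: "Yn e < \<top>" if "e < E" for e
  proof -
    have "Yn e \<le> (\<Sum>e<E. Yn e)" using that by (intro member_le_sum) auto
    also have "\<dots> < \<top>" using False by (simp add: top.not_eq_extremum)
    finally show ?thesis .
  qed
  have Df: "Dn e < \<top>" if "e < E" for e
    using that
  proof (induction e rule: less_induct)
    case (less e)
    have "(\<Sum>e'<e. ennreal (L\<^sup>2) * Qn e' + ennreal (L\<^sup>2) * Dn e' + Yn e') < \<top>"
      using less Qf Yf by (auto simp: ennreal_mult_less_top)
    then have "ennreal (4 * \<gamma>\<^sup>2 * (real e * real H * sc)) +
      ennreal (4 * \<gamma>\<^sup>2 * (real e * real H * real H)) * (\<Sum>e'<e. ennreal (L\<^sup>2) * Qn e' + ennreal (L\<^sup>2) * Dn e' + Yn e') < \<top>"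
      by (simp add: ennreal_mult_less_top)
    then show ?case using per_e[OF less.prems] by (rule le_less_trans[rotated])
  qed
  define d where "d e = enn2real (Dn e)" for e
  define q where "q e = enn2real (Qn e)" for e
  define y where "y e = enn2real (Yn e)" for e
  have d0: "d e \<ge> 0" and q0: "q e \<ge> 0" and y0: "y e \<ge> 0" for e unfolding d_def q_def y_def by auto
  have dD: "Dn e = ennreal (d e)" if "e < E" for e unfolding d_def using Df[OF that] by simp
  have qQ: "Qn e = ennreal (q e)" if "e < E" for e unfolding q_def using Qf[OF that] by simp
  have yY: "Yn e = ennreal (y e)" if "e < E" for e unfolding y_def using Yf[OF that] by simp
  have pe: "d e \<le> 4 * \<gamma>\<^sup>2 * (real e * real H * sc) +
       4 * \<gamma>\<^sup>2 * (real e * real H * real H) * (\<Sum>e'<e. L\<^sup>2 * q e' + L\<^sup>2 * d e' + y e')" if e: "e < E" for e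
  proof -
    have "ennreal (d e) \<le> ennreal (4 * \<gamma>\<^sup>2 * (real e * real H * sc)) +
      ennreal (4 * \<gamma>\<^sup>2 * (real e * real H * real H)) * (\<Sum>e'<e. ennreal (L\<^sup>2) * ennreal (q e') + ennreal (L\<^sup>2) * ennreal (d e') + ennreal (y e'))"
    proof -
      have "(\<Sum>e'<e. ennreal (L\<^sup>2) * Qn e' + ennreal (L\<^sup>2) * Dn e' + Yn e') = (\<Sum>e'<e. ennreal (L\<^sup>2) * ennreal (q e') + ennreal (L\<^sup>2) * ennreal (d e') + ennreal (y e'))"
        using e by (intro sum.cong refl) (simp add: dD qQ yY)
      then show ?thesis using per_e[OF e] dD[OF e] by simp
    qed
    also have "\<dots> = ennreal (4 * \<gamma>\<^sup>2 * (real e * real H * sc) +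
       4 * \<gamma>\<^sup>2 * (real e * real H * real H) * (\<Sum>e'<e. L\<^sup>2 * q e' + L\<^sup>2 * d e' + y e'))"
      by (rule enn_rhs) (use sc_nn d0 q0 y0 in auto)
    finally show ?thesis by (rule ennreal_le_iff[THEN iffD1, rotated])
      (use sc_nn d0 q0 y0 in \<open>auto intro!: add_nonneg_nonneg mult_nonneg_nonneg sum_nonneg\<close>)
  qed
  have R: "(\<Sum>e<E. d e) \<le> 24 * \<gamma>\<^sup>2 * real E ^ 2 * real H ^ 2 * L\<^sup>2 * (\<Sum>e<E. q e)
     + 12 * \<gamma>\<^sup>2 * real E ^ 2 * real H ^ 2 * (\<Sum>e<E. y e) + 3 * \<gamma>\<^sup>2 * real E ^ 3 * real H * sc"
    by (rule final_real[OF d0 q0 y0 sc_nn L_pos \<gamma>_pos E_pos H_pos \<gamma>_le pe])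
  have "(\<Sum>e<E. Dn e) = (\<Sum>e<E. ennreal (d e))" by (intro sum.cong refl) (simp add: dD)
  also have "\<dots> = ennreal (\<Sum>e<E. d e)" using d0 by (intro sum_ennreal) auto
  also have "\<dots> \<le> ennreal (24 * \<gamma>\<^sup>2 * real E ^ 2 * real H ^ 2 * L\<^sup>2 * (\<Sum>e<E. q e)
     + 12 * \<gamma>\<^sup>2 * real E ^ 2 * real H ^ 2 * (\<Sum>e<E. y e) + 3 * \<gamma>\<^sup>2 * real E ^ 3 * real H * sc)"
    by (rule ennreal_leI[OF R])
  also have "\<dots> = ennreal (24 * \<gamma>\<^sup>2 * real E ^ 2 * real H ^ 2 * L\<^sup>2) * ennreal (\<Sum>e<E. q e)
     + ennreal (12 * \<gamma>\<^sup>2 * real E ^ 2 * real H ^ 2) * ennreal (\<Sum>e<E. y e) + ennreal (3 * \<gamma>\<^sup>2 * real E ^ 3 * real H * sc)"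
  proof -
    have a: "(\<Sum>e<E. q e) \<ge> 0" "(\<Sum>e<E. y e) \<ge> 0" using q0 y0 by (auto intro: sum_nonneg)
    show ?thesis using a sc_nn
      by (simp add: ennreal_mult[symmetric] ennreal_plus[symmetric] del: ennreal_plus)
  qed
  also have "ennreal (\<Sum>e<E. q e) = (\<Sum>e<E. Qn e)"
  proof -
    have "ennreal (\<Sum>e<E. q e) = (\<Sum>e<E. ennreal (q e))" using q0 by (intro sum_ennreal[symmetric]) auto
    also have "\<dots> = (\<Sum>e<E. Qn e)" by (intro sum.cong refl) (simp add: qQ)
    finally show ?thesis .
  qed
  also have "ennreal (\<Sum>e<E. y e) = (\<Sum>e<E. Yn e)"
  proof -
    have "ennreal (\<Sum>e<E. y e) = (\<Sum>e<E. ennreal (y e))" using y0 by (intro sum_ennreal[symmetric]) auto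
    also have "\<dots> = (\<Sum>e<E. Yn e)" by (intro sum.cong refl) (simp add: yY)
    finally show ?thesis .
  qed
  finally show ?thesis .
qed

end

lemma nn_sum_real:
  fixes f :: "'k \<Rightarrow> 'm \<Rightarrow> real"
  assumes "finite K" "\<And>k. k \<in> K \<Longrightarrow> f k \<in> borel_measurable M" "\<And>k \<omega>. k \<in> K \<Longrightarrow> f k \<omega> \<ge> 0"
  shows "(\<integral>\<^sup>+ \<omega>. ennreal (\<Sum>k\<in>K. f k \<omega>) \<partial>M) = (\<Sum>k\<in>K. \<integral>\<^sup>+ \<omega>. ennreal (f k \<omega>) \<partial>M)"
proof -
  have "(\<integral>\<^sup>+ \<omega>. ennreal (\<Sum>k\<in>K. f k \<omega>) \<partial>M) = (\<integral>\<^sup>+ \<omega>. (\<Sum>k\<in>K. ennreal (f k \<omega>)) \<partial>M)"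
    using assms(3) by (intro nn_integral_cong sum_ennreal[symmetric]) auto
  also have "\<dots> = (\<Sum>k\<in>K. \<integral>\<^sup>+ \<omega>. ennreal (f k \<omega>) \<partial>M)"
    by (rule nn_integral_sum) (use assms(2) in simp)
  finally show ?thesis .
qed

lemma nn_cmult_real:
  fixes f :: "'m \<Rightarrow> real"
  assumes "f \<in> borel_measurable M" "c \<ge> 0"
  shows "(\<integral>\<^sup>+ \<omega>. ennreal (c * f \<omega>) \<partial>M) = ennreal c * (\<integral>\<^sup>+ \<omega>. ennreal (f \<omega>) \<partial>M)"
proof -
  have "(\<integral>\<^sup>+ \<omega>. ennreal (c * f \<omega>) \<partial>M) = (\<integral>\<^sup>+ \<omega>. ennreal c * ennreal (f \<omega>) \<partial>M)"
  proof (rule nn_integral_cong)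
    fix \<omega> show "ennreal (c * f \<omega>) = ennreal c * ennreal (f \<omega>)"
      using assms(2) by (cases "f \<omega> \<ge> 0") (auto simp: ennreal_mult ennreal_neg mult_nonneg_nonpos)
  qed
  also have "\<dots> = ennreal c * (\<integral>\<^sup>+ \<omega>. ennreal (f \<omega>) \<partial>M)"
    by (rule nn_integral_cmult) (use assms(1) in simp)
  finally show ?thesis .
qed

context mtgc_ctx
begin

lemma conv_D: "(\<Sum>e<E. \<Sum>j<N. ennreal (1 / real N) *
       (\<integral>\<^sup>+ \<omega>. ennreal ((norm (mtgc_xhat gs \<gamma> C N E H x0 (w \<omega>) t e
                                     - mtgc_xbj gs \<gamma> C N E H x0 (w \<omega>) t e j))\<^sup>2) \<partial>M)) = (\<Sum>e<E. Dn e)"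
proof (intro sum.cong refl)
  fix e assume e: "e \<in> {..<E}"
  have m: "(\<lambda>\<omega>. (norm (mtgc_xhat gs \<gamma> C N E H x0 (w \<omega>) t e - mtgc_xbj gs \<gamma> C N E H x0 (w \<omega>) t e j))\<^sup>2) \<in> borel_measurable M"
    if "j < N" for j
  proof -
    have "e \<le> E" using e by simp
    then have a: "(\<lambda>\<omega>. mtgc_xhat gs \<gamma> C N E H x0 (w \<omega>) t e) \<in> borel_measurable M"
      and b: "(\<lambda>\<omega>. mtgc_xbj gs \<gamma> C N E H x0 (w \<omega>) t e j) \<in> borel_measurable M"
      using xhat_meas xbj_meas[OF that] by auto
    show ?thesis using a b by measurable
  qed
  have "Dn e = (\<Sum>j<N. \<integral>\<^sup>+ \<omega>. ennreal ((1 / real N) * (norm (mtgc_xhat gs \<gamma> C N E H x0 (w \<omega>) t e - mtgc_xbj gs \<gamma> C N E H x0 (w \<omega>) t e j))\<^sup>2) \<partial>M)"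
    unfolding df_def xhv_def xbv_def using m by (intro nn_sum_real) auto
  also have "\<dots> = (\<Sum>j<N. ennreal (1 / real N) * (\<integral>\<^sup>+ \<omega>. ennreal ((norm (mtgc_xhat gs \<gamma> C N E H x0 (w \<omega>) t e - mtgc_xbj gs \<gamma> C N E H x0 (w \<omega>) t e j))\<^sup>2) \<partial>M))"
    using m by (intro sum.cong refl nn_cmult_real) auto
  finally show "(\<Sum>j<N. ennreal (1 / real N) *
       (\<integral>\<^sup>+ \<omega>. ennreal ((norm (mtgc_xhat gs \<gamma> C N E H x0 (w \<omega>) t e
                                     - mtgc_xbj gs \<gamma> C N E H x0 (w \<omega>) t e j))\<^sup>2) \<partial>M)) = Dn e" by simp
qed

lemma conv_Q: "(\<Sum>e<E. \<Sum>j<N. \<Sum>i\<in>C j. \<Sum>h<H.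
          ennreal (1 / (real N * real H * real (card (C j)))) *
          (\<integral>\<^sup>+ \<omega>. ennreal ((norm (mtgc_xbj gs \<gamma> C N E H x0 (w \<omega>) t e j
                                        - mtgc_x gs \<gamma> C N E H x0 (w \<omega>) t e j i h))\<^sup>2) \<partial>M)) = (\<Sum>e<E. Qn e)"
proof (intro sum.cong refl)
  fix e assume e: "e \<in> {..<E}"
  define F where "F j i h \<omega> = (norm (mtgc_xbj gs \<gamma> C N E H x0 (w \<omega>) t e j - mtgc_x gs \<gamma> C N E H x0 (w \<omega>) t e j i h))\<^sup>2" for j i h \<omega>
  define c where "c j = 1 / (real N * real H * real (card (C j)))" for j
  have c0: "c j \<ge> 0" for j unfolding c_def by simp
  have m: "F j i h \<in> borel_measurable M" if "j < N" "i \<in> C j" "h < H" for j i h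
  proof -
    have a: "(\<lambda>\<omega>. mtgc_x gs \<gamma> C N E H x0 (w \<omega>) t e j i h) \<in> borel_measurable M"
      using X_meas that e by auto
    have b: "(\<lambda>\<omega>. mtgc_xbj gs \<gamma> C N E H x0 (w \<omega>) t e j) \<in> borel_measurable M"
      using xbj_meas that e by auto
    show ?thesis unfolding F_def using a b by measurable
  qed
  have F0: "F j i h \<omega> \<ge> 0" for j i h \<omega> unfolding F_def by simp
  have m1: "(\<lambda>\<omega>. c j * F j i h \<omega>) \<in> borel_measurable M" if "j < N" "i \<in> C j" "h < H" for j i h
    using m[OF that] by (intro borel_measurable_times borel_measurable_const)
  have m2: "(\<lambda>\<omega>. \<Sum>h<H. c j * F j i h \<omega>) \<in> borel_measurable M" if "j < N" "i \<in> C j" for j i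
    using m[OF that] by (intro borel_measurable_sum borel_measurable_times borel_measurable_const) auto
  have m3: "(\<lambda>\<omega>. \<Sum>i\<in>C j. \<Sum>h<H. c j * F j i h \<omega>) \<in> borel_measurable M" if "j < N" for j
    by (rule borel_measurable_sum) (rule m2[OF that])
  have "Qn e = (\<integral>\<^sup>+ \<omega>. ennreal (\<Sum>j<N. \<Sum>i\<in>C j. \<Sum>h<H. c j * F j i h \<omega>) \<partial>M)"
    unfolding qf_def F_def c_def xbv_def Xv_def ..
  also have "\<dots> = (\<Sum>j<N. \<integral>\<^sup>+ \<omega>. ennreal (\<Sum>i\<in>C j. \<Sum>h<H. c j * F j i h \<omega>) \<partial>M)"
    using m3 c0 F0 by (intro nn_sum_real) (auto intro!: sum_nonneg)
  also have "\<dots> = (\<Sum>j<N. \<Sum>i\<in>C j. \<integral>\<^sup>+ \<omega>. ennreal (\<Sum>h<H. c j * F j i h \<omega>) \<partial>M)"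
  proof (intro sum.cong refl)
    fix j assume j: "j \<in> {..<N}"
    show "(\<integral>\<^sup>+ \<omega>. ennreal (\<Sum>i\<in>C j. \<Sum>h<H. c j * F j i h \<omega>) \<partial>M) = (\<Sum>i\<in>C j. \<integral>\<^sup>+ \<omega>. ennreal (\<Sum>h<H. c j * F j i h \<omega>) \<partial>M)"
      by (rule nn_sum_real) (use m2 j C_fin c0 F0 in \<open>auto intro!: sum_nonneg\<close>)
  qed
  also have "\<dots> = (\<Sum>j<N. \<Sum>i\<in>C j. \<Sum>h<H. \<integral>\<^sup>+ \<omega>. ennreal (c j * F j i h \<omega>) \<partial>M)"
    using m c0 F0 by (intro sum.cong refl nn_sum_real) (auto intro!: borel_measurable_times)
  also have "\<dots> = (\<Sum>j<N. \<Sum>i\<in>C j. \<Sum>h<H. ennreal (c j) * \<integral>\<^sup>+ \<omega>. ennreal (F j i h \<omega>) \<partial>M)"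
    using m c0 by (intro sum.cong refl nn_cmult_real) auto
  finally show "(\<Sum>j<N. \<Sum>i\<in>C j. \<Sum>h<H.
          ennreal (1 / (real N * real H * real (card (C j)))) *
          (\<integral>\<^sup>+ \<omega>. ennreal ((norm (mtgc_xbj gs \<gamma> C N E H x0 (w \<omega>) t e j
                                        - mtgc_x gs \<gamma> C N E H x0 (w \<omega>) t e j i h))\<^sup>2) \<partial>M)) = Qn e"
    unfolding F_def c_def by simp
qed

lemma conv_Y: "(\<Sum>e<E. \<Sum>j<N. ennreal (1 / real N) *
          (\<integral>\<^sup>+ \<omega>. ennreal ((norm (mtgc_y gs \<gamma> C N E H x0 (w \<omega>) t j
                 + avg (C j) (\<lambda>i. gF i (mtgc_xhat gs \<gamma> C N E H x0 (w \<omega>) t e))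
                 - (1 / real N) *\<^sub>R (\<Sum>j'<N. avg (C j') (\<lambda>i. gF i (mtgc_xhat gs \<gamma> C N E H x0 (w \<omega>) t e)))))\<^sup>2) \<partial>M))
     = (\<Sum>e<E. Yn e)"
proof (intro sum.cong refl)
  fix e assume e: "e \<in> {..<E}"
  define F where "F j \<omega> = (norm (mtgc_y gs \<gamma> C N E H x0 (w \<omega>) t j
                 + avg (C j) (\<lambda>i. gF i (mtgc_xhat gs \<gamma> C N E H x0 (w \<omega>) t e))
                 - (1 / real N) *\<^sub>R (\<Sum>j'<N. avg (C j') (\<lambda>i. gF i (mtgc_xhat gs \<gamma> C N E H x0 (w \<omega>) t e)))))\<^sup>2" for j \<omega>
  have m: "F j \<in> borel_measurable M" if "j < N" for j
  proof -
    have "e \<le> E" using e by simp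
    then have g: "(\<lambda>\<omega>. gfv gF C j' (mtgc_xhat gs \<gamma> C N E H x0 (w \<omega>) t e)) \<in> borel_measurable M" if "j' < N" for j'
      using gfv_meas that by auto
    have y: "(\<lambda>\<omega>. mtgc_y gs \<gamma> C N E H x0 (w \<omega>) t j) \<in> borel_measurable M" using y_meas that by auto
    show ?thesis unfolding F_def using g y that unfolding gfv_def
      by (intro borel_measurable_power measurable_compose[OF _ borel_measurable_norm] borel_measurable_diff
        borel_measurable_add borel_measurable_scaleR borel_measurable_const borel_measurable_sum) auto
  qed
  have "Yn e = (\<integral>\<^sup>+ \<omega>. ennreal (\<Sum>j<N. (1 / real N) * F j \<omega>) \<partial>M)"
    unfolding yf_def F_def yv_def gfv_def xhv_def ..
  also have "\<dots> = (\<Sum>j<N. \<integral>\<^sup>+ \<omega>. ennreal ((1 / real N) * F j \<omega>) \<partial>M)"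
  proof (rule nn_sum_real)
    fix j \<omega> assume "j \<in> {..<N}"
    show "0 \<le> (1 / real N) * F j \<omega>" unfolding F_def by simp
  next
    fix j assume "j \<in> {..<N}"
    then show "(\<lambda>\<omega>. (1 / real N) * F j \<omega>) \<in> borel_measurable M" using m by auto
  qed simp
  also have "\<dots> = (\<Sum>j<N. ennreal (1 / real N) * \<integral>\<^sup>+ \<omega>. ennreal (F j \<omega>) \<partial>M)"
    using m by (intro sum.cong refl nn_cmult_real) auto
  finally show "(\<Sum>j<N. ennreal (1 / real N) *
          (\<integral>\<^sup>+ \<omega>. ennreal ((norm (mtgc_y gs \<gamma> C N E H x0 (w \<omega>) t j
                 + avg (C j) (\<lambda>i. gF i (mtgc_xhat gs \<gamma> C N E H x0 (w \<omega>) t e))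
                 - (1 / real N) *\<^sub>R (\<Sum>j'<N. avg (C j') (\<lambda>i. gF i (mtgc_xhat gs \<gamma> C N E H x0 (w \<omega>) t e)))))\<^sup>2) \<partial>M))
     = Yn e" unfolding F_def by simp
qed

end

theorem lemmaC2p3:
  fixes M :: "'m measure"
    and S :: "'b measure"
    and D :: "'c \<Rightarrow> 'b measure"
    and C :: "nat \<Rightarrow> 'c set"
    and N E H :: nat
    and Fs :: "'c \<Rightarrow> 'a::euclidean_space \<Rightarrow> 'b \<Rightarrow> real"
    and gs :: "'c \<Rightarrow> 'a \<Rightarrow> 'b \<Rightarrow> 'a"
    and gF :: "'c \<Rightarrow> 'a \<Rightarrow> 'a"
    and L \<sigma> \<gamma> :: real
    and x0 :: 'a
    and \<xi> :: "nat \<Rightarrow> nat \<Rightarrow> 'c \<Rightarrow> nat \<Rightarrow> 'm \<Rightarrow> 'b"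
    and t :: nat
  defines "Cl \<equiv> (\<Union>j<N. C j)"
    and "I \<equiv> {(t', e, i, h). e < E \<and> h < H \<and> i \<in> (\<Union>j<N. C j)}"
    and "w \<equiv> (\<lambda>\<omega> t' e i h. \<xi> t' e i h \<omega>)"
    and "gf \<equiv> (\<lambda>j x. avg (C j) (\<lambda>i. gF i x))"
  assumes prob: "prob_space M"
    and N_pos: "N \<ge> 1"
    and C_fin: "\<And>j. j < N \<Longrightarrow> finite (C j)"
    and C_ne: "\<And>j. j < N \<Longrightarrow> C j \<noteq> {}"
    and C_disj: "\<And>j j'. j < N \<Longrightarrow> j' < N \<Longrightarrow> j \<noteq> j' \<Longrightarrow> C j \<inter> C j' = {}"
    and E_pos: "E \<ge> 1" and H_pos: "H \<ge> 1"
    and \<gamma>_pos: "\<gamma> > 0"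
    and \<gamma>_le: "\<gamma> \<le> 1 / (10 * real E * real H * L)"
    \<comment> \<open>client distributions and stochastic losses / gradients\<close>
    and D_sets: "\<And>i. i \<in> Cl \<Longrightarrow> sets (D i) = sets S"
    and D_prob: "\<And>i. i \<in> Cl \<Longrightarrow> prob_space (D i)"
    and gs_meas: "\<And>i. i \<in> Cl \<Longrightarrow> (\<lambda>(x, s). gs i x s) \<in> borel_measurable (borel \<Otimes>\<^sub>M S)"
    and Fs_grad: "\<And>i x s. i \<in> Cl \<Longrightarrow> s \<in> space S \<Longrightarrow>
                   ((\<lambda>y. Fs i y s) has_derivative (\<lambda>v. inner (gs i x s) v)) (at x)"
    and Fs_int: "\<And>i x. i \<in> Cl \<Longrightarrow> integrable (D i) (Fs i x)"
    and F_grad: "\<And>i x. i \<in> Cl \<Longrightarrow>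
                   ((\<lambda>y. \<integral>s. Fs i y s \<partial>D i) has_derivative (\<lambda>v. inner (gF i x) v)) (at x)"
    \<comment> \<open>(A1)\<close>
    and A1: "\<And>i x y. i \<in> Cl \<Longrightarrow> norm (gF i x - gF i y) \<le> L * norm (x - y)"
    \<comment> \<open>(A2)\<close>
    and A2_unb: "\<And>i x. i \<in> Cl \<Longrightarrow> integrable (D i) (gs i x) \<and> (\<integral>s. gs i x s \<partial>D i) = gF i x"
    and A2_var: "\<And>i x. i \<in> Cl \<Longrightarrow>
                   (\<integral>\<^sup>+ s. ennreal ((norm (gs i x s - gF i x))\<^sup>2) \<partial>D i) \<le> ennreal (\<sigma>\<^sup>2)"
    \<comment> \<open>samples: fresh, mutually independent, xi_{i,h}^{t,e} ~ D_i\<close>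
    and \<xi>_indep: "prob_space.indep_vars M (\<lambda>_. S) (\<lambda>(t', e, i, h). \<xi> t' e i h) I"
    and \<xi>_distr: "\<And>t' e i h. (t', e, i, h) \<in> I \<Longrightarrow> distr M S (\<xi> t' e i h) = D i"
  shows
   "(\<Sum>e<E. \<Sum>j<N. ennreal (1 / real N) *
       (\<integral>\<^sup>+ \<omega>. ennreal ((norm (mtgc_xhat gs \<gamma> C N E H x0 (w \<omega>) t e
                                     - mtgc_xbj gs \<gamma> C N E H x0 (w \<omega>) t e j))\<^sup>2) \<partial>M))
    \<le> ennreal (24 * \<gamma>\<^sup>2 * real E ^ 2 * real H ^ 2 * L\<^sup>2) *
       (\<Sum>e<E. \<Sum>j<N. \<Sum>i\<in>C j. \<Sum>h<H.
          ennreal (1 / (real N * real H * real (card (C j)))) *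
          (\<integral>\<^sup>+ \<omega>. ennreal ((norm (mtgc_xbj gs \<gamma> C N E H x0 (w \<omega>) t e j
                                        - mtgc_x gs \<gamma> C N E H x0 (w \<omega>) t e j i h))\<^sup>2) \<partial>M))
     + ennreal (12 * \<gamma>\<^sup>2 * real E ^ 2 * real H ^ 2) *
       (\<Sum>e<E. \<Sum>j<N. ennreal (1 / real N) *
          (\<integral>\<^sup>+ \<omega>. ennreal ((norm (mtgc_y gs \<gamma> C N E H x0 (w \<omega>) t j
                 + gf j (mtgc_xhat gs \<gamma> C N E H x0 (w \<omega>) t e)
                 - (1 / real N) *\<^sub>R (\<Sum>j'<N. gf j' (mtgc_xhat gs \<gamma> C N E H x0 (w \<omega>) t e))))\<^sup>2) \<partial>M))
     + ennreal (3 * \<gamma>\<^sup>2 * real E ^ 3 * real H * (real N - 1) / (real N)\<^sup>2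
                * (\<Sum>j<N. 1 / real (card (C j))) * \<sigma>\<^sup>2)"
proof -
  interpret mtgc_ctx M S D C N E H gs gF L \<sigma> \<gamma> x0 \<xi> t
  proof (rule mtgc_ctx.intro)
    show "prob_space M" by (rule prob)
    show "N \<ge> 1" by (rule N_pos)
    show "\<And>j. j < N \<Longrightarrow> finite (C j)" by (rule C_fin)
    show "\<And>j. j < N \<Longrightarrow> C j \<noteq> {}" by (rule C_ne)
    show "\<And>j j'. j < N \<Longrightarrow> j' < N \<Longrightarrow> j \<noteq> j' \<Longrightarrow> C j \<inter> C j' = {}" by (rule C_disj)
    show "E \<ge> 1" by (rule E_pos)
    show "H \<ge> 1" by (rule H_pos)
    show "\<gamma> > 0" by (rule \<gamma>_pos)
    show "\<gamma> \<le> 1 / (10 * real E * real H * L)" by (rule \<gamma>_le)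
    show "\<And>i. i \<in> (\<Union>j<N. C j) \<Longrightarrow> sets (D i) = sets S" using D_sets unfolding Cl_def .
    show "\<And>i. i \<in> (\<Union>j<N. C j) \<Longrightarrow> prob_space (D i)" using D_prob unfolding Cl_def .
    show "\<And>i. i \<in> (\<Union>j<N. C j) \<Longrightarrow> (\<lambda>(x, s). gs i x s) \<in> borel_measurable (borel \<Otimes>\<^sub>M S)"
      using gs_meas unfolding Cl_def .
    show "\<And>i x y. i \<in> (\<Union>j<N. C j) \<Longrightarrow> norm (gF i x - gF i y) \<le> L * norm (x - y)"
      using A1 unfolding Cl_def .
    show "\<And>i x. i \<in> (\<Union>j<N. C j) \<Longrightarrow> integrable (D i) (gs i x) \<and> (\<integral>s. gs i x s \<partial>D i) = gF i x"
      using A2_unb unfolding Cl_def .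
    show "\<And>i x. i \<in> (\<Union>j<N. C j) \<Longrightarrow>
                   (\<integral>\<^sup>+ s. ennreal ((norm (gs i x s - gF i x))\<^sup>2) \<partial>D i) \<le> ennreal (\<sigma>\<^sup>2)"
      using A2_var unfolding Cl_def .
    show "prob_space.indep_vars M (\<lambda>_. S) (\<lambda>(t', e, i, h). \<xi> t' e i h) {(t', e, i, h). e < E \<and> h < H \<and> i \<in> (\<Union>j<N. C j)}"
      using \<xi>_indep unfolding I_def .
    show "\<And>t' e i h. (t', e, i, h) \<in> {(t', e, i, h). e < E \<and> h < H \<and> i \<in> (\<Union>j<N. C j)} \<Longrightarrow> distr M S (\<xi> t' e i h) = D i"
      using \<xi>_distr unfolding I_def .
  qed
  have last: "3 * \<gamma>\<^sup>2 * real E ^ 3 * real H * sc = 3 * \<gamma>\<^sup>2 * real E ^ 3 * real H * (real N - 1) / (real N)\<^sup>2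
                * (\<Sum>j<N. 1 / real (card (C j))) * \<sigma>\<^sup>2"
    unfolding sc_def by (simp add: algebra_simps)
  show ?thesis
    unfolding w_def gf_def conv_D conv_Q conv_Y last[symmetric]
    by (rule main_enn)
qed

end
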